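(* In the LQ setting of the context, let $\mu>\rho_\alpha$ and $\lambda\ge2\mu$. Then the problem of minimizing $J_\lambda$ over $\mathcal{U}_{-\mu}$ has at most one optimal control in $\mathcal{U}_{-\mu}$ (uniqueness understood up to $\mathrm{Leb}\otimes\mathbb{P}$-null sets).
   Context: $(\Omega,\mathcal{F},\mathbb{P})$ is a complete probability space with a one-dimensional Brownian motion $W$ and augmented natural filtration $\mathbb{F}$. Fix constants $x_0,b,\sigma\in\mathbb{R}$, $c\in\mathbb{R}\setminus\{0\}$, $\gamma>0$, $\alpha\in(\frac12,1]$, $\delta\ge0$, $\lambda>0$. For $\beta\in\mathbb{R}$, $L^{2,\beta}_{\mathbb{F}}(0,\infty;\mathbb{R})$ is the set of real jointly measurable adapted processes $f$ with $\mathbb{E}\int_0^\infty e^{2\beta t}|f(t)|^2dt<\infty$, and $\mathcal{U}_{-\mu}:=L^{2,-\mu}_{\mathbb{F}}(0,\infty;\mathbb{R})$. Let $\rho_\alpha:=0$ if $b=0$, and if $b\ne0$ let $\rho_\alpha>0$ be the number satisfying $|b|(1+e^{-\rho_\alpha\delta})\rho_\alpha^{-\alpha}=1$. For $\mu>\rho_\alpha$ and $u\in\mathcal{U}_{-\mu}$, $X^u$ denotes the unique solution in $L^{2,-\mu}_{\mathbb{F}}(0,\infty;\mathbb{R})$ of $X^u(t)=x_0+\frac{1}{\Gamma(\alpha)}\int_0^t(t-s)^{\alpha-1}\{bX^u(s-\delta)+cu(s)\}ds+\frac{\sigma}{\Gamma(\alpha)}\int_0^t(t-s)^{\alpha-1}dW(s)$,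 $t\ge0$, $X^u(t)=x_0$ on $[-\delta,0]$ (the mild form of the Caputo fractional SDDE ${}^C D^\alpha_{0+}X^u=bX^u(t-\delta)+cu(t)+\sigma\dot W$). The cost is $J_\lambda(u)=\frac12\mathbb{E}\int_0^\infty e^{-\lambda t}\{|X^u(t)|^2+\frac1\gamma|u(t)|^2\}dt$. An optimal control in $\mathcal{U}_{-\mu}$ is $\hat u\in\mathcal{U}_{-\mu}$ with $J_\lambda(\hat u)=\inf_{u\in\mathcal{U}_{-\mu}}J_\lambda(u)$. *)

theory Defs
  imports "HOL-Probability.Probability"
begin

definition brownian_motion :: "'a measure \<Rightarrow> (real \<Rightarrow> 'a \<Rightarrow> real) \<Rightarrow> bool" where
  "brownian_motion M W \<longleftrightarrow>
     prob_space M \<and>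
     (\<forall>t\<ge>0. W t \<in> borel_measurable M) \<and>
     (\<forall>\<omega>\<in>space M. W 0 \<omega> = 0) \<and>
     (\<forall>\<omega>\<in>space M. continuous_on {0..} (\<lambda>t. W t \<omega>)) \<and>
     (\<forall>s t. 0 \<le> s \<and> s < t \<longrightarrow>
        distributed M lborel (\<lambda>\<omega>. W t \<omega> - W s \<omega>) (normal_density 0 (sqrt (t - s)))) \<and>
     (\<forall>(n::nat) (tt::nat \<Rightarrow> real). tt 0 \<ge> 0 \<and> (\<forall>i<n. tt i < tt (Suc i)) \<longrightarrow>
        prob_space.indep_vars M (\<lambda>_. borel) (\<lambda>i \<omega>. W (tt (Suc i)) \<omega> - W (tt i) \<omega>) {..<n})"

definition aug_filtration :: "'a measure \<Rightarrow> (real \<Rightarrow> 'a \<Rightarrow> real) \<Rightarrow> real \<Rightarrow> 'a set set" where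
  "aug_filtration M W t =
     sigma_sets (space M)
       ((\<Union>s\<in>{0..t}. {W s -` B \<inter> space M | B. B \<in> sets borel}) \<union> null_sets M)"

definition L2F :: "'a measure \<Rightarrow> (real \<Rightarrow> 'a set set) \<Rightarrow> real \<Rightarrow> (real \<Rightarrow> 'a \<Rightarrow> real) set" where
  "L2F M F \<beta> = {f.
     (\<lambda>p. indicator {0..} (fst p) * f (fst p) (snd p)) \<in> borel_measurable (lborel \<Otimes>\<^sub>M M) \<and>
     (\<forall>t\<ge>0. f t \<in> borel_measurable (sigma (space M) (F t))) \<and>
     (\<integral>\<^sup>+\<omega>. (\<integral>\<^sup>+t. ennreal (indicator {0..} t * exp (2 * \<beta> * t) * (f t \<omega>)\<^sup>2) \<partial>lborel) \<partial>M) < \<infinity>}"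

definition step_fun :: "real \<Rightarrow> nat \<Rightarrow> (nat \<Rightarrow> real) \<Rightarrow> real \<Rightarrow> real" where
  "step_fun t n c s = c (nat \<lfloor>real n * s / t\<rfloor>)"

definition elem_int :: "(real \<Rightarrow> 'a \<Rightarrow> real) \<Rightarrow> real \<Rightarrow> nat \<Rightarrow> (nat \<Rightarrow> real) \<Rightarrow> 'a \<Rightarrow> real" where
  "elem_int W t n c \<omega> =
     (\<Sum>i<n. c i * (W (real (Suc i) * t / real n) \<omega> - W (real i * t / real n) \<omega>))"

text \<open>Y is (a version of) the Wiener integral of g over [0,t] w.r.t. W: the L^2(P)-limit of
  elementary integrals of any sequence of step functions converging to g in L^2(0,t).\<close>
definition is_wiener_integral ::
  "'a measure \<Rightarrow> (real \<Rightarrow> 'a \<Rightarrow> real) \<Rightarrow> (real \<Rightarrow> real) \<Rightarrow> real \<Rightarrow> ('a \<Rightarrow> real) \<Rightarrow> bool" where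
  "is_wiener_integral M W g t Y \<longleftrightarrow>
     Y \<in> borel_measurable M \<and>
     (\<forall>(n::nat \<Rightarrow> nat) (c::nat \<Rightarrow> nat \<Rightarrow> real).
        (\<forall>k. n k > 0) \<longrightarrow>
        ((\<lambda>k. \<integral>\<^sup>+s\<in>{0..t}. ennreal ((g s - step_fun t (n k) (c k) s)\<^sup>2) \<partial>lborel) \<longlonglongrightarrow> 0) \<longrightarrow>
        ((\<lambda>k. \<integral>\<^sup>+\<omega>. ennreal ((Y \<omega> - elem_int W t (n k) (c k) \<omega>)\<^sup>2) \<partial>M) \<longlonglongrightarrow> 0))"

text \<open>X solves the mild equation for control u (with X = x0 on [-delta,0]) and lies in
  L^{2,-mu}_F; the equation holds for a.e. t >= 0, P-a.s.\<close>
definition is_state ::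
  "'a measure \<Rightarrow> (real \<Rightarrow> 'a \<Rightarrow> real) \<Rightarrow> real \<Rightarrow> real \<Rightarrow> real \<Rightarrow> real \<Rightarrow> real \<Rightarrow> real \<Rightarrow> real
   \<Rightarrow> (real \<Rightarrow> 'a \<Rightarrow> real) \<Rightarrow> (real \<Rightarrow> 'a \<Rightarrow> real) \<Rightarrow> bool" where
  "is_state M W x0 b c \<sigma> \<alpha> \<delta> \<mu> u X \<longleftrightarrow>
     X \<in> L2F M (aug_filtration M W) (-\<mu>) \<and>
     (AE t in lborel. t \<ge> 0 \<longrightarrow>
        (\<exists>Y. is_wiener_integral M W (\<lambda>s. (t - s) powr (\<alpha> - 1)) t Y \<and>
          (AE \<omega> in M.
             X t \<omega> = x0
               + 1 / Gamma \<alpha> * (\<integral>s\<in>{0..t}. (t - s) powr (\<alpha> - 1)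
                    * (b * (if s < \<delta> then x0 else X (s - \<delta>) \<omega>) + c * u s \<omega>) \<partial>lborel)
               + \<sigma> / Gamma \<alpha> * Y \<omega>)))"

definition cost ::
  "'a measure \<Rightarrow> real \<Rightarrow> real \<Rightarrow> (real \<Rightarrow> 'a \<Rightarrow> real) \<Rightarrow> (real \<Rightarrow> 'a \<Rightarrow> real) \<Rightarrow> ennreal" where
  "cost M \<gamma> lam X u =
     ennreal (1/2) * (\<integral>\<^sup>+\<omega>. (\<integral>\<^sup>+t. ennreal (indicator {0..} t * exp (- lam * t)
        * ((X t \<omega>)\<^sup>2 + (u t \<omega>)\<^sup>2 / \<gamma>)) \<partial>lborel) \<partial>M)"

text \<open>J_lambda(u), evaluated on the (unique up to null sets) state X^u; all solutions give the
  same value, so we take the infimum over the set of solutions.\<close>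
definition J ::
  "'a measure \<Rightarrow> (real \<Rightarrow> 'a \<Rightarrow> real) \<Rightarrow> real \<Rightarrow> real \<Rightarrow> real \<Rightarrow> real \<Rightarrow> real \<Rightarrow> real \<Rightarrow> real
   \<Rightarrow> real \<Rightarrow> real \<Rightarrow> (real \<Rightarrow> 'a \<Rightarrow> real) \<Rightarrow> ennreal" where
  "J M W x0 b c \<sigma> \<alpha> \<delta> \<mu> \<gamma> lam u =
     (INF X\<in>{X. is_state M W x0 b c \<sigma> \<alpha> \<delta> \<mu> u X}. cost M \<gamma> lam X u)"

definition rho_alpha :: "real \<Rightarrow> real \<Rightarrow> real \<Rightarrow> real" where
  "rho_alpha b \<alpha> \<delta> =
     (if b = 0 then 0 else THE \<rho>. \<rho> > 0 \<and> \<bar>b\<bar> * (1 + exp (- \<rho> * \<delta>)) * \<rho> powr (- \<alpha>) = 1)"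

definition is_optimal_control ::
  "'a measure \<Rightarrow> (real \<Rightarrow> 'a \<Rightarrow> real) \<Rightarrow> real \<Rightarrow> real \<Rightarrow> real \<Rightarrow> real \<Rightarrow> real \<Rightarrow> real \<Rightarrow> real
   \<Rightarrow> real \<Rightarrow> real \<Rightarrow> (real \<Rightarrow> 'a \<Rightarrow> real) \<Rightarrow> bool" where
  "is_optimal_control M W x0 b c \<sigma> \<alpha> \<delta> \<mu> \<gamma> lam u \<longleftrightarrow>
     u \<in> L2F M (aug_filtration M W) (-\<mu>) \<and>
     J M W x0 b c \<sigma> \<alpha> \<delta> \<mu> \<gamma> lam u =
       (INF v\<in>L2F M (aug_filtration M W) (-\<mu>). J M W x0 b c \<sigma> \<alpha> \<delta> \<mu> \<gamma> lam v)"

end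

theory Submission
  imports Defs
begin

lemma bm_prob: "brownian_motion M W \<Longrightarrow> prob_space M"
  by (simp add: brownian_motion_def)

lemma bm_meas: "brownian_motion M W \<Longrightarrow> 0 \<le> t \<Longrightarrow> W t \<in> borel_measurable M"
  by (simp add: brownian_motion_def)

lemma bm_zero: "brownian_motion M W \<Longrightarrow> \<omega> \<in> space M \<Longrightarrow> W 0 \<omega> = 0"
  by (simp add: brownian_motion_def)

lemma bm_cont: "brownian_motion M W \<Longrightarrow> \<omega> \<in> space M \<Longrightarrow> continuous_on {0..} (\<lambda>t. W t \<omega>)"
  by (simp add: brownian_motion_def)

lemma bm_incr: "brownian_motion M W \<Longrightarrow> 0 \<le> s \<Longrightarrow> s < t \<Longrightarrow>
   distributed M lborel (\<lambda>\<omega>. W t \<omega> - W s \<omega>) (normal_density 0 (sqrt (t - s)))"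
  by (simp add: brownian_motion_def)

lemma bm_incr_moments:
  assumes bm: "brownian_motion M W" and st: "0 \<le> s" "s < t"
  shows "integrable M (\<lambda>\<omega>. W t \<omega> - W s \<omega>)"
    and "(\<integral>\<omega>. W t \<omega> - W s \<omega> \<partial>M) = 0"
    and "integrable M (\<lambda>\<omega>. (W t \<omega> - W s \<omega>)\<^sup>2)"
    and "(\<integral>\<omega>. (W t \<omega> - W s \<omega>)\<^sup>2 \<partial>M) = t - s"
proof -
  interpret prob_space M using bm_prob[OF bm] .
  have D: "distributed M lborel (\<lambda>\<omega>. W t \<omega> - W s \<omega>) (normal_density 0 (sqrt (t - s)))"
    using bm_incr[OF bm st] .
  have sp: "0 < sqrt (t - s)" using st by simp
  have nn: "\<And>x. 0 \<le> normal_density 0 (sqrt (t - s)) x" by (simp add: normal_density_nonneg)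
  have i1: "integrable lborel (\<lambda>x. normal_density 0 (sqrt (t - s)) x * x)"
    by (intro integrable_normal_moment_nz_1 sp)
  show I1: "integrable M (\<lambda>\<omega>. W t \<omega> - W s \<omega>)"
    using distributed_integrable[OF D, of "\<lambda>x. x"] i1 nn by simp
  show "(\<integral>\<omega>. W t \<omega> - W s \<omega> \<partial>M) = 0"
    using normal_distributed_expectation[OF sp D] by simp
  have i2: "integrable lborel (\<lambda>x. normal_density 0 (sqrt (t - s)) x * x\<^sup>2)"
    using integrable_normal_moment[OF sp, where k=2 and \<mu>=0] by simp
  show "integrable M (\<lambda>\<omega>. (W t \<omega> - W s \<omega>)\<^sup>2)"
    using distributed_integrable[OF D, of "\<lambda>x. x\<^sup>2"] i2 nn by simp
  have "variance (\<lambda>\<omega>. W t \<omega> - W s \<omega>) = (sqrt (t - s))\<^sup>2"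
    using normal_distributed_variance[OF sp D] .
  then show "(\<integral>\<omega>. (W t \<omega> - W s \<omega>)\<^sup>2 \<partial>M) = t - s"
    using normal_distributed_expectation[OF sp D] st by simp
qed

lemma bm_indep_pair:
  assumes bm: "brownian_motion M W" and t: "0 < t" and N: "0 < N" and ij: "i < N" "j < N" "i \<noteq> j"
  shows "(\<integral>\<omega>. (W (real (Suc i) * t / real N) \<omega> - W (real i * t / real N) \<omega>)
             * (W (real (Suc j) * t / real N) \<omega> - W (real j * t / real N) \<omega>) \<partial>M) = 0"
    and "integrable M (\<lambda>\<omega>. (W (real (Suc i) * t / real N) \<omega> - W (real i * t / real N) \<omega>)
             * (W (real (Suc j) * t / real N) \<omega> - W (real j * t / real N) \<omega>))"
proof -
  interpret prob_space M using bm_prob[OF bm] .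
  define tt where "tt k = real k * t / real N" for k :: nat
  have tt0: "tt 0 \<ge> 0" by (simp add: tt_def)
  have ttm: "\<forall>k<N. tt k < tt (Suc k)" using t N by (auto simp: tt_def divide_strict_right_mono)
  have ind: "indep_vars (\<lambda>_. borel) (\<lambda>k \<omega>. W (tt (Suc k)) \<omega> - W (tt k) \<omega>) {..<N}"
    using bm tt0 ttm unfolding brownian_motion_def by blast
  have ind2: "indep_vars (\<lambda>_. borel) (\<lambda>k \<omega>. W (tt (Suc k)) \<omega> - W (tt k) \<omega>) {i, j}"
    by (rule indep_vars_subset[OF ind]) (use ij in auto)
  have intk: "integrable M (\<lambda>\<omega>. W (tt (Suc k)) \<omega> - W (tt k) \<omega>)" if "k < N" for k
    by (rule bm_incr_moments(1)[OF bm]) (use tt0 ttm that t N in \<open>auto simp: tt_def\<close>)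
  have e0: "(\<integral>\<omega>. W (tt (Suc k)) \<omega> - W (tt k) \<omega> \<partial>M) = 0" if "k < N" for k
    by (rule bm_incr_moments(2)[OF bm]) (use tt0 ttm that t N in \<open>auto simp: tt_def\<close>)
  have "(\<integral>\<omega>. (\<Prod>k\<in>{i,j}. W (tt (Suc k)) \<omega> - W (tt k) \<omega>) \<partial>M)
        = (\<Prod>k\<in>{i,j}. \<integral>\<omega>. W (tt (Suc k)) \<omega> - W (tt k) \<omega> \<partial>M)"
    by (rule indep_vars_lebesgue_integral[OF _ ind2]) (use intk ij in auto)
  then show "(\<integral>\<omega>. (W (real (Suc i) * t / real N) \<omega> - W (real i * t / real N) \<omega>)
             * (W (real (Suc j) * t / real N) \<omega> - W (real j * t / real N) \<omega>) \<partial>M) = 0"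
    using ij e0 by (simp add: tt_def)
  have "integrable M (\<lambda>\<omega>. (\<Prod>k\<in>{i,j}. W (tt (Suc k)) \<omega> - W (tt k) \<omega>))"
    by (rule indep_vars_integrable[OF _ ind2]) (use intk ij in auto)
  then show "integrable M (\<lambda>\<omega>. (W (real (Suc i) * t / real N) \<omega> - W (real i * t / real N) \<omega>)
             * (W (real (Suc j) * t / real N) \<omega> - W (real j * t / real N) \<omega>))"
    using ij by (simp add: tt_def)
qed

lemma elem_int_sq_integral:
  assumes bm: "brownian_motion M W" and t: "0 < t" and N: "0 < N"
  shows "integrable M (\<lambda>\<omega>. (elem_int W t N a \<omega>)\<^sup>2)"
    and "(\<integral>\<omega>. (elem_int W t N a \<omega>)\<^sup>2 \<partial>M) = t / real N * (\<Sum>i<N. (a i)\<^sup>2)"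
proof -
  interpret prob_space M using bm_prob[OF bm] .
  define d where "d i \<omega> = W (real (Suc i) * t / real N) \<omega> - W (real i * t / real N) \<omega>" for i \<omega>
  have sq: "(elem_int W t N a \<omega>)\<^sup>2 = (\<Sum>i<N. \<Sum>j<N. a i * a j * (d i \<omega> * d j \<omega>))" for \<omega>
    unfolding elem_int_def d_def power2_eq_square sum_product by (simp add: algebra_simps)
  have st: "0 \<le> real i * t / real N" "real i * t / real N < real (Suc i) * t / real N" for i
    using t N by (auto simp: divide_strict_right_mono)
  have dd: "real (Suc i) * t / real N - real i * t / real N = t / real N" for i
    by (simp add: diff_divide_distrib[symmetric] algebra_simps)
  have int_ij: "integrable M (\<lambda>\<omega>. a i * a j * (d i \<omega> * d j \<omega>))" if "i < N" "j < N" for i j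
  proof (cases "i = j")
    case True
    have "integrable M (\<lambda>\<omega>. (d i \<omega>)\<^sup>2)" unfolding d_def by (rule bm_incr_moments(3)[OF bm st])
    then show ?thesis using True by (simp add: power2_eq_square)
  next
    case False
    show ?thesis unfolding d_def
      by (intro integrable_mult_right bm_indep_pair(2)[OF bm t N that False])
  qed
  have e_ij: "(\<integral>\<omega>. a i * a j * (d i \<omega> * d j \<omega>) \<partial>M) = (if i = j then (a i)\<^sup>2 * (t / real N) else 0)"
    if "i < N" "j < N" for i j
  proof (cases "i = j")
    case True
    have "(\<integral>\<omega>. (d i \<omega>)\<^sup>2 \<partial>M) = t / real N" unfolding d_def
      using bm_incr_moments(4)[OF bm st, of i] dd by simp
    then show ?thesis using True by (simp add: power2_eq_square)
  next
    case False
    show ?thesis unfolding d_def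
      using bm_indep_pair(1)[OF bm t N that False] False by simp
  qed
  show "integrable M (\<lambda>\<omega>. (elem_int W t N a \<omega>)\<^sup>2)"
    unfolding sq by (rule Bochner_Integration.integrable_sum, rule Bochner_Integration.integrable_sum, rule int_ij) auto
  have "(\<integral>\<omega>. (elem_int W t N a \<omega>)\<^sup>2 \<partial>M) = (\<Sum>i<N. \<Sum>j<N. \<integral>\<omega>. a i * a j * (d i \<omega> * d j \<omega>) \<partial>M)"
  proof -
    have "(\<integral>\<omega>. (\<Sum>i<N. \<Sum>j<N. a i * a j * (d i \<omega> * d j \<omega>)) \<partial>M)
       = (\<Sum>i<N. \<integral>\<omega>. (\<Sum>j<N. a i * a j * (d i \<omega> * d j \<omega>)) \<partial>M)"
      by (rule Bochner_Integration.integral_sum, rule Bochner_Integration.integrable_sum, rule int_ij) auto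
    also have "\<dots> = (\<Sum>i<N. \<Sum>j<N. \<integral>\<omega>. a i * a j * (d i \<omega> * d j \<omega>) \<partial>M)"
      by (intro sum.cong refl Bochner_Integration.integral_sum int_ij) auto
    finally show ?thesis by (simp only: sq)
  qed
  also have "\<dots> = (\<Sum>i<N. \<Sum>j<N. (if i = j then (a i)\<^sup>2 * (t / real N) else 0))"
    by (intro sum.cong refl, subst e_ij) auto
  also have "\<dots> = (\<Sum>i<N. (a i)\<^sup>2 * (t / real N))"
    by (simp add: sum.delta)
  finally show "(\<integral>\<omega>. (elem_int W t N a \<omega>)\<^sup>2 \<partial>M) = t / real N * (\<Sum>i<N. (a i)\<^sup>2)"
    by (simp add: sum_distrib_left mult.commute)
qed

lemma elem_int_sq_nn:
  assumes bm: "brownian_motion M W" and t: "0 < t" and N: "0 < N"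
  shows "(\<integral>\<^sup>+\<omega>. ennreal ((elem_int W t N a \<omega>)\<^sup>2) \<partial>M) = ennreal (t / real N * (\<Sum>i<N. (a i)\<^sup>2))"
  using elem_int_sq_integral[OF assms]
  by (subst nn_integral_eq_integral) auto

lemma step_fun_sq_nn:
  assumes t: "0 < t" and N: "0 < N"
  shows "(\<integral>\<^sup>+s\<in>{0..t}. ennreal ((step_fun t N a s)\<^sup>2) \<partial>lborel) = ennreal (t / real N * (\<Sum>i<N. (a i)\<^sup>2))"
proof -
  define h where "h = t / real N"
  have h: "0 < h" using t N by (simp add: h_def)
  have pt: "ennreal ((step_fun t N a s)\<^sup>2) * indicator {0..t} s
          = (\<Sum>i<N. ennreal ((a i)\<^sup>2) * indicator {real i * h ..< real (Suc i) * h} s)" if "s \<noteq> t" for s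
  proof (cases "0 \<le> s \<and> s < t")
    case True
    define k where "k = nat \<lfloor>real N * s / t\<rfloor>"
    have fl: "\<lfloor>real N * s / t\<rfloor> \<ge> 0" using True t by simp
    have k1: "real k \<le> real N * s / t" unfolding k_def using fl by linarith
    have k2: "real N * s / t < real k + 1" unfolding k_def using fl by linarith
    have kN: "k < N"
    proof -
      have "real N * s / t < real N" using True t N by (simp add: field_simps)
      then show ?thesis using k1 by linarith
    qed
    have mem: "s \<in> {real i * h ..< real (Suc i) * h} \<longleftrightarrow> i = k" for i
    proof
      assume "s \<in> {real i * h ..< real (Suc i) * h}"
      then have "real i \<le> real N * s / t" "real N * s / t < real i + 1"
        using t N by (auto simp: h_def field_simps)
      then show "i = k" using k1 k2 by linarith
    next
      assume "i = k"
      then show "s \<in> {real i * h ..< real (Suc i) * h}"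
        using k1 k2 t N by (auto simp: h_def field_simps)
    qed
    have "(\<Sum>i<N. ennreal ((a i)\<^sup>2) * indicator {real i * h ..< real (Suc i) * h} s)
          = (\<Sum>i<N. if i = k then ennreal ((a i)\<^sup>2) else 0)"
    proof (intro sum.cong refl)
      fix i assume "i \<in> {..<N}"
      have "indicator {real i * h ..< real (Suc i) * h} s = (if i = k then 1 else (0::ennreal))"
        using mem[of i] by (simp only: indicator_def of_bool_def)
      then show "ennreal ((a i)\<^sup>2) * indicator {real i * h ..< real (Suc i) * h} s
          = (if i = k then ennreal ((a i)\<^sup>2) else 0)" by simp
    qed
    also have "\<dots> = ennreal ((a k)\<^sup>2)" using kN by (simp add: sum.delta)
    finally show ?thesis using True by (simp add: step_fun_def k_def)
  next
    case False
    then have "s \<notin> {real i * h ..< real (Suc i) * h}" if "i < N" for i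
    proof -
      have "real (Suc i) * t \<le> real N * t" using that t by (intro mult_right_mono) auto
      then have "real (Suc i) * h \<le> t" using N by (simp add: h_def field_simps)
      moreover have "0 \<le> real i * h" using h by simp
      ultimately show ?thesis using False \<open>s \<noteq> t\<close> by auto
    qed
    then have "(\<Sum>i<N. ennreal ((a i)\<^sup>2) * indicator {real i * h ..< real (Suc i) * h} s) = 0"
      by (intro sum.neutral ballI) simp
    moreover have "indicator {0..t} s = (0::ennreal)" using False \<open>s \<noteq> t\<close> by (auto simp: indicator_def)
    ultimately show ?thesis by (simp only: mult_zero_right)
  qed
  have "(\<integral>\<^sup>+s\<in>{0..t}. ennreal ((step_fun t N a s)\<^sup>2) \<partial>lborel)
        = (\<integral>\<^sup>+s. (\<Sum>i<N. ennreal ((a i)\<^sup>2) * indicator {real i * h ..< real (Suc i) * h} s) \<partial>lborel)"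
    by (rule nn_integral_cong_AE) (use AE_lborel_singleton[of t] pt in \<open>auto elim!: eventually_mono\<close>)
  also have "\<dots> = (\<Sum>i<N. ennreal ((a i)\<^sup>2) * emeasure lborel {real i * h ..< real (Suc i) * h})"
    by (subst nn_integral_sum) (auto simp: nn_integral_cmult_indicator)
  also have "\<dots> = (\<Sum>i<N. ennreal ((a i)\<^sup>2 * h))"
    using h by (intro sum.cong refl) (simp add: emeasure_lborel_Ico algebra_simps ennreal_mult)
  also have "\<dots> = ennreal (\<Sum>i<N. (a i)\<^sup>2 * h)" using h by (subst sum_ennreal) auto
  finally show ?thesis by (simp add: h_def sum_distrib_left mult.commute)
qed

lemma elem_int_refine:
  assumes n: "0 < n" and m: "0 < m"
  shows "elem_int W t n c \<omega> = elem_int W t (n * m) (\<lambda>j. c (j div m)) \<omega>"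
proof -
  define f where "f j = W (real j * t / real (n * m)) \<omega>" for j
  have "elem_int W t (n * m) (\<lambda>j. c (j div m)) \<omega> = (\<Sum>j<n * m. c (j div m) * (f (Suc j) - f j))"
    by (simp add: elem_int_def f_def)
  also have "\<dots> = (\<Sum>i<n. \<Sum>j\<in>{i * m..<i * m + m}. c (j div m) * (f (Suc j) - f j))"
    by (rule sum.nat_group[symmetric])
  also have "\<dots> = (\<Sum>i<n. c i * (f (i * m + m) - f (i * m)))"
  proof (intro sum.cong refl)
    fix i assume "i \<in> {..<n}"
    have "(\<Sum>j\<in>{i * m..<i * m + m}. c (j div m) * (f (Suc j) - f j))
        = (\<Sum>j\<in>{i * m..<i * m + m}. c i * (f (Suc j) - f j))"
    proof (intro sum.cong refl)
      fix j assume "j \<in> {i * m..<i * m + m}"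
      then have "j div m = i" using m by (auto intro: div_nat_eqI simp: algebra_simps)
      then show "c (j div m) * (f (Suc j) - f j) = c i * (f (Suc j) - f j)" by simp
    qed
    also have "\<dots> = c i * (\<Sum>j\<in>{i * m..<i * m + m}. f (Suc j) - f j)"
      by (simp add: sum_distrib_left)
    also have "\<dots> = c i * (f (i * m + m) - f (i * m))"
      by (subst sum_Suc_diff') auto
    finally show "(\<Sum>j\<in>{i * m..<i * m + m}. c (j div m) * (f (Suc j) - f j)) = c i * (f (i * m + m) - f (i * m))" .
  qed
  also have "\<dots> = elem_int W t n c \<omega>"
  proof -
    have e1: "real (i * m + m) * t / real (n * m) = real (Suc i) * t / real n" for i
      using m n by (simp add: field_simps)
    have e2: "real (i * m) * t / real (n * m) = real i * t / real n" for i
      using m n by (simp add: field_simps)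
    show ?thesis by (simp add: elem_int_def f_def e1 e2 del: of_nat_add of_nat_mult)
  qed
  finally show ?thesis by simp
qed

lemma step_fun_refine:
  assumes n: "0 < n" and m: "0 < m" and t: "0 < t" and s: "0 \<le> s"
  shows "step_fun t n c s = step_fun t (n * m) (\<lambda>j. c (j div m)) s"
proof -
  have "\<lfloor>real (n * m) * s / t / real_of_int (int m)\<rfloor> = \<lfloor>real (n * m) * s / t\<rfloor> div int m"
    by (rule floor_divide_real_eq_div) simp
  moreover have "real (n * m) * s / t / real_of_int (int m) = real n * s / t"
    using m by (simp add: field_simps)
  ultimately have fl: "\<lfloor>real n * s / t\<rfloor> = \<lfloor>real (n * m) * s / t\<rfloor> div int m" by simp
  have nn: "0 \<le> \<lfloor>real (n * m) * s / t\<rfloor>" using s t by simp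
  have "nat \<lfloor>real n * s / t\<rfloor> = nat \<lfloor>real (n * m) * s / t\<rfloor> div m"
    unfolding fl using nn by (simp add: nat_div_distrib)
  then show ?thesis by (simp add: step_fun_def)
qed

lemma elem_int_diff:
  "elem_int W t N c \<omega> - elem_int W t N d \<omega> = elem_int W t N (\<lambda>j. c j - d j) \<omega>"
  by (simp add: elem_int_def sum_subtractf[symmetric] algebra_simps)

lemma iso_diff:
  assumes bm: "brownian_motion M W" and t: "0 < t" and n: "0 < n" and m: "0 < m"
  shows "(\<integral>\<^sup>+\<omega>. ennreal ((elem_int W t n c \<omega> - elem_int W t m d \<omega>)\<^sup>2) \<partial>M)
       = (\<integral>\<^sup>+s\<in>{0..t}. ennreal ((step_fun t n c s - step_fun t m d s)\<^sup>2) \<partial>lborel)"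
proof -
  define a where "a = (\<lambda>j. c (j div m) - d (j div n))"
  have N: "0 < n * m" using n m by simp
  have e: "elem_int W t n c \<omega> - elem_int W t m d \<omega> = elem_int W t (n * m) a \<omega>" for \<omega>
  proof -
    have "elem_int W t m d \<omega> = elem_int W t (m * n) (\<lambda>j. d (j div n)) \<omega>"
      by (rule elem_int_refine[OF m n])
    then have "elem_int W t m d \<omega> = elem_int W t (n * m) (\<lambda>j. d (j div n)) \<omega>"
      by (simp add: mult.commute)
    then show ?thesis
      using elem_int_refine[OF n m, of W t c \<omega>] elem_int_diff[of W t "n * m" "\<lambda>j. c (j div m)" \<omega> "\<lambda>j. d (j div n)"]
      by (simp add: a_def)
  qed
  have s: "step_fun t n c s - step_fun t m d s = step_fun t (n * m) a s" if "0 \<le> s" for s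
  proof -
    have "step_fun t m d s = step_fun t (m * n) (\<lambda>j. d (j div n)) s"
      by (rule step_fun_refine[OF m n t that])
    then have "step_fun t m d s = step_fun t (n * m) (\<lambda>j. d (j div n)) s"
      by (simp add: mult.commute)
    then show ?thesis using step_fun_refine[OF n m t that, of c]
      by (simp add: a_def step_fun_def)
  qed
  have "(\<integral>\<^sup>+\<omega>. ennreal ((elem_int W t n c \<omega> - elem_int W t m d \<omega>)\<^sup>2) \<partial>M)
      = (\<integral>\<^sup>+\<omega>. ennreal ((elem_int W t (n * m) a \<omega>)\<^sup>2) \<partial>M)" by (simp add: e)
  also have "\<dots> = ennreal (t / real (n * m) * (\<Sum>i<n * m. (a i)\<^sup>2))"
    by (rule elem_int_sq_nn[OF bm t N])
  also have "\<dots> = (\<integral>\<^sup>+s\<in>{0..t}. ennreal ((step_fun t (n * m) a s)\<^sup>2) \<partial>lborel)"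
    by (rule step_fun_sq_nn[OF t N, symmetric])
  also have "\<dots> = (\<integral>\<^sup>+s\<in>{0..t}. ennreal ((step_fun t n c s - step_fun t m d s)\<^sup>2) \<partial>lborel)"
    by (intro nn_integral_cong) (auto simp: indicator_def s)
  finally show ?thesis .
qed

lemma step_fun_meas[measurable]: "(\<lambda>s. step_fun t n c s) \<in> borel_measurable borel"
  unfolding step_fun_def by measurable

definition kc :: "real \<Rightarrow> real \<Rightarrow> nat \<Rightarrow> nat \<Rightarrow> real" where
  "kc \<alpha> t n i = (t - real i * t / real n) powr (\<alpha> - 1)"

definition kerr :: "real \<Rightarrow> real \<Rightarrow> nat \<Rightarrow> ennreal" where
  "kerr \<alpha> t n = (\<integral>\<^sup>+s\<in>{0..t}. ennreal (((t - s) powr (\<alpha> - 1) - step_fun t n (kc \<alpha> t n) s)\<^sup>2) \<partial>lborel)"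

lemma ker_pow:
  assumes t: "0 \<le> t" and a: "-1 < a"
  shows "(\<integral>\<^sup>+s\<in>{0..t}. ennreal ((t - s) powr a) \<partial>lborel) = ennreal (t powr (a + 1) / (a + 1))"
proof -
  define F where "F s = ennreal ((t - s) powr a) * indicator {0..t} s" for s
  have Fm: "F \<in> borel_measurable borel" unfolding F_def by measurable
  have "(\<integral>\<^sup>+s. ennreal ((t - s) powr a) * indicator {0..t} s \<partial>lborel)
      = (\<integral>\<^sup>+x. ennreal ((t - (t + (-1) * x)) powr a) * indicator {0..t} (t + (-1) * x) \<partial>lborel)"
    using nn_integral_real_affine[OF Fm, of "-1" t] by (simp add: F_def)
  also have "\<dots> = (\<integral>\<^sup>+x. ennreal (indicator {0..t} x * x powr a) \<partial>lborel)"
    by (intro nn_integral_cong) (auto simp: indicator_def)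
  also have "\<dots> = ennreal (t powr (a + 1) / (a + 1))"
    by (rule nn_integral_has_integral_lebesgue[OF _ has_integral_powr_from_0[OF a t]]) auto
  finally show ?thesis .
qed

lemma powr_sq: "0 \<le> (x::real) \<Longrightarrow> (x powr a)\<^sup>2 = x powr (2 * a)"
  unfolding power2_eq_square mult_2 by (rule powr_add[symmetric])

lemma kerr_scale:
  assumes t: "0 < t" and n: "0 < n"
  shows "kerr \<alpha> t n = ennreal (t powr (2 * \<alpha> - 1)) * kerr \<alpha> 1 n"
proof -
  define g where "g s = ennreal (((t - s) powr (\<alpha> - 1) - step_fun t n (kc \<alpha> t n) s)\<^sup>2) * indicator {0..t} s" for s
  define h where "h s = ennreal (((1 - s) powr (\<alpha> - 1) - step_fun 1 n (kc \<alpha> 1 n) s)\<^sup>2) * indicator {0..1} s" for s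
  have gm: "g \<in> borel_measurable borel" unfolding g_def by measurable
  have hm: "h \<in> borel_measurable lborel" unfolding h_def by measurable
  have pt: "g (0 + t * x) = ennreal (t powr (2 * \<alpha> - 2)) * h x" for x
  proof (cases "0 \<le> x \<and> x \<le> 1")
    case True
    define i where "i = nat \<lfloor>real n * x\<rfloor>"
    have i: "real i \<le> real n" unfolding i_def
    proof -
      have "real n * x \<le> real n" using True by (simp add: mult_left_le)
      moreover have "0 \<le> \<lfloor>real n * x\<rfloor>" using True by simp
      ultimately show "real (nat \<lfloor>real n * x\<rfloor>) \<le> real n" by linarith
    qed
    have i1: "0 \<le> 1 - real i / real n" using i n by (simp add: field_simps)
    have s1: "step_fun t n (kc \<alpha> t n) (t * x) = t powr (\<alpha> - 1) * (1 - real i / real n) powr (\<alpha> - 1)"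
    proof -
      have "real n * (t * x) / t = real n * x" using t by simp
      then have "step_fun t n (kc \<alpha> t n) (t * x) = (t - real i * t / real n) powr (\<alpha> - 1)"
        by (simp add: step_fun_def kc_def i_def)
      also have "t - real i * t / real n = t * (1 - real i / real n)" by (simp add: field_simps)
      finally show ?thesis using t i1 by (simp add: powr_mult)
    qed
    have s2: "step_fun 1 n (kc \<alpha> 1 n) x = (1 - real i / real n) powr (\<alpha> - 1)"
      by (simp add: step_fun_def kc_def i_def)
    have k: "(t - t * x) powr (\<alpha> - 1) = t powr (\<alpha> - 1) * (1 - x) powr (\<alpha> - 1)"
    proof -
      have "t - t * x = t * (1 - x)" by (simp add: algebra_simps)
      then show ?thesis using t True by (simp add: powr_mult)
    qed
    have tx: "t * x \<in> {0..t}" using True t by (auto simp: mult_left_le)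
    have "((t - t * x) powr (\<alpha> - 1) - step_fun t n (kc \<alpha> t n) (t * x))\<^sup>2
        = (t powr (\<alpha> - 1))\<^sup>2 * ((1 - x) powr (\<alpha> - 1) - step_fun 1 n (kc \<alpha> 1 n) x)\<^sup>2"
      unfolding k s1 s2 by (simp add: power2_eq_square algebra_simps)
    also have "(t powr (\<alpha> - 1))\<^sup>2 = t powr (2 * \<alpha> - 2)" using t by (simp add: powr_sq algebra_simps)
    finally show ?thesis using True tx by (simp add: g_def h_def ennreal_mult)
  next
    case False
    then have "t * x \<notin> {0..t}" using t by (auto simp: zero_le_mult_iff)
    then show ?thesis using False by (simp add: g_def h_def)
  qed
  have "kerr \<alpha> t n = (\<integral>\<^sup>+s. g s \<partial>lborel)" by (simp add: kerr_def g_def)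
  also have "\<dots> = \<bar>t\<bar> * (\<integral>\<^sup>+x. g (0 + t * x) \<partial>lborel)"
    by (rule nn_integral_real_affine[OF gm]) (use t in simp)
  also have "\<dots> = \<bar>t\<bar> * (\<integral>\<^sup>+x. ennreal (t powr (2 * \<alpha> - 2)) * h x \<partial>lborel)"
    by (simp only: pt)
  also have "\<dots> = ennreal t * (ennreal (t powr (2 * \<alpha> - 2)) * (\<integral>\<^sup>+x. h x \<partial>lborel))"
    using t hm by (subst nn_integral_cmult) auto
  also have "\<dots> = ennreal (t powr (2 * \<alpha> - 1)) * kerr \<alpha> 1 n"
  proof -
    have "t * t powr (2 * \<alpha> - 2) = t powr (2 * \<alpha> - 1)"
    proof -
      have "t powr (2 * \<alpha> - 1) = t powr (1 + (2 * \<alpha> - 2))"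
        by (rule arg_cong[where f="\<lambda>e. t powr e"]) simp
      also have "\<dots> = t powr 1 * t powr (2 * \<alpha> - 2)" by (rule powr_add)
      also have "\<dots> = t * t powr (2 * \<alpha> - 2)" using t by simp
      finally show ?thesis by simp
    qed
    then show ?thesis using t
      by (simp add: kerr_def h_def ennreal_mult[symmetric] mult.assoc[symmetric])
  qed
  finally show ?thesis .
qed

lemma floor_div_lim:
  assumes s: "0 \<le> s"
  shows "(\<lambda>j. real (nat \<lfloor>real j * s\<rfloor>) / real j) \<longlonglongrightarrow> s"
proof (rule tendsto_sandwich[of "\<lambda>j. s - 1 / real j" _ _ "\<lambda>j. s"])
  have fl: "real (nat \<lfloor>real j * s\<rfloor>) = real_of_int \<lfloor>real j * s\<rfloor>" for j
    using s by simp
  show "\<forall>\<^sub>F j in sequentially. s - 1 / real j \<le> real (nat \<lfloor>real j * s\<rfloor>) / real j"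
    using eventually_gt_at_top[of 0]
  proof eventually_elim
    case (elim j)
    have "real j * s - 1 \<le> real_of_int \<lfloor>real j * s\<rfloor>" by linarith
    then have h: "real j * s - 1 \<le> real (nat \<lfloor>real j * s\<rfloor>)" by (simp only: fl)
    have "(real j * s - 1) / real j \<le> real (nat \<lfloor>real j * s\<rfloor>) / real j"
      by (rule divide_right_mono[OF h]) simp
    moreover have "(real j * s - 1) / real j = s - 1 / real j" using elim by (simp add: field_simps)
    ultimately show ?case by simp
  qed
  show "\<forall>\<^sub>F j in sequentially. real (nat \<lfloor>real j * s\<rfloor>) / real j \<le> s"
    using eventually_gt_at_top[of 0]
  proof eventually_elim
    case (elim j)
    have "real_of_int \<lfloor>real j * s\<rfloor> \<le> real j * s" by linarith
    then have h: "real (nat \<lfloor>real j * s\<rfloor>) \<le> real j * s" by (simp only: fl)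
    have "real (nat \<lfloor>real j * s\<rfloor>) / real j \<le> (real j * s) / real j"
      by (rule divide_right_mono[OF h]) simp
    moreover have "(real j * s) / real j = s" using elim by (simp add: field_simps)
    ultimately show ?case by simp
  qed
  show "(\<lambda>j. s - 1 / real j) \<longlonglongrightarrow> s"
    using tendsto_diff[OF tendsto_const[of s] lim_1_over_n] by simp
qed simp

lemma kerr_lim:
  assumes a1: "1/2 < \<alpha>" and a2: "\<alpha> \<le> 1"
  shows "(\<lambda>n. kerr \<alpha> 1 n) \<longlonglongrightarrow> 0"
proof -
  define u where "u n s = ennreal (((1 - s) powr (\<alpha> - 1) - step_fun 1 n (kc \<alpha> 1 n) s)\<^sup>2) * indicator {0..1} s" for n s
  define w where "w s = ennreal ((1 - s) powr (2 * \<alpha> - 2)) * indicator {0..1} s" for s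
  have q: "(1 - s) \<le> 1 - real (nat \<lfloor>real n * s\<rfloor>) * 1 / real n" if "0 \<le> s" for s n
  proof (cases "n = 0")
    case False
    have "real_of_int \<lfloor>real n * s\<rfloor> \<le> real n * s" by linarith
    then have "real (nat \<lfloor>real n * s\<rfloor>) \<le> real n * s" using that by simp
    then show ?thesis using False by (simp add: field_simps)
  qed (use that in simp)
  have "(\<lambda>n. \<integral>\<^sup>+s. u n s \<partial>lborel) \<longlonglongrightarrow> (\<integral>\<^sup>+(s::real). 0 \<partial>lborel)"
  proof (rule nn_integral_dominated_convergence[where u=u and u'="\<lambda>_. 0" and w=w and M=lborel])
    show "\<And>i. u i \<in> borel_measurable lborel" unfolding u_def by measurable
    show "(\<lambda>_. 0) \<in> borel_measurable lborel" by simp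
    show "w \<in> borel_measurable lborel" unfolding w_def by measurable
    show "AE x in lborel. u j x \<le> w x" for j
      using AE_lborel_singleton[of 1]
    proof eventually_elim
      case (elim s)
      show ?case
      proof (cases "0 \<le> s \<and> s \<le> 1")
        case True
        then have s1: "0 < 1 - s" using elim by simp
        define P where "P = (1 - real (nat \<lfloor>real j * s\<rfloor>) * 1 / real j) powr (\<alpha> - 1)"
        have st: "step_fun 1 j (kc \<alpha> 1 j) s = P" by (simp add: step_fun_def kc_def P_def)
        have P0: "0 \<le> P" by (simp add: P_def)
        have PK: "P \<le> (1 - s) powr (\<alpha> - 1)" unfolding P_def
          by (rule powr_mono2') (use a2 s1 q True in auto)
        have "((1 - s) powr (\<alpha> - 1) - P)\<^sup>2 \<le> ((1 - s) powr (\<alpha> - 1))\<^sup>2"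
          using P0 PK by (intro power_mono) auto
        also have "\<dots> = (1 - s) powr (2 * \<alpha> - 2)" using s1 by (simp add: powr_sq algebra_simps)
        finally show ?thesis using True by (simp add: u_def w_def st)
      qed (simp add: u_def w_def)
    qed
    show "(\<integral>\<^sup>+x. w x \<partial>lborel) < \<infinity>"
      unfolding w_def using ker_pow[of 1 "2 * \<alpha> - 2"] a1 by simp
    show "AE x in lborel. (\<lambda>i. u i x) \<longlonglongrightarrow> 0"
      using AE_lborel_singleton[of 1]
    proof eventually_elim
      case (elim s)
      show ?case
      proof (cases "0 \<le> s \<and> s \<le> 1")
        case True
        then have s1: "0 < 1 - s" using elim by simp
        have "(\<lambda>j. 1 - real (nat \<lfloor>real j * s\<rfloor>) * 1 / real j) \<longlonglongrightarrow> 1 - s"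
          using tendsto_diff[OF tendsto_const[of 1] floor_div_lim[of s]] True by simp
        then have "(\<lambda>j. (1 - real (nat \<lfloor>real j * s\<rfloor>) * 1 / real j) powr (\<alpha> - 1)) \<longlonglongrightarrow> (1 - s) powr (\<alpha> - 1)"
          using s1 by (intro tendsto_powr) auto
        then have "(\<lambda>j. step_fun 1 j (kc \<alpha> 1 j) s) \<longlonglongrightarrow> (1 - s) powr (\<alpha> - 1)"
          by (simp add: step_fun_def kc_def)
        then have "(\<lambda>j. ((1 - s) powr (\<alpha> - 1) - step_fun 1 j (kc \<alpha> 1 j) s)\<^sup>2) \<longlonglongrightarrow> ((1 - s) powr (\<alpha> - 1) - (1 - s) powr (\<alpha> - 1))\<^sup>2"
          by (intro tendsto_intros)
        then have "(\<lambda>j. ennreal (((1 - s) powr (\<alpha> - 1) - step_fun 1 j (kc \<alpha> 1 j) s)\<^sup>2)) \<longlonglongrightarrow> ennreal 0"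
          by (intro tendsto_ennrealI) simp
        then show ?thesis using True by (simp add: u_def)
      qed (simp add: u_def)
    qed
  qed
  then show ?thesis by (simp add: kerr_def u_def)
qed

lemma elem_int_meas[measurable]:
  assumes bm: "brownian_motion M W" and t: "0 \<le> t"
  shows "elem_int W t n c \<in> borel_measurable M"
proof -
  have [measurable]: "W (real i * t / real n) \<in> borel_measurable M" for i
    by (rule bm_meas[OF bm]) (use t in simp)
  have [measurable]: "W (real (Suc i) * t / real n) \<in> borel_measurable M" for i
    by (rule bm_meas[OF bm]) (use t in simp)
  show ?thesis unfolding elem_int_def by measurable
qed

lemma sq_tri: "((a::real) - b)\<^sup>2 \<le> 2 * (g - a)\<^sup>2 + 2 * (g - b)\<^sup>2"
proof -
  have "0 \<le> ((g - a) + (g - b))\<^sup>2" by simp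
  then show ?thesis by (simp add: power2_eq_square algebra_simps)
qed

lemma sq_tri_ennreal: "ennreal (((a::real) - b)\<^sup>2) \<le> 2 * ennreal ((g - a)\<^sup>2) + 2 * ennreal ((g - b)\<^sup>2)"
proof -
  have "ennreal ((a - b)\<^sup>2) \<le> ennreal (2 * (g - a)\<^sup>2 + 2 * (g - b)\<^sup>2)"
    by (rule ennreal_leI) (rule sq_tri)
  also have "\<dots> = 2 * ennreal ((g - a)\<^sup>2) + 2 * ennreal ((g - b)\<^sup>2)"
    by (simp add: ennreal_plus ennreal_mult)
  finally show ?thesis .
qed

lemma iso_tri:
  assumes bm: "brownian_motion M W" and t: "0 < t" and n: "0 < n" and m: "0 < m"
    and g[measurable]: "g \<in> borel_measurable borel"
  shows "(\<integral>\<^sup>+\<omega>. ennreal ((elem_int W t n c \<omega> - elem_int W t m d \<omega>)\<^sup>2) \<partial>M)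
       \<le> 2 * (\<integral>\<^sup>+s\<in>{0..t}. ennreal ((g s - step_fun t n c s)\<^sup>2) \<partial>lborel)
         + 2 * (\<integral>\<^sup>+s\<in>{0..t}. ennreal ((g s - step_fun t m d s)\<^sup>2) \<partial>lborel)"
proof -
  have "(\<integral>\<^sup>+\<omega>. ennreal ((elem_int W t n c \<omega> - elem_int W t m d \<omega>)\<^sup>2) \<partial>M)
       = (\<integral>\<^sup>+s\<in>{0..t}. ennreal ((step_fun t n c s - step_fun t m d s)\<^sup>2) \<partial>lborel)"
    by (rule iso_diff[OF bm t n m])
  also have "\<dots> \<le> (\<integral>\<^sup>+s. 2 * (ennreal ((g s - step_fun t n c s)\<^sup>2) * indicator {0..t} s)
         + 2 * (ennreal ((g s - step_fun t m d s)\<^sup>2) * indicator {0..t} s) \<partial>lborel)"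
  proof (intro nn_integral_mono)
    fix s
    show "ennreal ((step_fun t n c s - step_fun t m d s)\<^sup>2) * indicator {0..t} s
      \<le> 2 * (ennreal ((g s - step_fun t n c s)\<^sup>2) * indicator {0..t} s)
         + 2 * (ennreal ((g s - step_fun t m d s)\<^sup>2) * indicator {0..t} s)"
      using sq_tri_ennreal[of "step_fun t n c s" "step_fun t m d s" "g s"]
      by (cases "s \<in> {0..t}") (auto simp: mult.assoc)
  qed
  also have "\<dots> = 2 * (\<integral>\<^sup>+s\<in>{0..t}. ennreal ((g s - step_fun t n c s)\<^sup>2) \<partial>lborel)
         + 2 * (\<integral>\<^sup>+s\<in>{0..t}. ennreal ((g s - step_fun t m d s)\<^sup>2) \<partial>lborel)"
    by (subst nn_integral_add) (auto simp: nn_integral_cmult)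
  finally show ?thesis .
qed

definition nseq :: "real \<Rightarrow> nat \<Rightarrow> nat" where
  "nseq \<alpha> k = (SOME n. 0 < n \<and> kerr \<alpha> 1 n \<le> ennreal ((1/16)^k))"

lemma nseq:
  assumes a1: "1/2 < \<alpha>" and a2: "\<alpha> \<le> 1"
  shows "0 < nseq \<alpha> k" "kerr \<alpha> 1 (nseq \<alpha> k) \<le> ennreal ((1/16)^k)"
proof -
  have "0 < ennreal ((1/16)^k)" by simp
  then have "eventually (\<lambda>n. kerr \<alpha> 1 n < ennreal ((1/16)^k)) sequentially"
    using order_tendstoD(2)[OF kerr_lim[OF a1 a2]] by blast
  then have "eventually (\<lambda>n. 0 < n \<and> kerr \<alpha> 1 n \<le> ennreal ((1/16)^k)) sequentially"
    using eventually_gt_at_top[of 0] by eventually_elim auto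
  then have "\<exists>n. 0 < n \<and> kerr \<alpha> 1 n \<le> ennreal ((1/16)^k)"
    by (auto simp: eventually_sequentially)
  then have "0 < nseq \<alpha> k \<and> kerr \<alpha> 1 (nseq \<alpha> k) \<le> ennreal ((1/16)^k)"
    unfolding nseq_def by (rule someI_ex)
  then show "0 < nseq \<alpha> k" "kerr \<alpha> 1 (nseq \<alpha> k) \<le> ennreal ((1/16)^k)" by auto
qed

lemma kerr_nseq:
  assumes a1: "1/2 < \<alpha>" and a2: "\<alpha> \<le> 1" and t: "0 < t"
  shows "kerr \<alpha> t (nseq \<alpha> k) \<le> ennreal (t powr (2 * \<alpha> - 1) * (1/16)^k)"
proof -
  have "kerr \<alpha> t (nseq \<alpha> k) = ennreal (t powr (2 * \<alpha> - 1)) * kerr \<alpha> 1 (nseq \<alpha> k)"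
    by (rule kerr_scale[OF t nseq(1)[OF a1 a2]])
  also have "\<dots> \<le> ennreal (t powr (2 * \<alpha> - 1)) * ennreal ((1/16)^k)"
    by (intro mult_left_mono nseq(2)[OF a1 a2]) auto
  finally show ?thesis by (simp add: ennreal_mult)
qed

definition ek :: "(real \<Rightarrow> 'a \<Rightarrow> real) \<Rightarrow> real \<Rightarrow> real \<Rightarrow> nat \<Rightarrow> 'a \<Rightarrow> real" where
  "ek W \<alpha> t k = elem_int W t (nseq \<alpha> k) (kc \<alpha> t (nseq \<alpha> k))"

lemma ek_vs:
  assumes bm: "brownian_motion M W" and a1: "1/2 < \<alpha>" and a2: "\<alpha> \<le> 1" and t: "0 < t" and n: "0 < n"
  shows "(\<integral>\<^sup>+\<omega>. ennreal ((ek W \<alpha> t k \<omega> - elem_int W t n c \<omega>)\<^sup>2) \<partial>M)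
     \<le> ennreal (2 * t powr (2 * \<alpha> - 1) * (1/16)^k)
       + 2 * (\<integral>\<^sup>+s\<in>{0..t}. ennreal (((t - s) powr (\<alpha> - 1) - step_fun t n c s)\<^sup>2) \<partial>lborel)"
proof -
  have "(\<integral>\<^sup>+\<omega>. ennreal ((ek W \<alpha> t k \<omega> - elem_int W t n c \<omega>)\<^sup>2) \<partial>M)
     \<le> 2 * kerr \<alpha> t (nseq \<alpha> k)
       + 2 * (\<integral>\<^sup>+s\<in>{0..t}. ennreal (((t - s) powr (\<alpha> - 1) - step_fun t n c s)\<^sup>2) \<partial>lborel)"
    unfolding ek_def kerr_def by (rule iso_tri[OF bm t nseq(1)[OF a1 a2] n]) measurable
  also have "2 * kerr \<alpha> t (nseq \<alpha> k) \<le> ennreal (2 * t powr (2 * \<alpha> - 1) * (1/16)^k)"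
  proof -
    have "2 * kerr \<alpha> t (nseq \<alpha> k) \<le> 2 * ennreal (t powr (2 * \<alpha> - 1) * (1/16)^k)"
      by (intro mult_left_mono kerr_nseq[OF a1 a2 t]) auto
    then show ?thesis by (simp add: ennreal_mult mult.assoc)
  qed
  finally show ?thesis by (simp add: add_right_mono)
qed

lemma ek_cauchy:
  assumes bm: "brownian_motion M W" and a1: "1/2 < \<alpha>" and a2: "\<alpha> \<le> 1" and t: "0 < t"
  shows "(\<integral>\<^sup>+\<omega>. ennreal ((ek W \<alpha> t k \<omega> - ek W \<alpha> t j \<omega>)\<^sup>2) \<partial>M)
     \<le> ennreal (2 * t powr (2 * \<alpha> - 1) * ((1/16)^k + (1/16)^j))"
proof -
  have A: "(\<integral>\<^sup>+\<omega>. ennreal ((ek W \<alpha> t k \<omega> - ek W \<alpha> t j \<omega>)\<^sup>2) \<partial>M)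
     \<le> ennreal (2 * t powr (2 * \<alpha> - 1) * (1/16)^k) + 2 * kerr \<alpha> t (nseq \<alpha> j)"
    using ek_vs[OF bm a1 a2 t nseq(1)[OF a1 a2], where k=k and c="kc \<alpha> t (nseq \<alpha> j)"]
    unfolding ek_def kerr_def .
  have B: "2 * kerr \<alpha> t (nseq \<alpha> j) \<le> ennreal (2 * t powr (2 * \<alpha> - 1) * (1/16)^j)"
  proof -
    have "2 * kerr \<alpha> t (nseq \<alpha> j) \<le> 2 * ennreal (t powr (2 * \<alpha> - 1) * (1/16)^j)"
      by (intro mult_left_mono kerr_nseq[OF a1 a2 t]) auto
    then show ?thesis by (simp add: ennreal_mult mult.assoc)
  qed
  have C: "(\<integral>\<^sup>+\<omega>. ennreal ((ek W \<alpha> t k \<omega> - ek W \<alpha> t j \<omega>)\<^sup>2) \<partial>M)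
     \<le> ennreal (2 * t powr (2 * \<alpha> - 1) * (1/16)^k) + ennreal (2 * t powr (2 * \<alpha> - 1) * (1/16)^j)"
    using A B by (meson add_left_mono order_trans)
  have D: "2 * t powr (2 * \<alpha> - 1) * ((1/16)^k + (1/16)^j)
      = 2 * t powr (2 * \<alpha> - 1) * (1/16)^k + 2 * t powr (2 * \<alpha> - 1) * (1/16)^j"
    by (simp add: distrib_left)
  show ?thesis unfolding D using C by (subst ennreal_plus) auto
qed

lemma abs_le_sq_geom:
  fixes d :: real
  shows "\<bar>d\<bar> \<le> 2^k * d\<^sup>2 + (1/2)^k"
proof (cases "\<bar>d\<bar> \<le> (1/2)^k")
  case True
  then show ?thesis by (simp add: add_increasing)
next
  case False
  then have "1 < 2^k * \<bar>d\<bar>"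
    by (simp add: power_one_over field_simps)
  then have "\<bar>d\<bar> \<le> (2^k * \<bar>d\<bar>) * \<bar>d\<bar>" by (simp add: mult_le_cancel_right1)
  also have "\<dots> = 2^k * d\<^sup>2" by (simp add: power2_eq_square abs_mult_self_eq mult.assoc)
  finally show ?thesis by (simp add: add_increasing2)
qed

lemma ek_conv:
  assumes bm: "brownian_motion M W" and a1: "1/2 < \<alpha>" and a2: "\<alpha> \<le> 1" and t: "0 < t"
  shows "AE \<omega> in M. convergent (\<lambda>k. ek W \<alpha> t k \<omega>)"
proof -
  interpret prob_space M using bm_prob[OF bm] .
  define T where "T = t powr (2 * \<alpha> - 1)"
  have T0: "0 \<le> T" by (simp add: T_def)
  define d where "d k \<omega> = ek W \<alpha> t (Suc k) \<omega> - ek W \<alpha> t k \<omega>" for k \<omega>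
  have ekm[measurable]: "ek W \<alpha> t k \<in> borel_measurable M" for k
    unfolding ek_def by (rule elem_int_meas[OF bm]) (use t in simp)
  have dm[measurable]: "d k \<in> borel_measurable M" for k unfolding d_def by measurable
  define F where "F \<omega> = (\<Sum>k. ennreal (2^k * (d k \<omega>)\<^sup>2))" for \<omega>
  have Fm: "F \<in> borel_measurable M" unfolding F_def by measurable
  have bnd: "(\<integral>\<^sup>+\<omega>. ennreal (2^k * (d k \<omega>)\<^sup>2) \<partial>M) \<le> ennreal (4 * T * (1/8)^k)" for k
  proof -
    have "(\<integral>\<^sup>+\<omega>. ennreal (2^k * (d k \<omega>)\<^sup>2) \<partial>M) = ennreal (2^k) * (\<integral>\<^sup>+\<omega>. ennreal ((d k \<omega>)\<^sup>2) \<partial>M)"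
      by (subst nn_integral_cmult[symmetric]) (auto simp: ennreal_mult)
    also have "\<dots> \<le> ennreal (2^k) * ennreal (2 * T * ((1/16)^(Suc k) + (1/16)^k))"
      unfolding d_def T_def by (intro mult_left_mono ek_cauchy[OF bm a1 a2 t]) auto
    also have "\<dots> = ennreal (2^k * (2 * T * ((1/16)^(Suc k) + (1/16)^k)))"
      by (rule ennreal_mult[symmetric]) (use T0 in auto)
    also have "\<dots> \<le> ennreal (4 * T * (1/8)^k)"
    proof (rule ennreal_leI)
      have e: "(2::real)^k * (1/16)^k = (1/8)^k" by (simp add: power_mult_distrib[symmetric])
      have "(2::real)^k * (2 * T * ((1/16)^(Suc k) + (1/16)^k)) = 2 * T * (17/16) * ((2::real)^k * (1/16)^k)"
        by (simp add: algebra_simps)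
      also have "\<dots> = 2 * T * (17/16) * (1/8)^k" by (simp only: e)
      also have "\<dots> \<le> 4 * T * (1/8)^k" using T0 by (intro mult_right_mono) auto
      finally show "(2::real)^k * (2 * T * ((1/16)^(Suc k) + (1/16)^k)) \<le> 4 * T * (1/8)^k" .
    qed
    finally show ?thesis .
  qed
  have "(\<integral>\<^sup>+\<omega>. F \<omega> \<partial>M) = (\<Sum>k. \<integral>\<^sup>+\<omega>. ennreal (2^k * (d k \<omega>)\<^sup>2) \<partial>M)"
    unfolding F_def by (rule nn_integral_suminf) measurable
  also have "\<dots> \<le> (\<Sum>k. ennreal (4 * T * (1/8)^k))"
    by (intro suminf_le bnd summableI)
  also have "\<dots> = ennreal (4 * T * (1 / (1 - 1/8)))"
  proof -
    have "(\<lambda>k. 4 * T * (1/8::real)^k) sums (4 * T * (1 / (1 - 1/8)))"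
      by (intro sums_mult geometric_sums) simp
    then have "(\<lambda>k. ennreal (4 * T * (1/8::real)^k)) sums ennreal (4 * T * (1 / (1 - 1/8)))"
      using T0 by (subst sums_ennreal) auto
    then show ?thesis by (rule sums_unique[symmetric])
  qed
  finally have "(\<integral>\<^sup>+\<omega>. F \<omega> \<partial>M) \<noteq> \<infinity>" by (auto simp: top_unique)
  then have "AE \<omega> in M. F \<omega> \<noteq> \<infinity>" by (intro nn_integral_PInf_AE Fm)
  then show ?thesis
  proof eventually_elim
    case (elim \<omega>)
    have s1: "summable (\<lambda>k. 2^k * (d k \<omega>)\<^sup>2)"
      by (rule summable_suminf_not_top) (use elim in \<open>auto simp: F_def\<close>)
    have s2: "summable (\<lambda>k. 2^k * (d k \<omega>)\<^sup>2 + (1/2::real)^k)"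
      by (intro summable_add s1 summable_geometric) simp
    have "summable (\<lambda>k. d k \<omega>)"
      by (rule summable_comparison_test'[OF s2, of 0]) (simp add: abs_le_sq_geom)
    then have "convergent (\<lambda>k. \<Sum>i<k. d i \<omega>)"
      using summable_LIMSEQ convergent_def by blast
    then have "convergent (\<lambda>k. ek W \<alpha> t 0 \<omega> + (\<Sum>i<k. d i \<omega>))"
      by (intro convergent_add convergent_const)
    moreover have "ek W \<alpha> t 0 \<omega> + (\<Sum>i<k. d i \<omega>) = ek W \<alpha> t k \<omega>" for k
      unfolding d_def using sum_lessThan_telescope[of "\<lambda>i. ek W \<alpha> t i \<omega>" k] by simp
    ultimately show ?case by simp
  qed
qed

definition Zlim :: "(real \<Rightarrow> 'a \<Rightarrow> real) \<Rightarrow> real \<Rightarrow> real \<Rightarrow> 'a \<Rightarrow> real" where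
  "Zlim W \<alpha> t \<omega> = lim (\<lambda>k. ek W \<alpha> t k \<omega>)"

lemma ek_meas[measurable]:
  assumes bm: "brownian_motion M W" and t: "0 \<le> t"
  shows "ek W \<alpha> t k \<in> borel_measurable M"
  unfolding ek_def by (rule elem_int_meas[OF bm t])

lemma Zlim_meas[measurable]:
  assumes bm: "brownian_motion M W" and t: "0 \<le> t"
  shows "Zlim W \<alpha> t \<in> borel_measurable M"
  unfolding Zlim_def using ek_meas[OF bm t] by measurable

lemma ek_lim:
  assumes bm: "brownian_motion M W" and a1: "1/2 < \<alpha>" and a2: "\<alpha> \<le> 1" and t: "0 < t"
  shows "AE \<omega> in M. (\<lambda>k. ek W \<alpha> t k \<omega>) \<longlonglongrightarrow> Zlim W \<alpha> t \<omega>"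
  using ek_conv[OF bm a1 a2 t] by eventually_elim (simp add: Zlim_def convergent_LIMSEQ_iff)

lemma Z_close:
  assumes bm: "brownian_motion M W" and a1: "1/2 < \<alpha>" and a2: "\<alpha> \<le> 1" and t: "0 < t"
  shows "(\<integral>\<^sup>+\<omega>. ennreal ((Zlim W \<alpha> t \<omega> - ek W \<alpha> t k \<omega>)\<^sup>2) \<partial>M) \<le> ennreal (4 * t powr (2 * \<alpha> - 1) * (1/16)^k)"
proof -
  define T where "T = t powr (2 * \<alpha> - 1)"
  have T0: "0 \<le> T" by (simp add: T_def)
  have [measurable]: "ek W \<alpha> t j \<in> borel_measurable M" for j by (rule ek_meas[OF bm]) (use t in simp)
  have "(\<integral>\<^sup>+\<omega>. ennreal ((Zlim W \<alpha> t \<omega> - ek W \<alpha> t k \<omega>)\<^sup>2) \<partial>M)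
      = (\<integral>\<^sup>+\<omega>. liminf (\<lambda>j. ennreal ((ek W \<alpha> t j \<omega> - ek W \<alpha> t k \<omega>)\<^sup>2)) \<partial>M)"
  proof (rule nn_integral_cong_AE)
    show "AE \<omega> in M. ennreal ((Zlim W \<alpha> t \<omega> - ek W \<alpha> t k \<omega>)\<^sup>2)
          = liminf (\<lambda>j. ennreal ((ek W \<alpha> t j \<omega> - ek W \<alpha> t k \<omega>)\<^sup>2))"
      using ek_lim[OF bm a1 a2 t]
    proof eventually_elim
      case (elim \<omega>)
      have "(\<lambda>j. (ek W \<alpha> t j \<omega> - ek W \<alpha> t k \<omega>)\<^sup>2) \<longlonglongrightarrow> (Zlim W \<alpha> t \<omega> - ek W \<alpha> t k \<omega>)\<^sup>2"
        by (intro tendsto_intros elim)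
      then have "(\<lambda>j. ennreal ((ek W \<alpha> t j \<omega> - ek W \<alpha> t k \<omega>)\<^sup>2)) \<longlonglongrightarrow> ennreal ((Zlim W \<alpha> t \<omega> - ek W \<alpha> t k \<omega>)\<^sup>2)"
        by (rule tendsto_ennrealI)
      then show ?case by (rule lim_imp_Liminf[OF trivial_limit_sequentially, symmetric])
    qed
  qed
  also have "\<dots> \<le> liminf (\<lambda>j. \<integral>\<^sup>+\<omega>. ennreal ((ek W \<alpha> t j \<omega> - ek W \<alpha> t k \<omega>)\<^sup>2) \<partial>M)"
    by (rule nn_integral_liminf) measurable
  also have "\<dots> \<le> limsup (\<lambda>j. \<integral>\<^sup>+\<omega>. ennreal ((ek W \<alpha> t j \<omega> - ek W \<alpha> t k \<omega>)\<^sup>2) \<partial>M)"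
    by (rule Liminf_le_Limsup) simp
  also have "\<dots> \<le> ennreal (4 * T * (1/16)^k)"
  proof (rule Limsup_bounded)
    show "\<forall>\<^sub>F j in sequentially. (\<integral>\<^sup>+\<omega>. ennreal ((ek W \<alpha> t j \<omega> - ek W \<alpha> t k \<omega>)\<^sup>2) \<partial>M) \<le> ennreal (4 * T * (1/16)^k)"
      using eventually_ge_at_top[of k]
    proof eventually_elim
      case (elim j)
      have "(1/16::real)^j \<le> (1/16)^k" using elim by (intro power_decreasing) auto
      then have "2 * T * ((1/16)^j + (1/16)^k) \<le> 4 * T * (1/16)^k"
        using T0 by (simp add: algebra_simps mult_left_mono)
      then show ?case
        using ek_cauchy[OF bm a1 a2 t, of j k] unfolding T_def[symmetric]
        by (meson ennreal_leI order_trans)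
    qed
  qed
  finally show ?thesis by (simp add: T_def)
qed

lemma tendsto_ennreal_geom: "(\<lambda>k. ennreal (C * (1/16::real)^k)) \<longlonglongrightarrow> 0"
proof -
  have "(\<lambda>k. C * (1/16::real)^k) \<longlonglongrightarrow> C * 0"
    by (intro tendsto_mult tendsto_const LIMSEQ_power_zero) simp
  then show ?thesis using tendsto_ennrealI by fastforce
qed

lemma Z_wiener:
  assumes bm: "brownian_motion M W" and a1: "1/2 < \<alpha>" and a2: "\<alpha> \<le> 1" and t: "0 < t"
  shows "is_wiener_integral M W (\<lambda>s. (t - s) powr (\<alpha> - 1)) t (Zlim W \<alpha> t)"
  unfolding is_wiener_integral_def
proof (intro conjI allI impI)
  show "Zlim W \<alpha> t \<in> borel_measurable M" by (rule Zlim_meas[OF bm]) (use t in simp)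
  fix n :: "nat \<Rightarrow> nat" and c :: "nat \<Rightarrow> nat \<Rightarrow> real"
  assume npos: "\<forall>k. 0 < n k"
  define a where "a j = (\<integral>\<^sup>+s\<in>{0..t}. ennreal (((t - s) powr (\<alpha> - 1) - step_fun t (n j) (c j) s)\<^sup>2) \<partial>lborel)" for j
  assume "(\<lambda>k. \<integral>\<^sup>+s\<in>{0..t}. ennreal (((t - s) powr (\<alpha> - 1) - step_fun t (n k) (c k) s)\<^sup>2) \<partial>lborel) \<longlonglongrightarrow> 0"
  then have alim: "a \<longlonglongrightarrow> 0" by (simp add: a_def[abs_def])
  define T where "T = t powr (2 * \<alpha> - 1)"
  have T0: "0 \<le> T" by (simp add: T_def)
  have [measurable]: "ek W \<alpha> t j \<in> borel_measurable M" for j by (rule ek_meas[OF bm]) (use t in simp)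
  have [measurable]: "Zlim W \<alpha> t \<in> borel_measurable M" by (rule Zlim_meas[OF bm]) (use t in simp)
  have [measurable]: "elem_int W t (n j) (c j) \<in> borel_measurable M" for j
    by (rule elem_int_meas[OF bm]) (use t in simp)
  define X where "X j = (\<integral>\<^sup>+\<omega>. ennreal ((Zlim W \<alpha> t \<omega> - elem_int W t (n j) (c j) \<omega>)\<^sup>2) \<partial>M)" for j
  have XB: "X j \<le> (ennreal (8 * T * (1/16)^k) + ennreal (4 * T * (1/16)^k)) + 4 * a j" for j k
  proof -
    have "X j \<le> (\<integral>\<^sup>+\<omega>. 2 * ennreal ((Zlim W \<alpha> t \<omega> - ek W \<alpha> t k \<omega>)\<^sup>2)
                  + 2 * ennreal ((ek W \<alpha> t k \<omega> - elem_int W t (n j) (c j) \<omega>)\<^sup>2) \<partial>M)"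
      unfolding X_def
    proof (intro nn_integral_mono)
      fix \<omega>
      show "ennreal ((Zlim W \<alpha> t \<omega> - elem_int W t (n j) (c j) \<omega>)\<^sup>2)
        \<le> 2 * ennreal ((Zlim W \<alpha> t \<omega> - ek W \<alpha> t k \<omega>)\<^sup>2) + 2 * ennreal ((ek W \<alpha> t k \<omega> - elem_int W t (n j) (c j) \<omega>)\<^sup>2)"
        using sq_tri_ennreal[of "Zlim W \<alpha> t \<omega>" "elem_int W t (n j) (c j) \<omega>" "ek W \<alpha> t k \<omega>"]
        by (simp add: power2_commute)
    qed
    also have "\<dots> = 2 * (\<integral>\<^sup>+\<omega>. ennreal ((Zlim W \<alpha> t \<omega> - ek W \<alpha> t k \<omega>)\<^sup>2) \<partial>M)
                  + 2 * (\<integral>\<^sup>+\<omega>. ennreal ((ek W \<alpha> t k \<omega> - elem_int W t (n j) (c j) \<omega>)\<^sup>2) \<partial>M)"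
      by (subst nn_integral_add) (auto simp: nn_integral_cmult)
    also have "\<dots> \<le> 2 * ennreal (4 * T * (1/16)^k)
                  + 2 * (ennreal (2 * T * (1/16)^k) + 2 * a j)"
      unfolding T_def a_def
      by (intro add_mono mult_left_mono Z_close[OF bm a1 a2 t] ek_vs[OF bm a1 a2 t] npos[rule_format]) auto
    also have "\<dots> = (ennreal (8 * T * (1/16)^k) + ennreal (4 * T * (1/16)^k)) + 4 * a j"
    proof -
      have h: "0 \<le> x \<Longrightarrow> 2 * ennreal x = ennreal (2 * x)" for x :: real by (simp add: ennreal_mult)
      have "2 * ennreal (4 * T * (1/16)^k) = ennreal (8 * T * (1/16)^k)" using T0 by (simp add: h)
      moreover have "2 * ennreal (2 * T * (1/16)^k) = ennreal (4 * T * (1/16)^k)" using T0 by (simp add: h)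
      ultimately show ?thesis by (simp add: distrib_left mult.assoc[symmetric] add.assoc)
    qed
    finally show ?thesis .
  qed
  have X4: "X j \<le> 4 * a j" for j
  proof (rule tendsto_le[OF trivial_limit_sequentially _ tendsto_const])
    show "(\<lambda>k. (ennreal (8 * T * (1/16)^k) + ennreal (4 * T * (1/16)^k)) + 4 * a j) \<longlonglongrightarrow> 4 * a j"
      using tendsto_add[OF tendsto_add[OF tendsto_ennreal_geom[of "8 * T"] tendsto_ennreal_geom[of "4 * T"]] tendsto_const[of "4 * a j"]]
      by simp
    show "\<forall>\<^sub>F k in sequentially. X j \<le> (ennreal (8 * T * (1/16)^k) + ennreal (4 * T * (1/16)^k)) + 4 * a j"
      using XB by simp
  qed
  have "(\<lambda>j. 4 * a j) \<longlonglongrightarrow> 4 * 0"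
    by (intro ennreal_tendsto_cmult alim) simp
  then have "X \<longlonglongrightarrow> 0"
    by (intro tendsto_sandwich[of "\<lambda>_. 0" X _ "\<lambda>j. 4 * a j"]) (auto simp: X4)
  then show "(\<lambda>k. \<integral>\<^sup>+\<omega>. ennreal ((Zlim W \<alpha> t \<omega> - elem_int W t (n k) (c k) \<omega>)\<^sup>2) \<partial>M) \<longlonglongrightarrow> 0"
    by (simp add: X_def[abs_def])
qed

lemma step_le_ker:
  assumes a2: "\<alpha> \<le> 1" and t: "0 < t" and s: "0 \<le> s" "s < t"
  shows "0 \<le> step_fun t n (kc \<alpha> t n) s" "step_fun t n (kc \<alpha> t n) s \<le> (t - s) powr (\<alpha> - 1)"
proof -
  define i where "i = nat \<lfloor>real n * s / t\<rfloor>"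
  have "real i * t / real n \<le> s"
  proof (cases "n = 0")
    case False
    have "real_of_int \<lfloor>real n * s / t\<rfloor> \<le> real n * s / t" by linarith
    then have "real i \<le> real n * s / t" using s t by (simp add: i_def)
    then have "real i * t \<le> real n * s" using t by (simp add: field_simps)
    then show ?thesis using False by (simp add: field_simps)
  qed (use s in simp)
  then have le: "t - s \<le> t - real i * t / real n" by simp
  have st: "step_fun t n (kc \<alpha> t n) s = (t - real i * t / real n) powr (\<alpha> - 1)"
    by (simp add: step_fun_def kc_def i_def)
  show "0 \<le> step_fun t n (kc \<alpha> t n) s" by (simp add: st)
  show "step_fun t n (kc \<alpha> t n) s \<le> (t - s) powr (\<alpha> - 1)"
    unfolding st by (rule powr_mono2') (use a2 s le in auto)
qed

lemma Z_sq:
  assumes bm: "brownian_motion M W" and a1: "1/2 < \<alpha>" and a2: "\<alpha> \<le> 1" and t: "0 < t"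
  shows "(\<integral>\<^sup>+\<omega>. ennreal ((Zlim W \<alpha> t \<omega>)\<^sup>2) \<partial>M) \<le> ennreal (t powr (2 * \<alpha> - 1) / (2 * \<alpha> - 1))"
proof -
  have [measurable]: "ek W \<alpha> t j \<in> borel_measurable M" for j by (rule ek_meas[OF bm]) (use t in simp)
  have bnd: "(\<integral>\<^sup>+\<omega>. ennreal ((ek W \<alpha> t j \<omega>)\<^sup>2) \<partial>M) \<le> ennreal (t powr (2 * \<alpha> - 1) / (2 * \<alpha> - 1))" for j
  proof -
    have N: "0 < nseq \<alpha> j" by (rule nseq(1)[OF a1 a2])
    have "(\<integral>\<^sup>+\<omega>. ennreal ((ek W \<alpha> t j \<omega>)\<^sup>2) \<partial>M)
        = (\<integral>\<^sup>+s\<in>{0..t}. ennreal ((step_fun t (nseq \<alpha> j) (kc \<alpha> t (nseq \<alpha> j)) s)\<^sup>2) \<partial>lborel)"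
      unfolding ek_def elem_int_sq_nn[OF bm t N] step_fun_sq_nn[OF t N] ..
    also have "\<dots> \<le> (\<integral>\<^sup>+s\<in>{0..t}. ennreal ((t - s) powr (2 * \<alpha> - 2)) \<partial>lborel)"
    proof (rule nn_integral_mono_AE)
      show "AE s in lborel. ennreal ((step_fun t (nseq \<alpha> j) (kc \<alpha> t (nseq \<alpha> j)) s)\<^sup>2) * indicator {0..t} s
          \<le> ennreal ((t - s) powr (2 * \<alpha> - 2)) * indicator {0..t} s"
        using AE_lborel_singleton[of t]
      proof eventually_elim
        case (elim s)
        show ?case
        proof (cases "s \<in> {0..t}")
          case True
          then have s: "0 \<le> s" "s < t" using elim by auto
          have "(step_fun t (nseq \<alpha> j) (kc \<alpha> t (nseq \<alpha> j)) s)\<^sup>2 \<le> ((t - s) powr (\<alpha> - 1))\<^sup>2"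
            using step_le_ker[OF a2 t s] by (intro power_mono) auto
          also have "\<dots> = (t - s) powr (2 * \<alpha> - 2)" using s by (simp add: powr_sq algebra_simps)
          finally show ?thesis using True by (simp add: ennreal_leI)
        qed simp
      qed
    qed
    also have "\<dots> = ennreal (t powr (2 * \<alpha> - 2 + 1) / (2 * \<alpha> - 2 + 1))"
      by (rule ker_pow) (use t a1 in auto)
    finally show ?thesis by (simp add: algebra_simps)
  qed
  have "(\<integral>\<^sup>+\<omega>. ennreal ((Zlim W \<alpha> t \<omega>)\<^sup>2) \<partial>M) = (\<integral>\<^sup>+\<omega>. liminf (\<lambda>j. ennreal ((ek W \<alpha> t j \<omega>)\<^sup>2)) \<partial>M)"
  proof (rule nn_integral_cong_AE)
    show "AE \<omega> in M. ennreal ((Zlim W \<alpha> t \<omega>)\<^sup>2) = liminf (\<lambda>j. ennreal ((ek W \<alpha> t j \<omega>)\<^sup>2))"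
      using ek_lim[OF bm a1 a2 t]
    proof eventually_elim
      case (elim \<omega>)
      have "(\<lambda>j. (ek W \<alpha> t j \<omega>)\<^sup>2) \<longlonglongrightarrow> (Zlim W \<alpha> t \<omega>)\<^sup>2"
        by (intro tendsto_intros elim)
      then have "(\<lambda>j. ennreal ((ek W \<alpha> t j \<omega>)\<^sup>2)) \<longlonglongrightarrow> ennreal ((Zlim W \<alpha> t \<omega>)\<^sup>2)"
        by (rule tendsto_ennrealI)
      then show ?case by (rule lim_imp_Liminf[OF trivial_limit_sequentially, symmetric])
    qed
  qed
  also have "\<dots> \<le> liminf (\<lambda>j. \<integral>\<^sup>+\<omega>. ennreal ((ek W \<alpha> t j \<omega>)\<^sup>2) \<partial>M)"
    by (rule nn_integral_liminf) measurable
  also have "\<dots> \<le> limsup (\<lambda>j. \<integral>\<^sup>+\<omega>. ennreal ((ek W \<alpha> t j \<omega>)\<^sup>2) \<partial>M)"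
    by (rule Liminf_le_Limsup) simp
  also have "\<dots> \<le> ennreal (t powr (2 * \<alpha> - 1) / (2 * \<alpha> - 1))"
    by (rule Limsup_bounded) (simp add: bnd)
  finally show ?thesis .
qed

definition Wp :: "(real \<Rightarrow> 'a \<Rightarrow> real) \<Rightarrow> real \<Rightarrow> 'a \<Rightarrow> real" where
  "Wp W s \<omega> = (if 0 \<le> s then W s \<omega> else 0)"

lemma Wp_meas_prod:
  assumes bm: "brownian_motion M W"
  shows "(\<lambda>p. Wp W (fst p) (snd p)) \<in> borel_measurable (lborel \<Otimes>\<^sub>M M)"
proof (rule borel_measurable_LIMSEQ_metric)
  define q where "q j s = real (nat \<lceil>real (Suc j) * s\<rceil>) / real (Suc j)" for j s
  show "(\<lambda>p. if 0 \<le> fst p then W (q j (fst p)) (snd p) else 0) \<in> borel_measurable (lborel \<Otimes>\<^sub>M M)" for j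
  proof -
    have g: "(\<lambda>p. nat \<lceil>real (Suc j) * fst p\<rceil>) \<in> measurable (lborel \<Otimes>\<^sub>M M) (count_space UNIV)"
      by measurable
    have f: "(\<lambda>p. if (0::real) \<le> fst p then W (real i / real (Suc j)) (snd p) else 0) \<in> borel_measurable (lborel \<Otimes>\<^sub>M M)" for i
    proof -
      have [measurable]: "W (real i / real (Suc j)) \<in> borel_measurable M" by (rule bm_meas[OF bm]) simp
      show ?thesis by measurable
    qed
    have "(\<lambda>p. (\<lambda>i p. if (0::real) \<le> fst p then W (real i / real (Suc j)) (snd p) else 0)
              ((\<lambda>p. nat \<lceil>real (Suc j) * fst p\<rceil>) p) p) \<in> borel_measurable (lborel \<Otimes>\<^sub>M M)"
      by (rule measurable_compose_countable'[OF f g]) auto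
    then show ?thesis unfolding q_def .
  qed
  fix p :: "real \<times> 'a" assume p: "p \<in> space (lborel \<Otimes>\<^sub>M M)"
  then have \<omega>: "snd p \<in> space M" by (auto simp: space_pair_measure)
  show "(\<lambda>j. if 0 \<le> fst p then W (q j (fst p)) (snd p) else 0) \<longlonglongrightarrow> Wp W (fst p) (snd p)"
  proof (cases "0 \<le> fst p")
    case True
    define s where "s = fst p"
    have s: "0 \<le> s" using True by (simp add: s_def)
    have lo: "s \<le> q j s" for j
    proof -
      have "real (Suc j) * s \<le> real_of_int \<lceil>real (Suc j) * s\<rceil>" by linarith
      then have "real (Suc j) * s \<le> real (nat \<lceil>real (Suc j) * s\<rceil>)" using s by simp
      then show ?thesis unfolding q_def by (simp add: field_simps)
    qed
    have hi: "q j s \<le> s + 1 / real (Suc j)" for j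
    proof -
      have "real_of_int \<lceil>real (Suc j) * s\<rceil> \<le> real (Suc j) * s + 1" by linarith
      then have "real (nat \<lceil>real (Suc j) * s\<rceil>) \<le> real (Suc j) * s + 1" using s by simp
      then have "real (nat \<lceil>real (Suc j) * s\<rceil>) / real (Suc j) \<le> (real (Suc j) * s + 1) / real (Suc j)"
        by (rule divide_right_mono) simp
      also have "\<dots> = s + 1 / real (Suc j)" by (simp add: add_divide_distrib)
      finally show ?thesis unfolding q_def .
    qed
    have ql: "(\<lambda>j. q j s) \<longlonglongrightarrow> s"
    proof (rule tendsto_sandwich[of "\<lambda>j. s" _ _ "\<lambda>j. s + 1 / real (Suc j)"])
      show "(\<lambda>j. s + 1 / real (Suc j)) \<longlonglongrightarrow> s"
        using tendsto_add[OF tendsto_const[of s] LIMSEQ_Suc[OF lim_1_over_n]] by simp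
    qed (intro always_eventually allI lo hi tendsto_const)+
    have "(\<lambda>j. W (q j s) (snd p)) \<longlonglongrightarrow> W s (snd p)"
      by (rule continuous_on_tendsto_compose[OF bm_cont[OF bm \<omega>] ql]) (use s lo in \<open>auto intro!: always_eventually order_trans[OF s lo]\<close>)
    then show ?thesis using True by (simp add: Wp_def s_def)
  qed (simp add: Wp_def)
qed

lemma Wp_meas_comp[measurable (raw)]:
  assumes bm: "brownian_motion M W" and f: "f \<in> borel_measurable N" and g: "g \<in> N \<rightarrow>\<^sub>M M"
  shows "(\<lambda>x. Wp W (f x) (g x)) \<in> borel_measurable N"
proof -
  have "(\<lambda>x. (f x, g x)) \<in> N \<rightarrow>\<^sub>M lborel \<Otimes>\<^sub>M M"
    using f g by (intro measurable_Pair) auto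
  from measurable_compose[OF this Wp_meas_prod[OF bm]] show ?thesis by simp
qed

definition Zproc :: "(real \<Rightarrow> 'a \<Rightarrow> real) \<Rightarrow> real \<Rightarrow> real \<Rightarrow> 'a \<Rightarrow> real" where
  "Zproc W \<alpha> t \<omega> = (if 0 \<le> t then Zlim W \<alpha> t \<omega> else 0)"

lemma Zproc_meas:
  assumes bm: "brownian_motion M W"
  shows "(\<lambda>p. Zproc W \<alpha> (fst p) (snd p)) \<in> borel_measurable (lborel \<Otimes>\<^sub>M M)"
proof -
  have Wc[measurable]: "(\<lambda>p. Wp W (c * fst p) (snd p)) \<in> borel_measurable (lborel \<Otimes>\<^sub>M M)" for c
    by (rule Wp_meas_comp[OF bm]) auto
  define ekp where "ekp k p = (\<Sum>i<nseq \<alpha> k. kc \<alpha> (fst p) (nseq \<alpha> k) i *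
      (Wp W ((real (Suc i) / real (nseq \<alpha> k)) * fst p) (snd p) - Wp W ((real i / real (nseq \<alpha> k)) * fst p) (snd p)))" for k p
  have [measurable]: "ekp k \<in> borel_measurable (lborel \<Otimes>\<^sub>M M)" for k
    unfolding ekp_def kc_def by measurable
  have Gm: "(\<lambda>p. if 0 \<le> fst p then lim (\<lambda>k. ekp k p) else 0) \<in> borel_measurable (lborel \<Otimes>\<^sub>M M)"
    by measurable
  have eq: "Zproc W \<alpha> (fst p) (snd p) = (if 0 \<le> fst p then lim (\<lambda>k. ekp k p) else 0)" for p :: "real \<times> 'a"
  proof (cases "0 \<le> fst p")
    case True
    have "ekp k p = ek W \<alpha> (fst p) k (snd p)" for k
      unfolding ekp_def ek_def elem_int_def
    proof (intro sum.cong refl)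
      fix i
      have "0 \<le> real (Suc i) / real (nseq \<alpha> k) * fst p" "0 \<le> real i / real (nseq \<alpha> k) * fst p"
        using True by auto
      then show "kc \<alpha> (fst p) (nseq \<alpha> k) i * (Wp W (real (Suc i) / real (nseq \<alpha> k) * fst p) (snd p)
            - Wp W (real i / real (nseq \<alpha> k) * fst p) (snd p))
          = kc \<alpha> (fst p) (nseq \<alpha> k) i * (W (real (Suc i) * fst p / real (nseq \<alpha> k)) (snd p)
            - W (real i * fst p / real (nseq \<alpha> k)) (snd p))"
        by (simp add: Wp_def)
    qed
    then show ?thesis using True by (simp add: Zproc_def Zlim_def)
  qed (simp add: Zproc_def)
  show ?thesis by (subst measurable_cong[where g="\<lambda>p. if 0 \<le> fst p then lim (\<lambda>k. ekp k p) else 0"]) (auto simp: eq Gm)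
qed



lemma aug_gen_Pow: "(\<Union>s\<in>{0..t}. {W s -` B \<inter> space M | B. B \<in> sets borel}) \<union> null_sets M \<subseteq> Pow (space M)"
proof (intro Un_least UN_least subsetI)
  fix x s assume "x \<in> {W s -` B \<inter> space M | B. B \<in> sets borel}"
  then show "x \<in> Pow (space M)" by auto
next
  fix x assume "x \<in> null_sets M"
  then show "x \<in> Pow (space M)" using sets.sets_into_space[OF null_setsD2] by simp
qed

lemma aug_Pow: "aug_filtration M W t \<subseteq> Pow (space M)"
  using sigma_sets_into_sp[OF aug_gen_Pow[where t=t and W=W and M=M]] unfolding aug_filtration_def by blast

lemma aug_space[simp]: "space (sigma (space M) (aug_filtration M W t)) = space M"
  using aug_Pow by (rule space_measure_of)

lemma aug_sets: "sets (sigma (space M) (aug_filtration M W t)) = aug_filtration M W t"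
proof -
  have "sets (sigma (space M) (aug_filtration M W t)) = sigma_sets (space M) (aug_filtration M W t)"
    using aug_Pow by (rule sets_measure_of)
  also have "\<dots> = aug_filtration M W t"
    unfolding aug_filtration_def
    by (rule sigma_sets_sigma_sets_eq[OF aug_gen_Pow])
  finally show ?thesis .
qed

lemma W_adapted:
  assumes "0 \<le> s" "s \<le> t"
  shows "W s \<in> borel_measurable (sigma (space M) (aug_filtration M W t))"
proof (rule measurableI)
  fix B :: "real set" assume "B \<in> sets borel"
  then have "W s -` B \<inter> space M \<in> (\<Union>s\<in>{0..t}. {W s -` B \<inter> space M | B. B \<in> sets borel}) \<union> null_sets M"
    using assms by auto
  then have "W s -` B \<inter> space M \<in> aug_filtration M W t"
    unfolding aug_filtration_def by (rule sigma_sets.Basic)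
  then show "W s -` B \<inter> space (sigma (space M) (aug_filtration M W t)) \<in> sets (sigma (space M) (aug_filtration M W t))"
    by (simp add: aug_sets)
qed simp

lemma aug_mono:
  assumes st: "s \<le> t"
  shows "aug_filtration M W s \<subseteq> aug_filtration M W t"
  unfolding aug_filtration_def
  apply (rule sigma_sets_mono')
  using st by fastforce

lemma adapted_mono:
  fixes f :: "'a \<Rightarrow> real"
  assumes st: "s \<le> t" and f: "f \<in> borel_measurable (sigma (space M) (aug_filtration M W s))"
  shows "f \<in> borel_measurable (sigma (space M) (aug_filtration M W t))"
proof (rule measurableI)
  fix B :: "real set" assume "B \<in> sets borel"
  then have "f -` B \<inter> space M \<in> aug_filtration M W s"
    using measurable_sets[OF f] by (simp add: aug_sets)
  then show "f -` B \<inter> space (sigma (space M) (aug_filtration M W t)) \<in> sets (sigma (space M) (aug_filtration M W t))"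
    using aug_mono[OF st] by (auto simp: aug_sets)
qed simp

lemma elem_int_adapted:
  assumes t: "0 \<le> t"
  shows "elem_int W t n c \<in> borel_measurable (sigma (space M) (aug_filtration M W t))"
  unfolding elem_int_def
proof (rule borel_measurable_sum)
  fix i assume "i \<in> {..<n}"
  then have i: "Suc i \<le> n" by simp
  have le1: "real (Suc i) * t / real n \<le> t"
  proof -
    have "real (Suc i) * t \<le> real n * t" using i t by (intro mult_right_mono) auto
    then show ?thesis using i by (simp add: field_simps)
  qed
  have "real i * t / real n \<le> real (Suc i) * t / real n"
    by (intro divide_right_mono mult_right_mono) (use t in auto)
  then have le2: "real i * t / real n \<le> t" using le1 by linarith
  have [measurable]: "W (real (Suc i) * t / real n) \<in> borel_measurable (sigma (space M) (aug_filtration M W t))"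
    by (rule W_adapted) (use le1 t in auto)
  have [measurable]: "W (real i * t / real n) \<in> borel_measurable (sigma (space M) (aug_filtration M W t))"
    by (rule W_adapted) (use le2 t in auto)
  show "(\<lambda>\<omega>. c i * (W (real (Suc i) * t / real n) \<omega> - W (real i * t / real n) \<omega>)) \<in> borel_measurable (sigma (space M) (aug_filtration M W t))"
    by measurable
qed

lemma Zproc_adapted:
  assumes t: "0 \<le> t"
  shows "Zproc W \<alpha> t \<in> borel_measurable (sigma (space M) (aug_filtration M W t))"
proof -
  have [measurable]: "ek W \<alpha> t k \<in> borel_measurable (sigma (space M) (aug_filtration M W t))" for k
    unfolding ek_def by (rule elem_int_adapted[OF t])
  show ?thesis unfolding Zproc_def Zlim_def using t by measurable
qed

lemma exp_density_int: "0 < l \<Longrightarrow> (\<integral>\<^sup>+x. ennreal (exponential_density l x) \<partial>lborel) = 1"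
proof -
  assume l: "0 < l"
  interpret prob_space "density lborel (exponential_density l)"
    by (rule prob_space_exponential_density[OF l])
  have "emeasure (density lborel (exponential_density l)) UNIV = 1"
    using emeasure_space_1 by simp
  then show ?thesis by (simp add: emeasure_density)
qed

lemma one_plus_le_exp:
  fixes \<mu> t :: real
  assumes mu: "0 < \<mu>" and t: "0 \<le> t"
  shows "1 + t \<le> max 1 (1 / \<mu>) * exp (\<mu> * t)"
proof -
  have "1 + t \<le> max 1 (1 / \<mu>) * (1 + \<mu> * t)"
  proof (cases "1 \<le> \<mu>")
    case True
    then have "t \<le> \<mu> * t" using t by (simp add: mult_right_mono[of 1 \<mu> t, simplified])
    moreover have "max 1 (1 / \<mu>) = 1" using True by (simp add: max_def divide_le_eq)
    ultimately show ?thesis by simp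
  next
    case False
    then have "max 1 (1 / \<mu>) = 1 / \<mu>" using mu by (simp add: max_def field_simps)
    moreover have "1 + t \<le> 1 / \<mu> * (1 + \<mu> * t)" using mu False by (simp add: field_simps)
    ultimately show ?thesis by simp
  qed
  also have "\<dots> \<le> max 1 (1 / \<mu>) * exp (\<mu> * t)"
    by (intro mult_left_mono exp_ge_add_one_self) auto
  finally show ?thesis .
qed

lemma exp_int_fin:
  fixes G :: "real \<Rightarrow> 'a \<Rightarrow> real"
  assumes M: "prob_space M" and mu: "0 < \<mu>" and C: "0 \<le> C"
    and Gm: "(\<lambda>p. G (fst p) (snd p)) \<in> borel_measurable (lborel \<Otimes>\<^sub>M M)" and G0: "\<And>t \<omega>. 0 \<le> G t \<omega>"
    and bnd: "\<And>t. 0 \<le> t \<Longrightarrow> (\<integral>\<^sup>+\<omega>. ennreal (G t \<omega>) \<partial>M) \<le> ennreal (C * (1 + t))"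
  shows "(\<integral>\<^sup>+\<omega>. (\<integral>\<^sup>+t. ennreal (indicator {0..} t * exp (2 * (- \<mu>) * t) * G t \<omega>) \<partial>lborel) \<partial>M) < \<infinity>"
proof -
  interpret prob_space M by (rule M)
  interpret P: pair_sigma_finite lborel M ..
  define K where "K = max 1 (1 / \<mu>)"
  have K0: "0 \<le> K" by (simp add: K_def)
  have Hm: "case_prod (\<lambda>t \<omega>. ennreal (indicator {0..} t * exp (2 * (- \<mu>) * t) * G t \<omega>)) \<in> borel_measurable (lborel \<Otimes>\<^sub>M M)"
    using Gm by (simp add: case_prod_beta') measurable
  have "(\<integral>\<^sup>+\<omega>. (\<integral>\<^sup>+t. ennreal (indicator {0..} t * exp (2 * (- \<mu>) * t) * G t \<omega>) \<partial>lborel) \<partial>M)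
      = (\<integral>\<^sup>+t. (\<integral>\<^sup>+\<omega>. ennreal (indicator {0..} t * exp (2 * (- \<mu>) * t) * G t \<omega>) \<partial>M) \<partial>lborel)"
    by (rule P.Fubini'[OF Hm])
  also have "\<dots> \<le> (\<integral>\<^sup>+t. ennreal (C * K / \<mu>) * ennreal (exponential_density \<mu> t) \<partial>lborel)"
  proof (rule nn_integral_mono)
    fix t :: real
    show "(\<integral>\<^sup>+\<omega>. ennreal (indicator {0..} t * exp (2 * (- \<mu>) * t) * G t \<omega>) \<partial>M)
        \<le> ennreal (C * K / \<mu>) * ennreal (exponential_density \<mu> t)"
    proof (cases "0 \<le> t")
      case True
      have Gm1: "G t \<in> borel_measurable M"
        using measurable_Pair2[OF Gm, of t] by simp
      have "(\<integral>\<^sup>+\<omega>. ennreal (indicator {0..} t * exp (2 * (- \<mu>) * t) * G t \<omega>) \<partial>M)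
          = ennreal (exp (2 * (- \<mu>) * t)) * (\<integral>\<^sup>+\<omega>. ennreal (G t \<omega>) \<partial>M)"
        using True G0 by (subst nn_integral_cmult[symmetric]) (auto simp: ennreal_mult Gm1)
      also have "\<dots> \<le> ennreal (exp (2 * (- \<mu>) * t)) * ennreal (C * (1 + t))"
        by (intro mult_left_mono bnd True) auto
      also have "\<dots> = ennreal (exp (2 * (- \<mu>) * t) * (C * (1 + t)))"
        using C True by (simp add: ennreal_mult)
      also have "\<dots> \<le> ennreal (C * K / \<mu> * exponential_density \<mu> t)"
      proof (rule ennreal_leI)
        have "exp (2 * (- \<mu>) * t) * (C * (1 + t)) = C * (exp (2 * (- \<mu>) * t) * (1 + t))" by simp
        also have "\<dots> \<le> C * (exp (2 * (- \<mu>) * t) * (K * exp (\<mu> * t)))"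
          using one_plus_le_exp[OF mu True] C by (intro mult_left_mono) (auto simp: K_def)
        also have "exp (2 * (- \<mu>) * t) * (K * exp (\<mu> * t)) = K * exp (- (t * \<mu>))"
          by (simp add: exp_add[symmetric] algebra_simps)
        also have "C * (K * exp (- (t * \<mu>))) = C * K / \<mu> * exponential_density \<mu> t"
          using True mu by (simp add: exponential_density_def)
        finally show "exp (2 * (- \<mu>) * t) * (C * (1 + t)) \<le> C * K / \<mu> * exponential_density \<mu> t" .
      qed
      also have "\<dots> = ennreal (C * K / \<mu>) * ennreal (exponential_density \<mu> t)"
        using C K0 mu by (subst ennreal_mult) (auto simp: exponential_density_nonneg)
      finally show ?thesis .
    qed simp
  qed
  also have "\<dots> = ennreal (C * K / \<mu>)"
    by (subst nn_integral_cmult) (auto simp: exp_density_int[OF mu])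
  finally show ?thesis by (simp add: le_less_trans)
qed

lemma rho_alpha_pos:
  assumes b: "b \<noteq> 0" and a: "0 < \<alpha>" and d: "0 \<le> \<delta>"
  shows "0 < rho_alpha b \<alpha> \<delta>"
proof -
  define f where "f \<rho> = \<bar>b\<bar> * (1 + exp (- \<rho> * \<delta>)) * \<rho> powr (- \<alpha>)" for \<rho>
  have bb: "0 < \<bar>b\<bar>" using b by simp
  define r1 where "r1 = \<bar>b\<bar> powr (1 / \<alpha>)"
  define r2 where "r2 = (2 * \<bar>b\<bar>) powr (1 / \<alpha>)"
  have r1p: "0 < r1" using bb by (simp add: r1_def)
  have r12: "r1 \<le> r2" unfolding r1_def r2_def using bb a by (intro powr_mono2) auto
  have p1: "r1 powr (- \<alpha>) = 1 / \<bar>b\<bar>"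
    using bb a by (simp add: r1_def powr_powr powr_minus_divide)
  have p2: "r2 powr (- \<alpha>) = 1 / (2 * \<bar>b\<bar>)"
    using bb a by (simp add: r2_def powr_powr powr_minus_divide)
  have f1: "1 \<le> f r1" using bb by (simp add: f_def p1)
  have f2: "f r2 \<le> 1"
  proof -
    have "exp (- r2 * \<delta>) \<le> 1" using d r12 r1p by (simp add: mult_nonneg_nonneg)
    then show ?thesis using bb by (simp add: f_def p2 field_simps)
  qed
  have cont: "continuous_on {r1..r2} f"
    unfolding f_def using r1p by (intro continuous_intros) auto
  obtain r where r: "r1 \<le> r" "r \<le> r2" "f r = 1"
    using IVT2'[of f r2 1 r1, OF f2 f1 r12 cont] by blast
  have dec: "f y < f x" if "0 < x" "x < y" for x y
  proof -
    have "y powr (- \<alpha>) < x powr (- \<alpha>)" using that a by (intro powr_less_mono2_neg) auto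
    moreover have "exp (- y * \<delta>) \<le> exp (- x * \<delta>)" using that d by (simp add: mult_right_mono)
    ultimately have "(1 + exp (- y * \<delta>)) * y powr (- \<alpha>) < (1 + exp (- x * \<delta>)) * x powr (- \<alpha>)"
      by (intro mult_le_less_imp_less) (auto intro: add_pos_pos)
    then show ?thesis using bb by (simp add: f_def mult.assoc)
  qed
  have ex1: "\<exists>!\<rho>. \<rho> > 0 \<and> \<bar>b\<bar> * (1 + exp (- \<rho> * \<delta>)) * \<rho> powr (- \<alpha>) = 1"
  proof (rule ex1I[of _ r])
    show "r > 0 \<and> \<bar>b\<bar> * (1 + exp (- r * \<delta>)) * r powr (- \<alpha>) = 1" using r r1p f_def by auto
    fix y assume y: "y > 0 \<and> \<bar>b\<bar> * (1 + exp (- y * \<delta>)) * y powr (- \<alpha>) = 1"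
    show "y = r"
    proof (rule ccontr)
      assume "y \<noteq> r"
      then have "y < r \<or> r < y" by auto
      then show False using dec[of y r] dec[of r y] y r r1p by (auto simp: f_def)
    qed
  qed
  have "rho_alpha b \<alpha> \<delta> = (THE \<rho>. \<rho> > 0 \<and> \<bar>b\<bar> * (1 + exp (- \<rho> * \<delta>)) * \<rho> powr (- \<alpha>) = 1)"
    using b by (simp add: rho_alpha_def)
  with theI'[OF ex1] show ?thesis by simp
qed

lemma rho_alpha_nonneg:
  assumes a: "0 < \<alpha>" and d: "0 \<le> \<delta>"
  shows "0 \<le> rho_alpha b \<alpha> \<delta>"
  using rho_alpha_pos[OF _ a d, of b] by (cases "b = 0") (auto simp: rho_alpha_def)

definition Xs :: "(real \<Rightarrow> 'a \<Rightarrow> real) \<Rightarrow> real \<Rightarrow> real \<Rightarrow> real \<Rightarrow> real \<Rightarrow> 'a \<Rightarrow> real" where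
  "Xs W x0 \<sigma> \<alpha> t \<omega> = x0 + \<sigma> / Gamma \<alpha> * Zproc W \<alpha> t \<omega>"

definition vc :: "(real \<Rightarrow> 'a \<Rightarrow> real) \<Rightarrow> real \<Rightarrow> real \<Rightarrow> real \<Rightarrow> real \<Rightarrow> real \<Rightarrow> real \<Rightarrow> real \<Rightarrow> 'a \<Rightarrow> real" where
  "vc W x0 b c \<sigma> \<alpha> \<delta> s \<omega> = - (b / c) * (if s < \<delta> then x0 else Xs W x0 \<sigma> \<alpha> (s - \<delta>) \<omega>)"

lemma Zproc_zero: "Zproc W \<alpha> 0 \<omega> = 0"
proof -
  have "ek W \<alpha> 0 k \<omega> = 0" for k by (simp add: ek_def elem_int_def)
  then show ?thesis by (simp add: Zproc_def Zlim_def)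
qed

lemma powr_le_1_plus:
  assumes t: "0 \<le> (t::real)" and p: "0 \<le> p" "p \<le> 1"
  shows "t powr p \<le> 1 + t"
proof (cases "t \<le> 1")
  case True
  then have "t powr p \<le> 1" using t p powr_mono2[of p t 1] by simp
  then show ?thesis using t by simp
next
  case False
  then have "t powr p \<le> t powr 1" using p by (intro powr_mono) auto
  then show ?thesis using t by simp
qed

lemma Zproc_sq:
  assumes bm: "brownian_motion M W" and a1: "1/2 < \<alpha>" and a2: "\<alpha> \<le> 1" and t: "0 \<le> t"
  shows "(\<integral>\<^sup>+\<omega>. ennreal ((Zproc W \<alpha> t \<omega>)\<^sup>2) \<partial>M) \<le> ennreal ((1 + t) / (2 * \<alpha> - 1))"
proof (cases "t = 0")
  case True
  then show ?thesis by (simp add: Zproc_zero)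
next
  case False
  then have tp: "0 < t" using t by simp
  have "(\<integral>\<^sup>+\<omega>. ennreal ((Zproc W \<alpha> t \<omega>)\<^sup>2) \<partial>M) = (\<integral>\<^sup>+\<omega>. ennreal ((Zlim W \<alpha> t \<omega>)\<^sup>2) \<partial>M)"
    using t by (simp add: Zproc_def)
  also have "\<dots> \<le> ennreal (t powr (2 * \<alpha> - 1) / (2 * \<alpha> - 1))"
    by (rule Z_sq[OF bm a1 a2 tp])
  also have "\<dots> \<le> ennreal ((1 + t) / (2 * \<alpha> - 1))"
    using powr_le_1_plus[OF t, of "2 * \<alpha> - 1"] a1 a2
    by (intro ennreal_leI divide_right_mono) auto
  finally show ?thesis .
qed

lemma Xs_sq:
  assumes bm: "brownian_motion M W" and a1: "1/2 < \<alpha>" and a2: "\<alpha> \<le> 1" and t: "0 \<le> t"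
  shows "(\<integral>\<^sup>+\<omega>. ennreal ((Xs W x0 \<sigma> \<alpha> t \<omega>)\<^sup>2) \<partial>M)
     \<le> ennreal ((2 * x0\<^sup>2 + 2 * (\<sigma> / Gamma \<alpha>)\<^sup>2 / (2 * \<alpha> - 1)) * (1 + t))"
proof -
  interpret prob_space M using bm_prob[OF bm] .
  define k where "k = \<sigma> / Gamma \<alpha>"
  have [measurable]: "Zproc W \<alpha> t \<in> borel_measurable M"
  proof -
    have "Zproc W \<alpha> t = Zlim W \<alpha> t" using t by (simp add: Zproc_def fun_eq_iff)
    then show ?thesis using Zlim_meas[OF bm t] by simp
  qed
  have "(\<integral>\<^sup>+\<omega>. ennreal ((Xs W x0 \<sigma> \<alpha> t \<omega>)\<^sup>2) \<partial>M)
      \<le> (\<integral>\<^sup>+\<omega>. ennreal (2 * x0\<^sup>2) + ennreal (2 * k\<^sup>2) * ennreal ((Zproc W \<alpha> t \<omega>)\<^sup>2) \<partial>M)"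
  proof (rule nn_integral_mono)
    fix \<omega>
    have "(x0 + k * Zproc W \<alpha> t \<omega>)\<^sup>2 \<le> 2 * x0\<^sup>2 + 2 * k\<^sup>2 * (Zproc W \<alpha> t \<omega>)\<^sup>2"
      using sq_tri[of x0 "- k * Zproc W \<alpha> t \<omega>" 0] by (simp add: power_mult_distrib)
    then have "ennreal ((x0 + k * Zproc W \<alpha> t \<omega>)\<^sup>2) \<le> ennreal (2 * x0\<^sup>2 + 2 * k\<^sup>2 * (Zproc W \<alpha> t \<omega>)\<^sup>2)"
      by (rule ennreal_leI)
    then show "ennreal ((Xs W x0 \<sigma> \<alpha> t \<omega>)\<^sup>2) \<le> ennreal (2 * x0\<^sup>2) + ennreal (2 * k\<^sup>2) * ennreal ((Zproc W \<alpha> t \<omega>)\<^sup>2)"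
      by (simp add: Xs_def k_def ennreal_plus ennreal_mult)
  qed
  also have "\<dots> = ennreal (2 * x0\<^sup>2) + ennreal (2 * k\<^sup>2) * (\<integral>\<^sup>+\<omega>. ennreal ((Zproc W \<alpha> t \<omega>)\<^sup>2) \<partial>M)"
    by (subst nn_integral_add) (auto simp: nn_integral_cmult emeasure_space_1)
  also have "\<dots> \<le> ennreal (2 * x0\<^sup>2) + ennreal (2 * k\<^sup>2) * ennreal ((1 + t) / (2 * \<alpha> - 1))"
    by (intro add_left_mono mult_left_mono Zproc_sq[OF bm a1 a2 t]) auto
  also have "\<dots> = ennreal (2 * x0\<^sup>2 + 2 * k\<^sup>2 * ((1 + t) / (2 * \<alpha> - 1)))"
  proof -
    have q: "0 \<le> (1 + t) / (2 * \<alpha> - 1)" using t a1 by simp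
    have q2: "0 \<le> 2 * k\<^sup>2 * ((1 + t) / (2 * \<alpha> - 1))" using q by (intro mult_nonneg_nonneg) auto
    have "ennreal (2 * k\<^sup>2) * ennreal ((1 + t) / (2 * \<alpha> - 1)) = ennreal (2 * k\<^sup>2 * ((1 + t) / (2 * \<alpha> - 1)))"
      by (rule ennreal_mult[symmetric]) (use q in auto)
    moreover have "ennreal (2 * x0\<^sup>2) + ennreal (2 * k\<^sup>2 * ((1 + t) / (2 * \<alpha> - 1)))
        = ennreal (2 * x0\<^sup>2 + 2 * k\<^sup>2 * ((1 + t) / (2 * \<alpha> - 1)))"
      by (rule ennreal_plus[symmetric]) (use q2 in simp_all)
    ultimately show ?thesis by simp
  qed
  also have "\<dots> \<le> ennreal ((2 * x0\<^sup>2 + 2 * k\<^sup>2 / (2 * \<alpha> - 1)) * (1 + t))"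
  proof (rule ennreal_leI)
    have "2 * x0\<^sup>2 \<le> 2 * x0\<^sup>2 * (1 + t)" using t by (simp add: mult_le_cancel_left1)
    then show "2 * x0\<^sup>2 + 2 * k\<^sup>2 * ((1 + t) / (2 * \<alpha> - 1)) \<le> (2 * x0\<^sup>2 + 2 * k\<^sup>2 / (2 * \<alpha> - 1)) * (1 + t)"
      by (simp add: algebra_simps)
  qed
  finally show ?thesis by (simp add: k_def)
qed

lemma Xs_meas[measurable]:
  assumes bm: "brownian_motion M W"
  shows "(\<lambda>p. Xs W x0 \<sigma> \<alpha> (fst p) (snd p)) \<in> borel_measurable (lborel \<Otimes>\<^sub>M M)"
  unfolding Xs_def using Zproc_meas[OF bm] by measurable

lemma Xs_shift_meas:
  assumes bm: "brownian_motion M W"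
  shows "(\<lambda>p. Xs W x0 \<sigma> \<alpha> (fst p - \<delta>) (snd p)) \<in> borel_measurable (lborel \<Otimes>\<^sub>M M)"
proof -
  have "(\<lambda>p. (fst p - \<delta>, snd p)) \<in> lborel \<Otimes>\<^sub>M M \<rightarrow>\<^sub>M lborel \<Otimes>\<^sub>M M" by measurable
  from measurable_compose[OF this Xs_meas[OF bm]] show ?thesis by simp
qed

lemma vc_meas:
  assumes bm: "brownian_motion M W"
  shows "(\<lambda>p. vc W x0 b c \<sigma> \<alpha> \<delta> (fst p) (snd p)) \<in> borel_measurable (lborel \<Otimes>\<^sub>M M)"
  unfolding vc_def using Xs_shift_meas[OF bm] by measurable

lemma Xs_adapted:
  assumes t: "0 \<le> t"
  shows "Xs W x0 \<sigma> \<alpha> t \<in> borel_measurable (sigma (space M) (aug_filtration M W t))"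
  unfolding Xs_def using Zproc_adapted[OF t] by measurable

lemma vc_adapted:
  assumes s: "0 \<le> s" and d: "0 \<le> \<delta>"
  shows "vc W x0 b c \<sigma> \<alpha> \<delta> s \<in> borel_measurable (sigma (space M) (aug_filtration M W s))"
proof (cases "s < \<delta>")
  case True
  then have "vc W x0 b c \<sigma> \<alpha> \<delta> s = (\<lambda>\<omega>. - (b / c) * x0)" by (simp add: vc_def fun_eq_iff)
  then show ?thesis by simp
next
  case False
  have [measurable]: "Xs W x0 \<sigma> \<alpha> (s - \<delta>) \<in> borel_measurable (sigma (space M) (aug_filtration M W s))"
    by (rule adapted_mono[OF _ Xs_adapted]) (use False d in auto)
  have "vc W x0 b c \<sigma> \<alpha> \<delta> s = (\<lambda>\<omega>. - (b / c) * Xs W x0 \<sigma> \<alpha> (s - \<delta>) \<omega>)"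
    using False by (simp add: vc_def fun_eq_iff)
  then show ?thesis by simp
qed

lemma vc_sq:
  assumes bm: "brownian_motion M W" and a1: "1/2 < \<alpha>" and a2: "\<alpha> \<le> 1" and s: "0 \<le> s" and d: "0 \<le> \<delta>"
  shows "(\<integral>\<^sup>+\<omega>. ennreal ((vc W x0 b c \<sigma> \<alpha> \<delta> s \<omega>)\<^sup>2) \<partial>M)
     \<le> ennreal ((b / c)\<^sup>2 * (x0\<^sup>2 + (2 * x0\<^sup>2 + 2 * (\<sigma> / Gamma \<alpha>)\<^sup>2 / (2 * \<alpha> - 1))) * (1 + s))"
proof -
  interpret prob_space M using bm_prob[OF bm] .
  define CX where "CX = 2 * x0\<^sup>2 + 2 * (\<sigma> / Gamma \<alpha>)\<^sup>2 / (2 * \<alpha> - 1)"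
  have CX: "0 \<le> CX" using a1 by (simp add: CX_def)
  define D where "D \<omega> = (if s < \<delta> then x0 else Xs W x0 \<sigma> \<alpha> (s - \<delta>) \<omega>)" for \<omega>
  have Dm: "D \<in> borel_measurable M"
  proof (cases "s < \<delta>")
    case False
    have "Xs W x0 \<sigma> \<alpha> (s - \<delta>) \<in> borel_measurable M"
      using measurable_Pair2[OF Xs_meas[OF bm], of "s - \<delta>"] by simp
    moreover have "D = Xs W x0 \<sigma> \<alpha> (s - \<delta>)" using False by (simp add: D_def fun_eq_iff)
    ultimately show ?thesis by simp
  next
    case True
    then have "D = (\<lambda>\<omega>. x0)" by (simp add: D_def fun_eq_iff)
    then show ?thesis by simp
  qed
  have DB: "(\<integral>\<^sup>+\<omega>. ennreal ((D \<omega>)\<^sup>2) \<partial>M) \<le> ennreal ((x0\<^sup>2 + CX) * (1 + s))"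
  proof (cases "s < \<delta>")
    case True
    have "x0\<^sup>2 \<le> (x0\<^sup>2 + CX) * (1 + s)"
      using CX s by (simp add: algebra_simps add_increasing mult_nonneg_nonneg)
    then show ?thesis using True by (simp add: D_def emeasure_space_1 ennreal_leI)
  next
    case False
    then have "(\<integral>\<^sup>+\<omega>. ennreal ((D \<omega>)\<^sup>2) \<partial>M) \<le> ennreal (CX * (1 + (s - \<delta>)))"
      unfolding D_def CX_def using Xs_sq[OF bm a1 a2, of "s - \<delta>"] by simp
    also have "\<dots> \<le> ennreal ((x0\<^sup>2 + CX) * (1 + s))"
    proof (rule ennreal_leI)
      have "CX * (1 + (s - \<delta>)) \<le> CX * (1 + s)" using False s CX d by (intro mult_left_mono) auto
      also have "\<dots> \<le> (x0\<^sup>2 + CX) * (1 + s)" using s by (intro mult_right_mono) auto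
      finally show "CX * (1 + (s - \<delta>)) \<le> (x0\<^sup>2 + CX) * (1 + s)" .
    qed
    finally show ?thesis .
  qed
  have "(\<integral>\<^sup>+\<omega>. ennreal ((vc W x0 b c \<sigma> \<alpha> \<delta> s \<omega>)\<^sup>2) \<partial>M) = (\<integral>\<^sup>+\<omega>. ennreal ((b / c)\<^sup>2) * ennreal ((D \<omega>)\<^sup>2) \<partial>M)"
  proof (intro nn_integral_cong)
    fix \<omega>
    have "(vc W x0 b c \<sigma> \<alpha> \<delta> s \<omega>)\<^sup>2 = (b / c)\<^sup>2 * (D \<omega>)\<^sup>2"
      unfolding vc_def D_def by (simp only: power_mult_distrib power2_minus)
    then show "ennreal ((vc W x0 b c \<sigma> \<alpha> \<delta> s \<omega>)\<^sup>2) = ennreal ((b / c)\<^sup>2) * ennreal ((D \<omega>)\<^sup>2)"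
      by (simp only: ennreal_mult[OF zero_le_power2 zero_le_power2])
  qed
  also have "\<dots> = ennreal ((b / c)\<^sup>2) * (\<integral>\<^sup>+\<omega>. ennreal ((D \<omega>)\<^sup>2) \<partial>M)"
    using Dm by (subst nn_integral_cmult) auto
  also have "\<dots> \<le> ennreal ((b / c)\<^sup>2) * ennreal ((x0\<^sup>2 + CX) * (1 + s))"
    by (intro mult_left_mono DB) auto
  also have "\<dots> = ennreal ((b / c)\<^sup>2 * (x0\<^sup>2 + CX) * (1 + s))"
    using CX s by (subst ennreal_mult[symmetric]) (auto simp: mult.assoc)
  finally show ?thesis by (simp add: CX_def)
qed

lemma L2F_intro:
  fixes f :: "real \<Rightarrow> 'a \<Rightarrow> real"
  assumes bm: "brownian_motion M W" and mu: "0 < \<mu>" and C: "0 \<le> C"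
    and fm: "(\<lambda>p. f (fst p) (snd p)) \<in> borel_measurable (lborel \<Otimes>\<^sub>M M)"
    and fa: "\<And>t. 0 \<le> t \<Longrightarrow> f t \<in> borel_measurable (sigma (space M) (aug_filtration M W t))"
    and fb: "\<And>t. 0 \<le> t \<Longrightarrow> (\<integral>\<^sup>+\<omega>. ennreal ((f t \<omega>)\<^sup>2) \<partial>M) \<le> ennreal (C * (1 + t))"
  shows "f \<in> L2F M (aug_filtration M W) (- \<mu>)"
  unfolding L2F_def
proof (intro CollectI conjI allI impI)
  show "(\<lambda>p. indicator {0..} (fst p) * f (fst p) (snd p)) \<in> borel_measurable (lborel \<Otimes>\<^sub>M M)"
    using fm by measurable
  show "f t \<in> borel_measurable (sigma (space M) (aug_filtration M W t))" if "0 \<le> t" for t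
    using fa that .
  have fm2: "(\<lambda>p. (f (fst p) (snd p))\<^sup>2) \<in> borel_measurable (lborel \<Otimes>\<^sub>M M)" using fm by measurable
  show "(\<integral>\<^sup>+\<omega>. (\<integral>\<^sup>+t. ennreal (indicator {0..} t * exp (2 * - \<mu> * t) * (f t \<omega>)\<^sup>2) \<partial>lborel) \<partial>M) < \<infinity>"
    using exp_int_fin[OF bm_prob[OF bm] mu C, of "\<lambda>t \<omega>. (f t \<omega>)\<^sup>2"] fm2 fb by simp
qed

lemma Xs_L2F:
  assumes bm: "brownian_motion M W" and a1: "1/2 < \<alpha>" and a2: "\<alpha> \<le> 1" and mu: "0 < \<mu>"
  shows "Xs W x0 \<sigma> \<alpha> \<in> L2F M (aug_filtration M W) (- \<mu>)"
  by (rule L2F_intro[OF bm mu _ Xs_meas[OF bm] Xs_adapted Xs_sq[OF bm a1 a2]]) (use a1 in auto)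

lemma vc_L2F:
  assumes bm: "brownian_motion M W" and a1: "1/2 < \<alpha>" and a2: "\<alpha> \<le> 1" and mu: "0 < \<mu>" and d: "0 \<le> \<delta>"
  shows "vc W x0 b c \<sigma> \<alpha> \<delta> \<in> L2F M (aug_filtration M W) (- \<mu>)"
  by (rule L2F_intro[OF bm mu _ vc_meas[OF bm] vc_adapted vc_sq[OF bm a1 a2]]) (use a1 d in auto)

lemma Xs_state:
  assumes bm: "brownian_motion M W" and a1: "1/2 < \<alpha>" and a2: "\<alpha> \<le> 1" and mu: "0 < \<mu>" and d: "0 \<le> \<delta>"
    and c: "c \<noteq> 0"
  shows "is_state M W x0 b c \<sigma> \<alpha> \<delta> \<mu> (vc W x0 b c \<sigma> \<alpha> \<delta>) (Xs W x0 \<sigma> \<alpha>)"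
  unfolding is_state_def
proof (intro conjI)
  show "Xs W x0 \<sigma> \<alpha> \<in> L2F M (aug_filtration M W) (- \<mu>)" by (rule Xs_L2F[OF bm a1 a2 mu])
  show "AE t in lborel. 0 \<le> t \<longrightarrow> (\<exists>Y. is_wiener_integral M W (\<lambda>s. (t - s) powr (\<alpha> - 1)) t Y \<and>
          (AE \<omega> in M. Xs W x0 \<sigma> \<alpha> t \<omega> = x0 + 1 / Gamma \<alpha> * (\<integral>s\<in>{0..t}. (t - s) powr (\<alpha> - 1)
             * (b * (if s < \<delta> then x0 else Xs W x0 \<sigma> \<alpha> (s - \<delta>) \<omega>) + c * vc W x0 b c \<sigma> \<alpha> \<delta> s \<omega>) \<partial>lborel)
             + \<sigma> / Gamma \<alpha> * Y \<omega>))"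
    using AE_lborel_singleton[of 0]
  proof eventually_elim
    case (elim t)
    show ?case
    proof
      assume "0 \<le> t"
      then have t: "0 < t" using elim by simp
      show "\<exists>Y. is_wiener_integral M W (\<lambda>s. (t - s) powr (\<alpha> - 1)) t Y \<and>
          (AE \<omega> in M. Xs W x0 \<sigma> \<alpha> t \<omega> = x0 + 1 / Gamma \<alpha> * (\<integral>s\<in>{0..t}. (t - s) powr (\<alpha> - 1)
             * (b * (if s < \<delta> then x0 else Xs W x0 \<sigma> \<alpha> (s - \<delta>) \<omega>) + c * vc W x0 b c \<sigma> \<alpha> \<delta> s \<omega>) \<partial>lborel)
             + \<sigma> / Gamma \<alpha> * Y \<omega>)"
      proof (intro exI conjI)
        show "is_wiener_integral M W (\<lambda>s. (t - s) powr (\<alpha> - 1)) t (Zlim W \<alpha> t)"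
          by (rule Z_wiener[OF bm a1 a2 t])
        have z: "b * (if s < \<delta> then x0 else Xs W x0 \<sigma> \<alpha> (s - \<delta>) \<omega>) + c * vc W x0 b c \<sigma> \<alpha> \<delta> s \<omega> = 0" for s \<omega>
          using c by (simp add: vc_def)
        show "AE \<omega> in M. Xs W x0 \<sigma> \<alpha> t \<omega> = x0 + 1 / Gamma \<alpha> * (\<integral>s\<in>{0..t}. (t - s) powr (\<alpha> - 1)
             * (b * (if s < \<delta> then x0 else Xs W x0 \<sigma> \<alpha> (s - \<delta>) \<omega>) + c * vc W x0 b c \<sigma> \<alpha> \<delta> s \<omega>) \<partial>lborel)
             + \<sigma> / Gamma \<alpha> * Zlim W \<alpha> t \<omega>"
          using t by (simp add: z Xs_def Zproc_def)
      qed
    qed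
  qed
qed

lemma cost_fin:
  assumes bm: "brownian_motion M W" and a1: "1/2 < \<alpha>" and a2: "\<alpha> \<le> 1" and mu: "0 < \<mu>" and d: "0 \<le> \<delta>"
    and g: "0 < \<gamma>" and lam: "2 * \<mu> \<le> lam"
  shows "cost M \<gamma> lam (Xs W x0 \<sigma> \<alpha>) (vc W x0 b c \<sigma> \<alpha> \<delta>) < \<infinity>"
proof -
  interpret prob_space M using bm_prob[OF bm] .
  define CX where "CX = 2 * x0\<^sup>2 + 2 * (\<sigma> / Gamma \<alpha>)\<^sup>2 / (2 * \<alpha> - 1)"
  have CX: "0 \<le> CX" using a1 by (simp add: CX_def)
  define Cv where "Cv = (b / c)\<^sup>2 * (x0\<^sup>2 + CX)"
  have Cv: "0 \<le> Cv" using CX by (simp add: Cv_def)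
  define G where "G t \<omega> = (Xs W x0 \<sigma> \<alpha> t \<omega>)\<^sup>2 + (vc W x0 b c \<sigma> \<alpha> \<delta> t \<omega>)\<^sup>2 / \<gamma>" for t \<omega>
  have [measurable]: "(\<lambda>p. Xs W x0 \<sigma> \<alpha> (fst p) (snd p)) \<in> borel_measurable (lborel \<Otimes>\<^sub>M M)"
    by (rule Xs_meas[OF bm])
  have [measurable]: "(\<lambda>p. vc W x0 b c \<sigma> \<alpha> \<delta> (fst p) (snd p)) \<in> borel_measurable (lborel \<Otimes>\<^sub>M M)"
    by (rule vc_meas[OF bm])
  have Gm: "(\<lambda>p. G (fst p) (snd p)) \<in> borel_measurable (lborel \<Otimes>\<^sub>M M)" unfolding G_def by measurable
  have G0: "0 \<le> G t \<omega>" for t \<omega> using g by (simp add: G_def)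
  have Gb: "(\<integral>\<^sup>+\<omega>. ennreal (G t \<omega>) \<partial>M) \<le> ennreal ((CX + Cv / \<gamma>) * (1 + t))" if t: "0 \<le> t" for t
  proof -
    have m1: "Xs W x0 \<sigma> \<alpha> t \<in> borel_measurable M"
      using measurable_Pair2[OF Xs_meas[OF bm], of t] by simp
    have m2: "vc W x0 b c \<sigma> \<alpha> \<delta> t \<in> borel_measurable M"
      using measurable_Pair2[OF vc_meas[OF bm], of t] by simp
    have "(\<integral>\<^sup>+\<omega>. ennreal (G t \<omega>) \<partial>M) = (\<integral>\<^sup>+\<omega>. ennreal ((Xs W x0 \<sigma> \<alpha> t \<omega>)\<^sup>2) + ennreal (1 / \<gamma>) * ennreal ((vc W x0 b c \<sigma> \<alpha> \<delta> t \<omega>)\<^sup>2) \<partial>M)"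
    proof (intro nn_integral_cong)
      fix \<omega>
      have e1: "G t \<omega> = (Xs W x0 \<sigma> \<alpha> t \<omega>)\<^sup>2 + (1 / \<gamma>) * (vc W x0 b c \<sigma> \<alpha> \<delta> t \<omega>)\<^sup>2"
        by (simp add: G_def)
      have e2: "ennreal ((Xs W x0 \<sigma> \<alpha> t \<omega>)\<^sup>2 + (1 / \<gamma>) * (vc W x0 b c \<sigma> \<alpha> \<delta> t \<omega>)\<^sup>2)
          = ennreal ((Xs W x0 \<sigma> \<alpha> t \<omega>)\<^sup>2) + ennreal ((1 / \<gamma>) * (vc W x0 b c \<sigma> \<alpha> \<delta> t \<omega>)\<^sup>2)"
        by (rule ennreal_plus) (use g in auto)
      have e3: "ennreal ((1 / \<gamma>) * (vc W x0 b c \<sigma> \<alpha> \<delta> t \<omega>)\<^sup>2) = ennreal (1 / \<gamma>) * ennreal ((vc W x0 b c \<sigma> \<alpha> \<delta> t \<omega>)\<^sup>2)"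
        by (rule ennreal_mult) (use g in auto)
      show "ennreal (G t \<omega>) = ennreal ((Xs W x0 \<sigma> \<alpha> t \<omega>)\<^sup>2) + ennreal (1 / \<gamma>) * ennreal ((vc W x0 b c \<sigma> \<alpha> \<delta> t \<omega>)\<^sup>2)"
        unfolding e1 e2 e3 ..
    qed
    also have "\<dots> = (\<integral>\<^sup>+\<omega>. ennreal ((Xs W x0 \<sigma> \<alpha> t \<omega>)\<^sup>2) \<partial>M) + ennreal (1 / \<gamma>) * (\<integral>\<^sup>+\<omega>. ennreal ((vc W x0 b c \<sigma> \<alpha> \<delta> t \<omega>)\<^sup>2) \<partial>M)"
      using m1 m2 by (subst nn_integral_add) (auto simp: nn_integral_cmult)
    also have "\<dots> \<le> ennreal (CX * (1 + t)) + ennreal (1 / \<gamma>) * ennreal (Cv * (1 + t))"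
      unfolding CX_def Cv_def
      by (intro add_mono mult_left_mono Xs_sq[OF bm a1 a2 t] vc_sq[OF bm a1 a2 t d]) auto
    also have "\<dots> = ennreal ((CX + Cv / \<gamma>) * (1 + t))"
    proof -
      have a: "(CX + Cv / \<gamma>) * (1 + t) = CX * (1 + t) + (1 / \<gamma>) * (Cv * (1 + t))"
        by (simp add: algebra_simps add_divide_distrib)
      have b: "ennreal ((1 / \<gamma>) * (Cv * (1 + t))) = ennreal (1 / \<gamma>) * ennreal (Cv * (1 + t))"
        by (rule ennreal_mult) (use g Cv t in auto)
      have c: "ennreal (CX * (1 + t) + (1 / \<gamma>) * (Cv * (1 + t))) = ennreal (CX * (1 + t)) + ennreal ((1 / \<gamma>) * (Cv * (1 + t)))"
        by (rule ennreal_plus) (use g Cv CX t in auto)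
      show ?thesis unfolding a c b ..
    qed
    finally show ?thesis .
  qed
  have fin: "(\<integral>\<^sup>+\<omega>. (\<integral>\<^sup>+t. ennreal (indicator {0..} t * exp (2 * (- \<mu>) * t) * G t \<omega>) \<partial>lborel) \<partial>M) < \<infinity>"
    by (rule exp_int_fin[OF bm_prob[OF bm] mu _ Gm G0 Gb]) (use CX Cv g in auto)
  have "cost M \<gamma> lam (Xs W x0 \<sigma> \<alpha>) (vc W x0 b c \<sigma> \<alpha> \<delta>)
      \<le> ennreal (1/2) * (\<integral>\<^sup>+\<omega>. (\<integral>\<^sup>+t. ennreal (indicator {0..} t * exp (2 * (- \<mu>) * t) * G t \<omega>) \<partial>lborel) \<partial>M)"
    unfolding cost_def
  proof (intro mult_left_mono nn_integral_mono ennreal_leI)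
    fix \<omega> :: 'a and t :: real
    show "indicator {0..} t * exp (- lam * t) * ((Xs W x0 \<sigma> \<alpha> t \<omega>)\<^sup>2 + (vc W x0 b c \<sigma> \<alpha> \<delta> t \<omega>)\<^sup>2 / \<gamma>)
        \<le> indicator {0..} t * exp (2 * (- \<mu>) * t) * G t \<omega>"
    proof (cases "0 \<le> t")
      case True
      have "2 * \<mu> * t \<le> lam * t" by (rule mult_right_mono[OF lam True])
      then have ex: "exp (- lam * t) \<le> exp (2 * (- \<mu>) * t)" by simp
      have "exp (- lam * t) * G t \<omega> \<le> exp (2 * (- \<mu>) * t) * G t \<omega>"
        by (rule mult_right_mono[OF ex G0])
      then show ?thesis using True by (simp add: G_def)
    qed simp
  qed simp
  also have "\<dots> \<le> 1 * (\<integral>\<^sup>+\<omega>. (\<integral>\<^sup>+t. ennreal (indicator {0..} t * exp (2 * (- \<mu>) * t) * G t \<omega>) \<partial>lborel) \<partial>M)"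
    by (intro mult_right_mono) (use ennreal_leI[of "1/2" 1] in simp_all)
  also have "\<dots> < \<infinity>" using fin by simp
  finally show ?thesis .
qed

lemma exists_finite:
  assumes bm: "brownian_motion M W" and a1: "1/2 < \<alpha>" and a2: "\<alpha> \<le> 1" and mu: "0 < \<mu>" and d: "0 \<le> \<delta>"
    and g: "0 < \<gamma>" and lam: "2 * \<mu> \<le> lam" and c: "c \<noteq> 0"
  shows "\<exists>v\<in>L2F M (aug_filtration M W) (- \<mu>). J M W x0 b c \<sigma> \<alpha> \<delta> \<mu> \<gamma> lam v < \<infinity>"
proof (intro bexI)
  show "vc W x0 b c \<sigma> \<alpha> \<delta> \<in> L2F M (aug_filtration M W) (- \<mu>)" by (rule vc_L2F[OF bm a1 a2 mu d])
  have "J M W x0 b c \<sigma> \<alpha> \<delta> \<mu> \<gamma> lam (vc W x0 b c \<sigma> \<alpha> \<delta>) \<le> cost M \<gamma> lam (Xs W x0 \<sigma> \<alpha>) (vc W x0 b c \<sigma> \<alpha> \<delta>)"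
    unfolding J_def by (rule INF_lower) (use Xs_state[OF bm a1 a2 mu d c] in simp)
  also have "\<dots> < \<infinity>" by (rule cost_fin[OF bm a1 a2 mu d g lam])
  finally show "J M W x0 b c \<sigma> \<alpha> \<delta> \<mu> \<gamma> lam (vc W x0 b c \<sigma> \<alpha> \<delta>) < \<infinity>" .
qed

lemma iter_prod:
  fixes H :: "real \<Rightarrow> 'a \<Rightarrow> ennreal"
  assumes M: "prob_space M" and Hm: "(\<lambda>p. H (fst p) (snd p)) \<in> borel_measurable (lborel \<Otimes>\<^sub>M M)"
  shows "(\<integral>\<^sup>+\<omega>. (\<integral>\<^sup>+t. H t \<omega> \<partial>lborel) \<partial>M) = (\<integral>\<^sup>+p. H (fst p) (snd p) \<partial>(lborel \<Otimes>\<^sub>M M))"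
proof -
  interpret prob_space M by (rule M)
  interpret P: pair_sigma_finite lborel M ..
  show ?thesis using P.nn_integral_snd[OF Hm] by simp
qed

lemma meas_sq:
  fixes f :: "real \<Rightarrow> 'a \<Rightarrow> real"
  assumes m[measurable]: "(\<lambda>p. indicator {0..} (fst p) * f (fst p) (snd p)) \<in> borel_measurable (lborel \<Otimes>\<^sub>M M)"
  shows "(\<lambda>p. ennreal (indicator {0..} (fst p) * exp (2 * \<beta> * fst p) * (f (fst p) (snd p))\<^sup>2)) \<in> borel_measurable (lborel \<Otimes>\<^sub>M M)"
proof -
  have eq: "(\<lambda>p. ennreal (indicator {0..} (fst p) * exp (2 * \<beta> * fst p) * (f (fst p) (snd p))\<^sup>2))
      = (\<lambda>p. ennreal (exp (2 * \<beta> * fst p) * (indicator {0..} (fst p) * f (fst p) (snd p))\<^sup>2))"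
    by (auto simp: fun_eq_iff indicator_def)
  show ?thesis unfolding eq by measurable
qed

lemma L2F_meas_sq:
  assumes f: "f \<in> L2F M F \<beta>"
  shows "(\<lambda>p. ennreal (indicator {0..} (fst p) * exp (2 * \<beta> * fst p) * (f (fst p) (snd p))\<^sup>2)) \<in> borel_measurable (lborel \<Otimes>\<^sub>M M)"
  by (rule meas_sq) (use f in \<open>simp add: L2F_def\<close>)

lemma L2F_fin_prod:
  assumes M: "prob_space M" and f: "f \<in> L2F M F \<beta>"
  shows "(\<integral>\<^sup>+p. ennreal (indicator {0..} (fst p) * exp (2 * \<beta> * fst p) * (f (fst p) (snd p))\<^sup>2) \<partial>(lborel \<Otimes>\<^sub>M M)) < \<infinity>"
  using f iter_prod[OF M L2F_meas_sq[OF f]] by (simp add: L2F_def)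

lemma avg_L2F:
  assumes M: "prob_space M" and f: "f \<in> L2F M F \<beta>" and g: "g \<in> L2F M F \<beta>"
  shows "(\<lambda>t \<omega>. (f t \<omega> + g t \<omega>) / 2) \<in> L2F M F \<beta>"
proof -
  have fm[measurable]: "(\<lambda>p. indicator {0..} (fst p) * f (fst p) (snd p)) \<in> borel_measurable (lborel \<Otimes>\<^sub>M M)"
    using f by (simp add: L2F_def)
  have gm[measurable]: "(\<lambda>p. indicator {0..} (fst p) * g (fst p) (snd p)) \<in> borel_measurable (lborel \<Otimes>\<^sub>M M)"
    using g by (simp add: L2F_def)
  define h where "h = (\<lambda>t \<omega>. (f t \<omega> + g t \<omega>) / 2)"
  have hm: "(\<lambda>p. indicator {0..} (fst p) * h (fst p) (snd p)) \<in> borel_measurable (lborel \<Otimes>\<^sub>M M)"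
  proof -
    have "(\<lambda>p. (indicator {0..} (fst p) * f (fst p) (snd p) + indicator {0..} (fst p) * g (fst p) (snd p)) / 2)
          \<in> borel_measurable (lborel \<Otimes>\<^sub>M M)" by measurable
    then show ?thesis by (simp add: h_def algebra_simps add_divide_distrib)
  qed
  have ha: "h t \<in> borel_measurable (sigma (space M) (F t))" if "0 \<le> t" for t
  proof -
    have [measurable]: "f t \<in> borel_measurable (sigma (space M) (F t))" "g t \<in> borel_measurable (sigma (space M) (F t))"
      using f g that by (auto simp: L2F_def)
    show ?thesis unfolding h_def by measurable
  qed
  have hL: "(\<lambda>p. indicator {0..} (fst p) * h (fst p) (snd p)) \<in> borel_measurable (lborel \<Otimes>\<^sub>M M) \<and>
      (\<forall>t\<ge>0. h t \<in> borel_measurable (sigma (space M) (F t)))" using hm ha by auto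
  have hsq: "(\<lambda>p. ennreal (indicator {0..} (fst p) * exp (2 * \<beta> * fst p) * (h (fst p) (snd p))\<^sup>2)) \<in> borel_measurable (lborel \<Otimes>\<^sub>M M)"
    by (rule meas_sq[OF hm])
  have "(\<integral>\<^sup>+\<omega>. (\<integral>\<^sup>+t. ennreal (indicator {0..} t * exp (2 * \<beta> * t) * (h t \<omega>)\<^sup>2) \<partial>lborel) \<partial>M)
      = (\<integral>\<^sup>+p. ennreal (indicator {0..} (fst p) * exp (2 * \<beta> * fst p) * (h (fst p) (snd p))\<^sup>2) \<partial>(lborel \<Otimes>\<^sub>M M))"
    by (rule iter_prod[OF M hsq])
  also have "\<dots> \<le> (\<integral>\<^sup>+p. ennreal (indicator {0..} (fst p) * exp (2 * \<beta> * fst p) * (f (fst p) (snd p))\<^sup>2)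
                      + ennreal (indicator {0..} (fst p) * exp (2 * \<beta> * fst p) * (g (fst p) (snd p))\<^sup>2) \<partial>(lborel \<Otimes>\<^sub>M M))"
  proof (rule nn_integral_mono)
    fix p :: "real \<times> 'a"
    define a where "a = f (fst p) (snd p)"
    define b where "b = g (fst p) (snd p)"
    define w where "w = indicator {0..} (fst p) * exp (2 * \<beta> * fst p)"
    have w: "0 \<le> w" by (simp add: w_def)
    have "((a + b) / 2)\<^sup>2 \<le> a\<^sup>2 + b\<^sup>2"
    proof -
      have "(a + b)\<^sup>2 \<le> 2 * a\<^sup>2 + 2 * b\<^sup>2" using sq_tri[of a "- b" 0] by simp
      moreover have "((a + b) / 2)\<^sup>2 = (a + b)\<^sup>2 / 4" by (simp add: power_divide)
      moreover have "0 \<le> a\<^sup>2" "0 \<le> b\<^sup>2" by simp_all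
      ultimately show ?thesis by linarith
    qed
    then have "w * ((a + b) / 2)\<^sup>2 \<le> w * a\<^sup>2 + w * b\<^sup>2"
      using w by (metis distrib_left mult_left_mono)
    then have "ennreal (w * ((a + b) / 2)\<^sup>2) \<le> ennreal (w * a\<^sup>2 + w * b\<^sup>2)"
      by (rule ennreal_leI)
    also have "\<dots> = ennreal (w * a\<^sup>2) + ennreal (w * b\<^sup>2)"
      by (rule ennreal_plus) (use w in auto)
    finally have "ennreal (w * ((a + b) / 2)\<^sup>2) \<le> ennreal (w * a\<^sup>2) + ennreal (w * b\<^sup>2)" .
    then show "ennreal (indicator {0..} (fst p) * exp (2 * \<beta> * fst p) * (h (fst p) (snd p))\<^sup>2)
        \<le> ennreal (indicator {0..} (fst p) * exp (2 * \<beta> * fst p) * (f (fst p) (snd p))\<^sup>2)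
           + ennreal (indicator {0..} (fst p) * exp (2 * \<beta> * fst p) * (g (fst p) (snd p))\<^sup>2)"
      by (simp add: a_def b_def w_def h_def)
  qed
  also have "\<dots> = (\<integral>\<^sup>+p. ennreal (indicator {0..} (fst p) * exp (2 * \<beta> * fst p) * (f (fst p) (snd p))\<^sup>2) \<partial>(lborel \<Otimes>\<^sub>M M))
         + (\<integral>\<^sup>+p. ennreal (indicator {0..} (fst p) * exp (2 * \<beta> * fst p) * (g (fst p) (snd p))\<^sup>2) \<partial>(lborel \<Otimes>\<^sub>M M))"
    by (rule nn_integral_add[OF L2F_meas_sq[OF f] L2F_meas_sq[OF g]])
  also have "\<dots> < \<infinity>" using L2F_fin_prod[OF M f] L2F_fin_prod[OF M g] by simp
  finally have "(\<integral>\<^sup>+\<omega>. (\<integral>\<^sup>+t. ennreal (indicator {0..} t * exp (2 * \<beta> * t) * (h t \<omega>)\<^sup>2) \<partial>lborel) \<partial>M) < \<infinity>" .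
  then have "h \<in> L2F M F \<beta>" using hm ha unfolding L2F_def by blast
  then show ?thesis by (simp add: h_def)
qed

lemma avg_wiener:
  assumes bm: "brownian_motion M W" and t: "0 \<le> t"
    and Y1: "is_wiener_integral M W g t Y1" and Y2: "is_wiener_integral M W g t Y2"
  shows "is_wiener_integral M W g t (\<lambda>\<omega>. (Y1 \<omega> + Y2 \<omega>) / 2)"
  unfolding is_wiener_integral_def
proof (intro conjI allI impI)
  have [measurable]: "Y1 \<in> borel_measurable M" "Y2 \<in> borel_measurable M"
    using Y1 Y2 by (auto simp: is_wiener_integral_def)
  show "(\<lambda>\<omega>. (Y1 \<omega> + Y2 \<omega>) / 2) \<in> borel_measurable M" by measurable
  fix n :: "nat \<Rightarrow> nat" and c :: "nat \<Rightarrow> nat \<Rightarrow> real"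
  assume n: "\<forall>k. 0 < n k"
    and conv: "(\<lambda>k. \<integral>\<^sup>+s\<in>{0..t}. ennreal ((g s - step_fun t (n k) (c k) s)\<^sup>2) \<partial>lborel) \<longlonglongrightarrow> 0"
  have l1: "(\<lambda>k. \<integral>\<^sup>+\<omega>. ennreal ((Y1 \<omega> - elem_int W t (n k) (c k) \<omega>)\<^sup>2) \<partial>M) \<longlonglongrightarrow> 0"
    using Y1 n conv by (simp add: is_wiener_integral_def)
  have l2: "(\<lambda>k. \<integral>\<^sup>+\<omega>. ennreal ((Y2 \<omega> - elem_int W t (n k) (c k) \<omega>)\<^sup>2) \<partial>M) \<longlonglongrightarrow> 0"
    using Y2 n conv by (simp add: is_wiener_integral_def)
  have [measurable]: "elem_int W t (n k) (c k) \<in> borel_measurable M" for k by (rule elem_int_meas[OF bm t])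
  have le: "(\<integral>\<^sup>+\<omega>. ennreal (((Y1 \<omega> + Y2 \<omega>) / 2 - elem_int W t (n k) (c k) \<omega>)\<^sup>2) \<partial>M)
      \<le> (\<integral>\<^sup>+\<omega>. ennreal ((Y1 \<omega> - elem_int W t (n k) (c k) \<omega>)\<^sup>2) \<partial>M) + (\<integral>\<^sup>+\<omega>. ennreal ((Y2 \<omega> - elem_int W t (n k) (c k) \<omega>)\<^sup>2) \<partial>M)" for k
  proof -
    have "(\<integral>\<^sup>+\<omega>. ennreal (((Y1 \<omega> + Y2 \<omega>) / 2 - elem_int W t (n k) (c k) \<omega>)\<^sup>2) \<partial>M)
        \<le> (\<integral>\<^sup>+\<omega>. ennreal ((Y1 \<omega> - elem_int W t (n k) (c k) \<omega>)\<^sup>2) + ennreal ((Y2 \<omega> - elem_int W t (n k) (c k) \<omega>)\<^sup>2) \<partial>M)"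
    proof (rule nn_integral_mono)
      fix \<omega>
      define a where "a = Y1 \<omega> - elem_int W t (n k) (c k) \<omega>"
      define b where "b = Y2 \<omega> - elem_int W t (n k) (c k) \<omega>"
      have e: "(Y1 \<omega> + Y2 \<omega>) / 2 - elem_int W t (n k) (c k) \<omega> = (a + b) / 2" by (simp add: a_def b_def field_simps)
      have "((a + b) / 2)\<^sup>2 \<le> a\<^sup>2 + b\<^sup>2"
      proof -
        have "(a + b)\<^sup>2 \<le> 2 * a\<^sup>2 + 2 * b\<^sup>2" using sq_tri[of a "- b" 0] by simp
        moreover have "((a + b) / 2)\<^sup>2 = (a + b)\<^sup>2 / 4" by (simp add: power_divide)
        moreover have "0 \<le> a\<^sup>2" "0 \<le> b\<^sup>2" by simp_all
        ultimately show ?thesis by linarith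
      qed
      then show "ennreal (((Y1 \<omega> + Y2 \<omega>) / 2 - elem_int W t (n k) (c k) \<omega>)\<^sup>2)
          \<le> ennreal ((Y1 \<omega> - elem_int W t (n k) (c k) \<omega>)\<^sup>2) + ennreal ((Y2 \<omega> - elem_int W t (n k) (c k) \<omega>)\<^sup>2)"
        unfolding e a_def[symmetric] b_def[symmetric]
        using ennreal_leI[OF \<open>((a + b) / 2)\<^sup>2 \<le> a\<^sup>2 + b\<^sup>2\<close>] ennreal_plus[of "a\<^sup>2" "b\<^sup>2"] by simp
    qed
    also have "\<dots> = (\<integral>\<^sup>+\<omega>. ennreal ((Y1 \<omega> - elem_int W t (n k) (c k) \<omega>)\<^sup>2) \<partial>M) + (\<integral>\<^sup>+\<omega>. ennreal ((Y2 \<omega> - elem_int W t (n k) (c k) \<omega>)\<^sup>2) \<partial>M)"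
      by (rule nn_integral_add) auto
    finally show ?thesis .
  qed
  have "(\<lambda>k. (\<integral>\<^sup>+\<omega>. ennreal ((Y1 \<omega> - elem_int W t (n k) (c k) \<omega>)\<^sup>2) \<partial>M) + (\<integral>\<^sup>+\<omega>. ennreal ((Y2 \<omega> - elem_int W t (n k) (c k) \<omega>)\<^sup>2) \<partial>M)) \<longlonglongrightarrow> 0 + 0"
    by (rule tendsto_add[OF l1 l2])
  then have hl: "(\<lambda>k. (\<integral>\<^sup>+\<omega>. ennreal ((Y1 \<omega> - elem_int W t (n k) (c k) \<omega>)\<^sup>2) \<partial>M) + (\<integral>\<^sup>+\<omega>. ennreal ((Y2 \<omega> - elem_int W t (n k) (c k) \<omega>)\<^sup>2) \<partial>M)) \<longlonglongrightarrow> 0"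
    by simp
  show "(\<lambda>k. \<integral>\<^sup>+\<omega>. ennreal (((Y1 \<omega> + Y2 \<omega>) / 2 - elem_int W t (n k) (c k) \<omega>)\<^sup>2) \<partial>M) \<longlonglongrightarrow> 0"
  proof (rule tendsto_sandwich[OF _ _ tendsto_const hl])
    show "\<forall>\<^sub>F k in sequentially. (\<integral>\<^sup>+\<omega>. ennreal (((Y1 \<omega> + Y2 \<omega>) / 2 - elem_int W t (n k) (c k) \<omega>)\<^sup>2) \<partial>M)
      \<le> (\<integral>\<^sup>+\<omega>. ennreal ((Y1 \<omega> - elem_int W t (n k) (c k) \<omega>)\<^sup>2) \<partial>M) + (\<integral>\<^sup>+\<omega>. ennreal ((Y2 \<omega> - elem_int W t (n k) (c k) \<omega>)\<^sup>2) \<partial>M)"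
      by (intro always_eventually allI le)
  qed simp
qed

lemma loc_sq_fin:
  fixes Xo :: "real \<Rightarrow> real"
  assumes Xm[measurable]: "Xo \<in> borel_measurable borel"
    and fin: "(\<integral>\<^sup>+s. ennreal (exp (2 * \<beta> * s) * (Xo s)\<^sup>2) \<partial>lborel) < \<infinity>" and t: "0 \<le> t"
  shows "(\<integral>\<^sup>+s. ennreal (indicator {0..t} s * (Xo s)\<^sup>2) \<partial>lborel) < \<infinity>"
proof -
  define E where "E = exp (- 2 * \<bar>\<beta>\<bar> * t)"
  have E: "0 < E" by (simp add: E_def)
  have "(\<integral>\<^sup>+s. ennreal (indicator {0..t} s * (Xo s)\<^sup>2) \<partial>lborel)
      \<le> (\<integral>\<^sup>+s. ennreal (1 / E) * ennreal (exp (2 * \<beta> * s) * (Xo s)\<^sup>2) \<partial>lborel)"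
  proof (rule nn_integral_mono)
    fix s :: real
    show "ennreal (indicator {0..t} s * (Xo s)\<^sup>2) \<le> ennreal (1 / E) * ennreal (exp (2 * \<beta> * s) * (Xo s)\<^sup>2)"
    proof (cases "s \<in> {0..t}")
      case True
      have "- 2 * \<bar>\<beta>\<bar> * t \<le> 2 * \<beta> * s"
      proof -
        have "\<bar>\<beta>\<bar> * s \<le> \<bar>\<beta>\<bar> * t" using True by (intro mult_left_mono) auto
        moreover have "- (\<bar>\<beta>\<bar> * s) \<le> \<beta> * s" using True by (cases "\<beta> \<ge> 0") (auto simp: mult_nonneg_nonneg)
        ultimately show ?thesis by linarith
      qed
      then have "E \<le> exp (2 * \<beta> * s)" by (simp add: E_def)
      then have "1 \<le> exp (2 * \<beta> * s) / E" using E by simp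
      then have "(Xo s)\<^sup>2 \<le> 1 / E * (exp (2 * \<beta> * s) * (Xo s)\<^sup>2)"
        using mult_right_mono[of 1 "exp (2 * \<beta> * s) / E" "(Xo s)\<^sup>2"] by (simp add: field_simps)
      then have le: "ennreal ((Xo s)\<^sup>2) \<le> ennreal (1 / E * (exp (2 * \<beta> * s) * (Xo s)\<^sup>2))"
        by (rule ennreal_leI)
      have eqn: "ennreal (1 / E) * ennreal (exp (2 * \<beta> * s) * (Xo s)\<^sup>2) = ennreal (1 / E * (exp (2 * \<beta> * s) * (Xo s)\<^sup>2))"
        by (rule ennreal_mult[symmetric]) (use E in auto)
      have ind: "indicator {0..t} s * (Xo s)\<^sup>2 = (Xo s)\<^sup>2" using True by simp
      show ?thesis unfolding ind eqn by (rule le)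
    qed simp
  qed
  also have "\<dots> = ennreal (1 / E) * (\<integral>\<^sup>+s. ennreal (exp (2 * \<beta> * s) * (Xo s)\<^sup>2) \<partial>lborel)"
    by (rule nn_integral_cmult) measurable
  also have "\<dots> < \<infinity>" using fin by (simp add: ennreal_mult_less_top)
  finally show ?thesis .
qed

lemma shift_le:
  fixes Xo :: "real \<Rightarrow> real"
  assumes Xm[measurable]: "Xo \<in> borel_measurable borel" and d: "0 \<le> \<delta>"
  shows "(\<integral>\<^sup>+s. ennreal (indicator {0..t} s * (if s < \<delta> then 0 else (Xo (s - \<delta>))\<^sup>2)) \<partial>lborel)
     \<le> (\<integral>\<^sup>+r. ennreal (indicator {0..t} r * (Xo r)\<^sup>2) \<partial>lborel)"
proof -
  define f where "f s = ennreal (indicator {0..t} s * (if s < \<delta> then 0 else (Xo (s - \<delta>))\<^sup>2))" for s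
  have fm: "f \<in> borel_measurable borel" unfolding f_def by measurable
  have "(\<integral>\<^sup>+s. f s \<partial>lborel) = \<bar>1::real\<bar> * (\<integral>\<^sup>+x. f (\<delta> + 1 * x) \<partial>lborel)"
    by (rule nn_integral_real_affine[OF fm]) simp
  also have "\<dots> \<le> (\<integral>\<^sup>+r. ennreal (indicator {0..t} r * (Xo r)\<^sup>2) \<partial>lborel)"
  proof (simp, rule nn_integral_mono)
    fix x :: real
    show "f (\<delta> + x) \<le> ennreal (indicator {0..t} x * (Xo x)\<^sup>2)"
    proof (cases "0 \<le> x \<and> \<delta> + x \<le> t")
      case True
      then have "x \<in> {0..t}" "\<delta> + x \<in> {0..t}" using d by auto
      then show ?thesis using True by (simp add: f_def)
    next
      case False
      then have "f (\<delta> + x) = 0" using d by (auto simp: f_def indicator_def)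
      then show ?thesis by simp
    qed
  qed
  finally show ?thesis by (simp add: f_def)
qed

lemma abs_mult_le_sq: "\<bar>(k::real) * y\<bar> \<le> k\<^sup>2 + y\<^sup>2"
proof -
  have "0 \<le> (\<bar>k\<bar> - \<bar>y\<bar>)\<^sup>2" by simp
  then have "2 * (\<bar>k\<bar> * \<bar>y\<bar>) \<le> k\<^sup>2 + y\<^sup>2" by (simp add: power2_eq_square algebra_simps)
  moreover have "0 \<le> \<bar>k\<bar> * \<bar>y\<bar>" by simp
  ultimately have "\<bar>k\<bar> * \<bar>y\<bar> \<le> k\<^sup>2 + y\<^sup>2" by linarith
  then show ?thesis by (simp add: abs_mult)
qed

lemma integ_core:
  fixes Xo Uo :: "real \<Rightarrow> real"
  assumes Xm[measurable]: "Xo \<in> borel_measurable borel" and Um[measurable]: "Uo \<in> borel_measurable borel"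
    and fX: "(\<integral>\<^sup>+s. ennreal (indicator {0..t} s * (Xo s)\<^sup>2) \<partial>lborel) < \<infinity>"
    and fU: "(\<integral>\<^sup>+s. ennreal (indicator {0..t} s * (Uo s)\<^sup>2) \<partial>lborel) < \<infinity>"
    and a1: "1/2 < \<alpha>" and t: "0 \<le> t" and d: "0 \<le> \<delta>"
  shows "integrable lborel (\<lambda>s. indicator {0..t} s * ((t - s) powr (\<alpha> - 1) * (b * (if s < \<delta> then x0 else Xo (s - \<delta>)) + c * Uo s)))"
proof (rule integrableI_bounded)
  define D where "D s = (if s < \<delta> then x0 else Xo (s - \<delta>))" for s
  define S where "S s = (if s < \<delta> then 0 else (Xo (s - \<delta>))\<^sup>2)" for s
  have [measurable]: "D \<in> borel_measurable borel" "S \<in> borel_measurable borel" unfolding D_def S_def by measurable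
  show "(\<lambda>s. indicator {0..t} s * ((t - s) powr (\<alpha> - 1) * (b * (if s < \<delta> then x0 else Xo (s - \<delta>)) + c * Uo s))) \<in> borel_measurable lborel"
    by measurable
  have pt: "ennreal (norm (indicator {0..t} s * ((t - s) powr (\<alpha> - 1) * (b * (if s < \<delta> then x0 else Xo (s - \<delta>)) + c * Uo s))))
      \<le> ennreal (indicator {0..t} s * (t - s) powr (2 * \<alpha> - 2)) + ennreal (2 * b\<^sup>2 * x0\<^sup>2 * indicator {0..t} s)
        + ennreal (2 * b\<^sup>2) * ennreal (indicator {0..t} s * S s) + ennreal (2 * c\<^sup>2) * ennreal (indicator {0..t} s * (Uo s)\<^sup>2)" for s
  proof (cases "s \<in> {0..t}")
    case True
    have k2: "((t - s) powr (\<alpha> - 1))\<^sup>2 = (t - s) powr (2 * \<alpha> - 2)"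
      using True by (simp add: powr_sq algebra_simps)
    have y2: "(b * D s + c * Uo s)\<^sup>2 \<le> 2 * (b * D s)\<^sup>2 + 2 * (c * Uo s)\<^sup>2"
      using sq_tri[of "b * D s" "- (c * Uo s)" 0] by simp
    have d2: "(D s)\<^sup>2 \<le> x0\<^sup>2 + S s" by (simp add: D_def S_def)
    have "\<bar>(t - s) powr (\<alpha> - 1) * (b * D s + c * Uo s)\<bar> \<le> (t - s) powr (2 * \<alpha> - 2) + (b * D s + c * Uo s)\<^sup>2"
      using abs_mult_le_sq[of "(t - s) powr (\<alpha> - 1)" "b * D s + c * Uo s"] k2 by simp
    also have "\<dots> \<le> (t - s) powr (2 * \<alpha> - 2) + (2 * b\<^sup>2 * (D s)\<^sup>2 + 2 * c\<^sup>2 * (Uo s)\<^sup>2)"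
      using y2 by (simp add: power_mult_distrib)
    also have "\<dots> \<le> (t - s) powr (2 * \<alpha> - 2) + (2 * b\<^sup>2 * (x0\<^sup>2 + S s) + 2 * c\<^sup>2 * (Uo s)\<^sup>2)"
      using d2 by (simp add: mult_left_mono)
    finally have r: "\<bar>(t - s) powr (\<alpha> - 1) * (b * D s + c * Uo s)\<bar>
        \<le> (t - s) powr (2 * \<alpha> - 2) + 2 * b\<^sup>2 * x0\<^sup>2 + 2 * b\<^sup>2 * S s + 2 * c\<^sup>2 * (Uo s)\<^sup>2"
      by (simp add: algebra_simps)
    have S0: "0 \<le> S s" by (simp add: S_def)
    have "ennreal \<bar>(t - s) powr (\<alpha> - 1) * (b * D s + c * Uo s)\<bar>
        \<le> ennreal ((t - s) powr (2 * \<alpha> - 2) + 2 * b\<^sup>2 * x0\<^sup>2 + 2 * b\<^sup>2 * S s + 2 * c\<^sup>2 * (Uo s)\<^sup>2)"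
      by (rule ennreal_leI[OF r])
    also have "\<dots> = ennreal ((t - s) powr (2 * \<alpha> - 2)) + ennreal (2 * b\<^sup>2 * x0\<^sup>2) + ennreal (2 * b\<^sup>2) * ennreal (S s) + ennreal (2 * c\<^sup>2) * ennreal ((Uo s)\<^sup>2)"
      using S0 by (simp add: ennreal_plus ennreal_mult del: ennreal_numeral)
    finally show ?thesis using True by (simp add: D_def)
  qed simp
  have m1[measurable]: "(\<lambda>s. ennreal (indicator {0..t} s * (t - s) powr (2 * \<alpha> - 2))) \<in> borel_measurable lborel" by measurable
  have "(\<integral>\<^sup>+s. ennreal (norm (indicator {0..t} s * ((t - s) powr (\<alpha> - 1) * (b * (if s < \<delta> then x0 else Xo (s - \<delta>)) + c * Uo s)))) \<partial>lborel)
      \<le> (\<integral>\<^sup>+s. ennreal (indicator {0..t} s * (t - s) powr (2 * \<alpha> - 2)) + ennreal (2 * b\<^sup>2 * x0\<^sup>2 * indicator {0..t} s)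
        + ennreal (2 * b\<^sup>2) * ennreal (indicator {0..t} s * S s) + ennreal (2 * c\<^sup>2) * ennreal (indicator {0..t} s * (Uo s)\<^sup>2) \<partial>lborel)"
    by (rule nn_integral_mono) (rule pt)
  also have "\<dots> = (\<integral>\<^sup>+s. ennreal (indicator {0..t} s * (t - s) powr (2 * \<alpha> - 2)) \<partial>lborel)
      + (\<integral>\<^sup>+s. ennreal (2 * b\<^sup>2 * x0\<^sup>2 * indicator {0..t} s) \<partial>lborel)
      + ennreal (2 * b\<^sup>2) * (\<integral>\<^sup>+s. ennreal (indicator {0..t} s * S s) \<partial>lborel)
      + ennreal (2 * c\<^sup>2) * (\<integral>\<^sup>+s. ennreal (indicator {0..t} s * (Uo s)\<^sup>2) \<partial>lborel)"
    by (simp add: nn_integral_add nn_integral_cmult del: ennreal_numeral)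
  also have "\<dots> < \<infinity>"
  proof -
    have i1: "(\<integral>\<^sup>+s. ennreal (indicator {0..t} s * (t - s) powr (2 * \<alpha> - 2)) \<partial>lborel) < \<infinity>"
    proof -
      have "(\<integral>\<^sup>+s. ennreal (indicator {0..t} s * (t - s) powr (2 * \<alpha> - 2)) \<partial>lborel)
          = (\<integral>\<^sup>+s\<in>{0..t}. ennreal ((t - s) powr (2 * \<alpha> - 2)) \<partial>lborel)"
        by (intro nn_integral_cong) (simp add: indicator_def)
      also have "\<dots> = ennreal (t powr (2 * \<alpha> - 2 + 1) / (2 * \<alpha> - 2 + 1))"
        by (rule ker_pow) (use t a1 in auto)
      finally show ?thesis by simp
    qed
    have i2: "(\<integral>\<^sup>+s. ennreal (2 * b\<^sup>2 * x0\<^sup>2 * indicator {0..t} s) \<partial>lborel) < \<infinity>"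
    proof -
      have "(\<integral>\<^sup>+s. ennreal (2 * b\<^sup>2 * x0\<^sup>2 * indicator {0..t} s) \<partial>lborel)
          = (\<integral>\<^sup>+s. ennreal (2 * b\<^sup>2 * x0\<^sup>2) * indicator {0..t} s \<partial>lborel)"
        by (intro nn_integral_cong) (simp add: indicator_def)
      also have "\<dots> = ennreal (2 * b\<^sup>2 * x0\<^sup>2) * emeasure lborel {0..t}"
        by (rule nn_integral_cmult_indicator) simp
      finally show ?thesis using t by (simp add: ennreal_mult_less_top)
    qed
    have i3: "(\<integral>\<^sup>+s. ennreal (indicator {0..t} s * S s) \<partial>lborel) < \<infinity>"
      using shift_le[OF Xm d, of t] fX unfolding S_def by (simp add: le_less_trans)
    show ?thesis using i1 i2 i3 fU by (simp add: ennreal_mult_less_top del: ennreal_numeral)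
  qed
  finally show "(\<integral>\<^sup>+s. ennreal (norm (indicator {0..t} s * ((t - s) powr (\<alpha> - 1) * (b * (if s < \<delta> then x0 else Xo (s - \<delta>)) + c * Uo s)))) \<partial>lborel) < \<infinity>" .
qed

lemma L2F_section:
  assumes f: "f \<in> L2F M F \<beta>" and \<omega>: "\<omega> \<in> space M"
  shows "(\<lambda>s. indicator {0..} s * f s \<omega>) \<in> borel_measurable borel"
proof -
  have "(\<lambda>p. indicator {0..} (fst p) * f (fst p) (snd p)) \<in> borel_measurable (lborel \<Otimes>\<^sub>M M)"
    using f by (simp add: L2F_def)
  from measurable_Pair1[OF this \<omega>] show ?thesis by simp
qed

lemma L2F_AE_fin:
  assumes M: "prob_space M" and f: "f \<in> L2F M F \<beta>"
  shows "AE \<omega> in M. (\<integral>\<^sup>+s. ennreal (exp (2 * \<beta> * s) * (indicator {0..} s * f s \<omega>)\<^sup>2) \<partial>lborel) < \<infinity>"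
proof -
  interpret prob_space M by (rule M)
  define H where "H p = ennreal (indicator {0..} (fst p) * exp (2 * \<beta> * fst p) * (f (fst p) (snd p))\<^sup>2)" for p
  have Hm: "H \<in> borel_measurable (lborel \<Otimes>\<^sub>M M)" unfolding H_def by (rule L2F_meas_sq[OF f])
  have Hs: "(\<lambda>(x, y). H (y, x)) \<in> borel_measurable (M \<Otimes>\<^sub>M lborel)"
    by (rule measurable_pair_swap[OF Hm])
  have m: "(\<lambda>\<omega>. \<integral>\<^sup>+s. H (s, \<omega>) \<partial>lborel) \<in> borel_measurable M"
    using lborel.borel_measurable_nn_integral_fst[OF Hs] by simp
  have fin: "(\<integral>\<^sup>+\<omega>. (\<integral>\<^sup>+s. H (s, \<omega>) \<partial>lborel) \<partial>M) \<noteq> \<infinity>"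
    using f by (simp add: L2F_def H_def less_top)
  have "AE \<omega> in M. (\<integral>\<^sup>+s. H (s, \<omega>) \<partial>lborel) \<noteq> \<infinity>"
    by (rule nn_integral_PInf_AE[OF m fin])
  moreover have "H (s, \<omega>) = ennreal (exp (2 * \<beta> * s) * (indicator {0..} s * f s \<omega>)\<^sup>2)" for s \<omega>
    by (simp add: H_def indicator_def)
  ultimately show ?thesis by (simp add: top.not_eq_extremum)
qed

lemma integ_proc:
  assumes M: "prob_space M" and X: "X \<in> L2F M F (- \<mu>)" and u: "u \<in> L2F M F (- \<mu>)"
    and a1: "1/2 < \<alpha>" and t: "0 \<le> t" and d: "0 \<le> \<delta>"
  shows "AE \<omega> in M. set_integrable lborel {0..t}
      (\<lambda>s. (t - s) powr (\<alpha> - 1) * (b * (if s < \<delta> then x0 else X (s - \<delta>) \<omega>) + c * u s \<omega>))"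
  using L2F_AE_fin[OF M X] L2F_AE_fin[OF M u] AE_space
proof eventually_elim
  case (elim \<omega>)
  define Xo where "Xo s = indicator {0..} s * X s \<omega>" for s
  define Uo where "Uo s = indicator {0..} s * u s \<omega>" for s
  have Xm: "Xo \<in> borel_measurable borel" unfolding Xo_def by (rule L2F_section[OF X elim(3)])
  have Um: "Uo \<in> borel_measurable borel" unfolding Uo_def by (rule L2F_section[OF u elim(3)])
  have fX: "(\<integral>\<^sup>+s. ennreal (indicator {0..t} s * (Xo s)\<^sup>2) \<partial>lborel) < \<infinity>"
    by (rule loc_sq_fin[OF Xm _ t, of "- \<mu>"]) (use elim(1) in \<open>simp add: Xo_def\<close>)
  have fU: "(\<integral>\<^sup>+s. ennreal (indicator {0..t} s * (Uo s)\<^sup>2) \<partial>lborel) < \<infinity>"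
    by (rule loc_sq_fin[OF Um _ t, of "- \<mu>"]) (use elim(2) in \<open>simp add: Uo_def\<close>)
  have I: "integrable lborel (\<lambda>s. indicator {0..t} s * ((t - s) powr (\<alpha> - 1) * (b * (if s < \<delta> then x0 else Xo (s - \<delta>)) + c * Uo s)))"
    by (rule integ_core[OF Xm Um fX fU a1 t d])
  show ?case unfolding set_integrable_def
  proof (rule Bochner_Integration.integrable_cong[THEN iffD1, OF refl _ I])
    fix s :: real assume "s \<in> space lborel"
    show "indicator {0..t} s * ((t - s) powr (\<alpha> - 1) * (b * (if s < \<delta> then x0 else Xo (s - \<delta>)) + c * Uo s))
        = indicator {0..t} s *\<^sub>R ((t - s) powr (\<alpha> - 1) * (b * (if s < \<delta> then x0 else X (s - \<delta>) \<omega>) + c * u s \<omega>))"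
      by (cases "s \<in> {0..t}") (auto simp: Xo_def Uo_def indicator_def)
  qed
qed

lemma h2: "ennreal (1/2) * 2 = 1"
proof -
  have "ennreal (1/2) * ennreal 2 = ennreal (1/2 * 2)" by (rule ennreal_mult[symmetric]) auto
  then show ?thesis by simp
qed

lemma avg_alg:
  fixes x0 g k A1 A2 Y1 Y2 :: real
  shows "((x0 + g * A1 + k * Y1) + (x0 + g * A2 + k * Y2)) / 2 = x0 + g * ((A1 + A2) / 2) + k * ((Y1 + Y2) / 2)"
  by (simp add: field_simps)

lemma avg_set_integral:
  fixes F1 F2 :: "real \<Rightarrow> real"
  assumes "set_integrable lborel A F1" "set_integrable lborel A F2"
  shows "(\<integral>s\<in>A. (F1 s + F2 s) / 2 \<partial>lborel) = ((\<integral>s\<in>A. F1 s \<partial>lborel) + (\<integral>s\<in>A. F2 s \<partial>lborel)) / 2"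
proof -
  have "(\<integral>s\<in>A. (F1 s + F2 s) / 2 \<partial>lborel) = (\<integral>s\<in>A. (F1 s + F2 s) \<partial>lborel) / 2"
    unfolding set_lebesgue_integral_def
    by (simp add: indicator_def if_distrib[of "\<lambda>x. x / 2"] cong: if_cong)
  also have "\<dots> = ((\<integral>s\<in>A. F1 s \<partial>lborel) + (\<integral>s\<in>A. F2 s \<partial>lborel)) / 2"
    using set_integral_add(2)[OF assms] by simp
  finally show ?thesis .
qed

lemma avg_state:
  assumes bm: "brownian_motion M W" and a1: "1/2 < \<alpha>" and d: "0 \<le> \<delta>"
    and S1: "is_state M W x0 b c \<sigma> \<alpha> \<delta> \<mu> u1 X1" and S2: "is_state M W x0 b c \<sigma> \<alpha> \<delta> \<mu> u2 X2"
    and u1: "u1 \<in> L2F M (aug_filtration M W) (- \<mu>)" and u2: "u2 \<in> L2F M (aug_filtration M W) (- \<mu>)"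
  shows "is_state M W x0 b c \<sigma> \<alpha> \<delta> \<mu> (\<lambda>t \<omega>. (u1 t \<omega> + u2 t \<omega>) / 2) (\<lambda>t \<omega>. (X1 t \<omega> + X2 t \<omega>) / 2)"
proof -
  have M: "prob_space M" by (rule bm_prob[OF bm])
  have X1: "X1 \<in> L2F M (aug_filtration M W) (- \<mu>)" using S1 by (simp add: is_state_def)
  have X2: "X2 \<in> L2F M (aug_filtration M W) (- \<mu>)" using S2 by (simp add: is_state_def)
  show ?thesis unfolding is_state_def
  proof (intro conjI)
    show "(\<lambda>t \<omega>. (X1 t \<omega> + X2 t \<omega>) / 2) \<in> L2F M (aug_filtration M W) (- \<mu>)"
      by (rule avg_L2F[OF M X1 X2])
    have A1: "AE t in lborel. 0 \<le> t \<longrightarrow> (\<exists>Y. is_wiener_integral M W (\<lambda>s. (t - s) powr (\<alpha> - 1)) t Y \<and>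
          (AE \<omega> in M. X1 t \<omega> = x0 + 1 / Gamma \<alpha> * (\<integral>s\<in>{0..t}. (t - s) powr (\<alpha> - 1)
             * (b * (if s < \<delta> then x0 else X1 (s - \<delta>) \<omega>) + c * u1 s \<omega>) \<partial>lborel) + \<sigma> / Gamma \<alpha> * Y \<omega>))"
      using S1 by (simp add: is_state_def)
    have A2: "AE t in lborel. 0 \<le> t \<longrightarrow> (\<exists>Y. is_wiener_integral M W (\<lambda>s. (t - s) powr (\<alpha> - 1)) t Y \<and>
          (AE \<omega> in M. X2 t \<omega> = x0 + 1 / Gamma \<alpha> * (\<integral>s\<in>{0..t}. (t - s) powr (\<alpha> - 1)
             * (b * (if s < \<delta> then x0 else X2 (s - \<delta>) \<omega>) + c * u2 s \<omega>) \<partial>lborel) + \<sigma> / Gamma \<alpha> * Y \<omega>))"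
      using S2 by (simp add: is_state_def)
    show "AE t in lborel. 0 \<le> t \<longrightarrow> (\<exists>Y. is_wiener_integral M W (\<lambda>s. (t - s) powr (\<alpha> - 1)) t Y \<and>
          (AE \<omega> in M. (X1 t \<omega> + X2 t \<omega>) / 2 = x0 + 1 / Gamma \<alpha> * (\<integral>s\<in>{0..t}. (t - s) powr (\<alpha> - 1)
             * (b * (if s < \<delta> then x0 else (X1 (s - \<delta>) \<omega> + X2 (s - \<delta>) \<omega>) / 2) + c * ((u1 s \<omega> + u2 s \<omega>) / 2)) \<partial>lborel)
             + \<sigma> / Gamma \<alpha> * Y \<omega>))"
      using A1 A2
    proof eventually_elim
      case (elim t)
      show ?case
      proof
        assume t: "0 \<le> t"
        obtain Y1 where Y1: "is_wiener_integral M W (\<lambda>s. (t - s) powr (\<alpha> - 1)) t Y1"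
          and E1: "AE \<omega> in M. X1 t \<omega> = x0 + 1 / Gamma \<alpha> * (\<integral>s\<in>{0..t}. (t - s) powr (\<alpha> - 1)
             * (b * (if s < \<delta> then x0 else X1 (s - \<delta>) \<omega>) + c * u1 s \<omega>) \<partial>lborel) + \<sigma> / Gamma \<alpha> * Y1 \<omega>"
          using elim(1) t by blast
        obtain Y2 where Y2: "is_wiener_integral M W (\<lambda>s. (t - s) powr (\<alpha> - 1)) t Y2"
          and E2: "AE \<omega> in M. X2 t \<omega> = x0 + 1 / Gamma \<alpha> * (\<integral>s\<in>{0..t}. (t - s) powr (\<alpha> - 1)
             * (b * (if s < \<delta> then x0 else X2 (s - \<delta>) \<omega>) + c * u2 s \<omega>) \<partial>lborel) + \<sigma> / Gamma \<alpha> * Y2 \<omega>"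
          using elim(2) t by blast
        show "\<exists>Y. is_wiener_integral M W (\<lambda>s. (t - s) powr (\<alpha> - 1)) t Y \<and>
          (AE \<omega> in M. (X1 t \<omega> + X2 t \<omega>) / 2 = x0 + 1 / Gamma \<alpha> * (\<integral>s\<in>{0..t}. (t - s) powr (\<alpha> - 1)
             * (b * (if s < \<delta> then x0 else (X1 (s - \<delta>) \<omega> + X2 (s - \<delta>) \<omega>) / 2) + c * ((u1 s \<omega> + u2 s \<omega>) / 2)) \<partial>lborel)
             + \<sigma> / Gamma \<alpha> * Y \<omega>)"
        proof (intro exI conjI)
          show "is_wiener_integral M W (\<lambda>s. (t - s) powr (\<alpha> - 1)) t (\<lambda>\<omega>. (Y1 \<omega> + Y2 \<omega>) / 2)"
            by (rule avg_wiener[OF bm t Y1 Y2])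
          show "AE \<omega> in M. (X1 t \<omega> + X2 t \<omega>) / 2 = x0 + 1 / Gamma \<alpha> * (\<integral>s\<in>{0..t}. (t - s) powr (\<alpha> - 1)
             * (b * (if s < \<delta> then x0 else (X1 (s - \<delta>) \<omega> + X2 (s - \<delta>) \<omega>) / 2) + c * ((u1 s \<omega> + u2 s \<omega>) / 2)) \<partial>lborel)
             + \<sigma> / Gamma \<alpha> * ((Y1 \<omega> + Y2 \<omega>) / 2)"
            using E1 E2 integ_proc[OF M X1 u1 a1 t d, of b x0 c] integ_proc[OF M X2 u2 a1 t d, of b x0 c]
          proof eventually_elim
            case (elim \<omega>)
            define F1 where "F1 = (\<lambda>s. (t - s) powr (\<alpha> - 1) * (b * (if s < \<delta> then x0 else X1 (s - \<delta>) \<omega>) + c * u1 s \<omega>))"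
            define F2 where "F2 = (\<lambda>s. (t - s) powr (\<alpha> - 1) * (b * (if s < \<delta> then x0 else X2 (s - \<delta>) \<omega>) + c * u2 s \<omega>))"
            have e1: "X1 t \<omega> = x0 + 1 / Gamma \<alpha> * (\<integral>s\<in>{0..t}. F1 s \<partial>lborel) + \<sigma> / Gamma \<alpha> * Y1 \<omega>"
              using elim(1) unfolding F1_def by simp
            have e2: "X2 t \<omega> = x0 + 1 / Gamma \<alpha> * (\<integral>s\<in>{0..t}. F2 s \<partial>lborel) + \<sigma> / Gamma \<alpha> * Y2 \<omega>"
              using elim(2) unfolding F2_def by simp
            have eqF: "(t - s) powr (\<alpha> - 1) * (b * (if s < \<delta> then x0 else (X1 (s - \<delta>) \<omega> + X2 (s - \<delta>) \<omega>) / 2) + c * ((u1 s \<omega> + u2 s \<omega>) / 2))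
                = (F1 s + F2 s) / 2" for s
              by (cases "s < \<delta>") (simp_all add: F1_def F2_def field_simps)
            have I: "(\<integral>s\<in>{0..t}. (t - s) powr (\<alpha> - 1) * (b * (if s < \<delta> then x0 else (X1 (s - \<delta>) \<omega> + X2 (s - \<delta>) \<omega>) / 2) + c * ((u1 s \<omega> + u2 s \<omega>) / 2)) \<partial>lborel)
                = ((\<integral>s\<in>{0..t}. F1 s \<partial>lborel) + (\<integral>s\<in>{0..t}. F2 s \<partial>lborel)) / 2"
              unfolding eqF by (rule avg_set_integral) (use elim(3,4) in \<open>simp_all add: F1_def F2_def\<close>)
            show ?case unfolding I e1 e2 by (rule avg_alg)
          qed
        qed
      qed
    qed
  qed
qed

definition Fc :: "real \<Rightarrow> real \<Rightarrow> (real \<Rightarrow> 'a \<Rightarrow> real) \<Rightarrow> (real \<Rightarrow> 'a \<Rightarrow> real) \<Rightarrow> real \<times> 'a \<Rightarrow> ennreal" where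
  "Fc \<gamma> lam X u p = ennreal (indicator {0..} (fst p) * exp (- lam * fst p) * ((X (fst p) (snd p))\<^sup>2 + (u (fst p) (snd p))\<^sup>2 / \<gamma>))"

lemma Fc_meas:
  assumes X: "X \<in> L2F M F \<beta>" and u: "u \<in> L2F M F \<beta>'"
  shows "Fc \<gamma> lam X u \<in> borel_measurable (lborel \<Otimes>\<^sub>M M)"
proof -
  have [measurable]: "(\<lambda>p. indicator {0..} (fst p) * X (fst p) (snd p)) \<in> borel_measurable (lborel \<Otimes>\<^sub>M M)"
    using X by (simp add: L2F_def)
  have [measurable]: "(\<lambda>p. indicator {0..} (fst p) * u (fst p) (snd p)) \<in> borel_measurable (lborel \<Otimes>\<^sub>M M)"
    using u by (simp add: L2F_def)
  have eq: "Fc \<gamma> lam X u = (\<lambda>p. ennreal (exp (- lam * fst p) * ((indicator {0..} (fst p) * X (fst p) (snd p))\<^sup>2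
      + (indicator {0..} (fst p) * u (fst p) (snd p))\<^sup>2 / \<gamma>)))"
    by (auto simp: fun_eq_iff Fc_def indicator_def)
  show ?thesis unfolding eq by measurable
qed

lemma cost_prod:
  assumes M: "prob_space M" and X: "X \<in> L2F M F \<beta>" and u: "u \<in> L2F M F \<beta>'"
  shows "cost M \<gamma> lam X u = ennreal (1/2) * (\<integral>\<^sup>+p. Fc \<gamma> lam X u p \<partial>(lborel \<Otimes>\<^sub>M M))"
proof -
  have m: "(\<lambda>p. Fc \<gamma> lam X u (fst p, snd p)) \<in> borel_measurable (lborel \<Otimes>\<^sub>M M)"
    using Fc_meas[OF X u] by simp
  have "(\<integral>\<^sup>+\<omega>. (\<integral>\<^sup>+t. Fc \<gamma> lam X u (t, \<omega>) \<partial>lborel) \<partial>M) = (\<integral>\<^sup>+p. Fc \<gamma> lam X u (fst p, snd p) \<partial>(lborel \<Otimes>\<^sub>M M))"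
    by (rule iter_prod[OF M m])
  then show ?thesis unfolding cost_def by (simp add: Fc_def)
qed

lemma par_id:
  fixes w a b p q \<gamma> :: real
  assumes "\<gamma> \<noteq> 0"
  shows "w * (((a + b) / 2)\<^sup>2 + ((p + q) / 2)\<^sup>2 / \<gamma>) + w * ((a - b)\<^sup>2 / 4 + (p - q)\<^sup>2 / (4 * \<gamma>))
       = 1 / 2 * (w * (a\<^sup>2 + p\<^sup>2 / \<gamma>) + w * (b\<^sup>2 + q\<^sup>2 / \<gamma>))"
  using assms by (simp add: field_simps power2_eq_square)

lemma uniq_main:
  fixes M :: "'a measure" and W :: "real \<Rightarrow> 'a \<Rightarrow> real"
  assumes bm: "brownian_motion M W" and c: "c \<noteq> 0" and g: "\<gamma> > 0" and a1: "1/2 < \<alpha>" and a2: "\<alpha> \<le> 1"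
    and d: "\<delta> \<ge> 0" and mu: "0 < \<mu>" and lam: "lam \<ge> 2 * \<mu>"
    and o1: "is_optimal_control M W x0 b c \<sigma> \<alpha> \<delta> \<mu> \<gamma> lam u1"
    and o2: "is_optimal_control M W x0 b c \<sigma> \<alpha> \<delta> \<mu> \<gamma> lam u2"
  shows "AE p in lborel \<Otimes>\<^sub>M M. fst p \<ge> 0 \<longrightarrow> u1 (fst p) (snd p) = u2 (fst p) (snd p)"
proof -
  have M: "prob_space M" by (rule bm_prob[OF bm])
  define L where "L = L2F M (aug_filtration M W) (- \<mu>)"
  define m where "m = (INF v\<in>L. J M W x0 b c \<sigma> \<alpha> \<delta> \<mu> \<gamma> lam v)"
  have ex: "\<exists>v\<in>L. J M W x0 b c \<sigma> \<alpha> \<delta> \<mu> \<gamma> lam v < \<infinity>"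
    unfolding L_def by (rule exists_finite[OF bm a1 a2 mu d g lam c])
  then obtain v where v: "v \<in> L" "J M W x0 b c \<sigma> \<alpha> \<delta> \<mu> \<gamma> lam v < \<infinity>" ..
  have "m \<le> J M W x0 b c \<sigma> \<alpha> \<delta> \<mu> \<gamma> lam v" unfolding m_def by (rule INF_lower[OF v(1)])
  then have mfin: "m \<noteq> \<infinity>" using v(2) by (auto simp: top_unique)
  have u1L: "u1 \<in> L" and J1: "J M W x0 b c \<sigma> \<alpha> \<delta> \<mu> \<gamma> lam u1 = m"
    using o1 by (auto simp: is_optimal_control_def L_def m_def)
  have u2L: "u2 \<in> L" and J2: "J M W x0 b c \<sigma> \<alpha> \<delta> \<mu> \<gamma> lam u2 = m"
    using o2 by (auto simp: is_optimal_control_def L_def m_def)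
  define h where "h = ennreal (1/2)"
  have h2': "h * 2 = 1" unfolding h_def by (rule h2)
  have hx: "h * (x + x) = x" for x :: ennreal
    by (simp add: mult_2[symmetric] mult.assoc[symmetric] h2' del: ennreal_numeral)
  define Du where "Du p = ennreal (indicator {0..} (fst p) * exp (- lam * fst p) * ((u1 (fst p) (snd p) - u2 (fst p) (snd p))\<^sup>2 / (4 * \<gamma>)))" for p
  have Dum: "Du \<in> borel_measurable (lborel \<Otimes>\<^sub>M M)"
  proof -
    have [measurable]: "(\<lambda>p. indicator {0..} (fst p) * u1 (fst p) (snd p)) \<in> borel_measurable (lborel \<Otimes>\<^sub>M M)"
      using u1L by (simp add: L2F_def L_def)
    have [measurable]: "(\<lambda>p. indicator {0..} (fst p) * u2 (fst p) (snd p)) \<in> borel_measurable (lborel \<Otimes>\<^sub>M M)"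
      using u2L by (simp add: L2F_def L_def)
    have eq: "Du = (\<lambda>p. ennreal (exp (- lam * fst p) * ((indicator {0..} (fst p) * u1 (fst p) (snd p) - indicator {0..} (fst p) * u2 (fst p) (snd p))\<^sup>2 / (4 * \<gamma>))))"
      by (auto simp: fun_eq_iff Du_def indicator_def)
    show ?thesis unfolding eq by measurable
  qed
  have key: "h * (\<integral>\<^sup>+p. Du p \<partial>(lborel \<Otimes>\<^sub>M M)) \<le> ennreal e" if e: "0 < e" for e :: real
  proof -
    have mlt: "m < m + ennreal e" using ennreal_add_left_cancel_less[of m 0 "ennreal e"] mfin e by simp
    have "(INF X\<in>{X. is_state M W x0 b c \<sigma> \<alpha> \<delta> \<mu> u1 X}. cost M \<gamma> lam X u1) < m + ennreal e"
      using J1 mlt by (simp add: J_def)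
    then obtain X1 where S1: "is_state M W x0 b c \<sigma> \<alpha> \<delta> \<mu> u1 X1" and c1: "cost M \<gamma> lam X1 u1 < m + ennreal e"
      by (auto simp: INF_less_iff)
    have "(INF X\<in>{X. is_state M W x0 b c \<sigma> \<alpha> \<delta> \<mu> u2 X}. cost M \<gamma> lam X u2) < m + ennreal e"
      using J2 mlt by (simp add: J_def)
    then obtain X2 where S2: "is_state M W x0 b c \<sigma> \<alpha> \<delta> \<mu> u2 X2" and c2: "cost M \<gamma> lam X2 u2 < m + ennreal e"
      by (auto simp: INF_less_iff)
    have X1L: "X1 \<in> L" using S1 by (simp add: is_state_def L_def)
    have X2L: "X2 \<in> L" using S2 by (simp add: is_state_def L_def)
    define ua where "ua = (\<lambda>t \<omega>. (u1 t \<omega> + u2 t \<omega>) / 2)"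
    define Xa where "Xa = (\<lambda>t \<omega>. (X1 t \<omega> + X2 t \<omega>) / 2)"
    have uaL: "ua \<in> L" unfolding ua_def L_def by (rule avg_L2F[OF M]) (use u1L u2L in \<open>simp_all add: L_def\<close>)
    have XaL: "Xa \<in> L" unfolding Xa_def L_def by (rule avg_L2F[OF M]) (use X1L X2L in \<open>simp_all add: L_def\<close>)
    have Sa: "is_state M W x0 b c \<sigma> \<alpha> \<delta> \<mu> ua Xa"
      unfolding ua_def Xa_def by (rule avg_state[OF bm a1 d S1 S2]) (use u1L u2L in \<open>simp_all add: L_def\<close>)
    have "m \<le> J M W x0 b c \<sigma> \<alpha> \<delta> \<mu> \<gamma> lam ua" unfolding m_def by (rule INF_lower[OF uaL])
    also have "\<dots> \<le> cost M \<gamma> lam Xa ua" unfolding J_def by (rule INF_lower) (use Sa in simp)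
    finally have mle: "m \<le> cost M \<gamma> lam Xa ua" .
    define Dd where "Dd p = ennreal (indicator {0..} (fst p) * exp (- lam * fst p) * ((X1 (fst p) (snd p) - X2 (fst p) (snd p))\<^sup>2 / 4
        + (u1 (fst p) (snd p) - u2 (fst p) (snd p))\<^sup>2 / (4 * \<gamma>)))" for p
    have Ddm: "Dd \<in> borel_measurable (lborel \<Otimes>\<^sub>M M)"
    proof -
      have [measurable]: "(\<lambda>p. indicator {0..} (fst p) * u1 (fst p) (snd p)) \<in> borel_measurable (lborel \<Otimes>\<^sub>M M)"
        "(\<lambda>p. indicator {0..} (fst p) * u2 (fst p) (snd p)) \<in> borel_measurable (lborel \<Otimes>\<^sub>M M)"
        "(\<lambda>p. indicator {0..} (fst p) * X1 (fst p) (snd p)) \<in> borel_measurable (lborel \<Otimes>\<^sub>M M)"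
        "(\<lambda>p. indicator {0..} (fst p) * X2 (fst p) (snd p)) \<in> borel_measurable (lborel \<Otimes>\<^sub>M M)"
        using u1L u2L X1L X2L by (simp_all add: L2F_def L_def)
      have eq: "Dd = (\<lambda>p. ennreal (exp (- lam * fst p) * ((indicator {0..} (fst p) * X1 (fst p) (snd p) - indicator {0..} (fst p) * X2 (fst p) (snd p))\<^sup>2 / 4
        + (indicator {0..} (fst p) * u1 (fst p) (snd p) - indicator {0..} (fst p) * u2 (fst p) (snd p))\<^sup>2 / (4 * \<gamma>))))"
        by (auto simp: fun_eq_iff Dd_def indicator_def)
      show ?thesis unfolding eq by measurable
    qed
    have Fa: "Fc \<gamma> lam Xa ua \<in> borel_measurable (lborel \<Otimes>\<^sub>M M)" by (rule Fc_meas[OF XaL[unfolded L_def] uaL[unfolded L_def]])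
    have F1: "Fc \<gamma> lam X1 u1 \<in> borel_measurable (lborel \<Otimes>\<^sub>M M)" by (rule Fc_meas[OF X1L[unfolded L_def] u1L[unfolded L_def]])
    have F2: "Fc \<gamma> lam X2 u2 \<in> borel_measurable (lborel \<Otimes>\<^sub>M M)" by (rule Fc_meas[OF X2L[unfolded L_def] u2L[unfolded L_def]])
    have pw: "Fc \<gamma> lam Xa ua p + Dd p = h * (Fc \<gamma> lam X1 u1 p + Fc \<gamma> lam X2 u2 p)" for p
    proof -
      define w where "w = indicator {0..} (fst p) * exp (- lam * fst p)"
      have w: "0 \<le> w" by (simp add: w_def)
      define a1' where "a1' = X1 (fst p) (snd p)"
      define a2' where "a2' = X2 (fst p) (snd p)"
      define p1 where "p1 = u1 (fst p) (snd p)"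
      define p2 where "p2 = u2 (fst p) (snd p)"
      have fa: "Fc \<gamma> lam Xa ua p = ennreal (w * (((a1' + a2') / 2)\<^sup>2 + ((p1 + p2) / 2)\<^sup>2 / \<gamma>))"
        by (simp add: Fc_def Xa_def ua_def w_def a1'_def a2'_def p1_def p2_def mult.assoc)
      have dd: "Dd p = ennreal (w * ((a1' - a2')\<^sup>2 / 4 + (p1 - p2)\<^sup>2 / (4 * \<gamma>)))"
        by (simp add: Dd_def w_def a1'_def a2'_def p1_def p2_def mult.assoc)
      have f1: "Fc \<gamma> lam X1 u1 p = ennreal (w * (a1'\<^sup>2 + p1\<^sup>2 / \<gamma>))"
        by (simp add: Fc_def w_def a1'_def p1_def mult.assoc)
      have f2: "Fc \<gamma> lam X2 u2 p = ennreal (w * (a2'\<^sup>2 + p2\<^sup>2 / \<gamma>))"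
        by (simp add: Fc_def w_def a2'_def p2_def mult.assoc)
      have n1: "0 \<le> w * (((a1' + a2') / 2)\<^sup>2 + ((p1 + p2) / 2)\<^sup>2 / \<gamma>)" using w g by simp
      have n2: "0 \<le> w * ((a1' - a2')\<^sup>2 / 4 + (p1 - p2)\<^sup>2 / (4 * \<gamma>))" using w g by simp
      have n3: "0 \<le> w * (a1'\<^sup>2 + p1\<^sup>2 / \<gamma>)" using w g by simp
      have n4: "0 \<le> w * (a2'\<^sup>2 + p2\<^sup>2 / \<gamma>)" using w g by simp
      have "Fc \<gamma> lam Xa ua p + Dd p = ennreal (w * (((a1' + a2') / 2)\<^sup>2 + ((p1 + p2) / 2)\<^sup>2 / \<gamma>) + w * ((a1' - a2')\<^sup>2 / 4 + (p1 - p2)\<^sup>2 / (4 * \<gamma>)))"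
        unfolding fa dd by (rule ennreal_plus[symmetric, OF n1 n2])
      also have "\<dots> = ennreal (1 / 2 * (w * (a1'\<^sup>2 + p1\<^sup>2 / \<gamma>) + w * (a2'\<^sup>2 + p2\<^sup>2 / \<gamma>)))"
        using g by (simp only: par_id[of \<gamma>] less_irrefl not_less_iff_gr_or_eq)
      also have "\<dots> = h * (ennreal (w * (a1'\<^sup>2 + p1\<^sup>2 / \<gamma>)) + ennreal (w * (a2'\<^sup>2 + p2\<^sup>2 / \<gamma>)))"
      proof -
        have "ennreal (1 / 2 * (w * (a1'\<^sup>2 + p1\<^sup>2 / \<gamma>) + w * (a2'\<^sup>2 + p2\<^sup>2 / \<gamma>)))
            = ennreal (1 / 2) * ennreal (w * (a1'\<^sup>2 + p1\<^sup>2 / \<gamma>) + w * (a2'\<^sup>2 + p2\<^sup>2 / \<gamma>))"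
          by (rule ennreal_mult) (use n3 n4 in auto)
        also have "ennreal (w * (a1'\<^sup>2 + p1\<^sup>2 / \<gamma>) + w * (a2'\<^sup>2 + p2\<^sup>2 / \<gamma>))
            = ennreal (w * (a1'\<^sup>2 + p1\<^sup>2 / \<gamma>)) + ennreal (w * (a2'\<^sup>2 + p2\<^sup>2 / \<gamma>))"
          by (rule ennreal_plus[OF n3 n4])
        finally show ?thesis unfolding h_def .
      qed
      finally show ?thesis unfolding f1 f2 .
    qed
    have "(\<integral>\<^sup>+p. Fc \<gamma> lam Xa ua p \<partial>(lborel \<Otimes>\<^sub>M M)) + (\<integral>\<^sup>+p. Dd p \<partial>(lborel \<Otimes>\<^sub>M M))
        = (\<integral>\<^sup>+p. Fc \<gamma> lam Xa ua p + Dd p \<partial>(lborel \<Otimes>\<^sub>M M))"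
      by (rule nn_integral_add[symmetric, OF Fa Ddm])
    also have "\<dots> = (\<integral>\<^sup>+p. h * (Fc \<gamma> lam X1 u1 p + Fc \<gamma> lam X2 u2 p) \<partial>(lborel \<Otimes>\<^sub>M M))"
      by (simp add: pw)
    also have "\<dots> = h * ((\<integral>\<^sup>+p. Fc \<gamma> lam X1 u1 p \<partial>(lborel \<Otimes>\<^sub>M M)) + (\<integral>\<^sup>+p. Fc \<gamma> lam X2 u2 p \<partial>(lborel \<Otimes>\<^sub>M M)))"
      using F1 F2 by (simp add: nn_integral_cmult nn_integral_add)
    finally have ident: "(\<integral>\<^sup>+p. Fc \<gamma> lam Xa ua p \<partial>(lborel \<Otimes>\<^sub>M M)) + (\<integral>\<^sup>+p. Dd p \<partial>(lborel \<Otimes>\<^sub>M M))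
        = h * ((\<integral>\<^sup>+p. Fc \<gamma> lam X1 u1 p \<partial>(lborel \<Otimes>\<^sub>M M)) + (\<integral>\<^sup>+p. Fc \<gamma> lam X2 u2 p \<partial>(lborel \<Otimes>\<^sub>M M)))" .
    have ca: "cost M \<gamma> lam Xa ua = h * (\<integral>\<^sup>+p. Fc \<gamma> lam Xa ua p \<partial>(lborel \<Otimes>\<^sub>M M))"
      unfolding h_def by (rule cost_prod[OF M XaL[unfolded L_def] uaL[unfolded L_def]])
    have c1': "cost M \<gamma> lam X1 u1 = h * (\<integral>\<^sup>+p. Fc \<gamma> lam X1 u1 p \<partial>(lborel \<Otimes>\<^sub>M M))"
      unfolding h_def by (rule cost_prod[OF M X1L[unfolded L_def] u1L[unfolded L_def]])
    have c2': "cost M \<gamma> lam X2 u2 = h * (\<integral>\<^sup>+p. Fc \<gamma> lam X2 u2 p \<partial>(lborel \<Otimes>\<^sub>M M))"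
      unfolding h_def by (rule cost_prod[OF M X2L[unfolded L_def] u2L[unfolded L_def]])
    have "cost M \<gamma> lam Xa ua + h * (\<integral>\<^sup>+p. Dd p \<partial>(lborel \<Otimes>\<^sub>M M))
        = h * ((\<integral>\<^sup>+p. Fc \<gamma> lam Xa ua p \<partial>(lborel \<Otimes>\<^sub>M M)) + (\<integral>\<^sup>+p. Dd p \<partial>(lborel \<Otimes>\<^sub>M M)))"
      unfolding ca by (simp add: distrib_left)
    also have "\<dots> = h * (cost M \<gamma> lam X1 u1 + cost M \<gamma> lam X2 u2)"
      unfolding ident c1' c2' by (simp add: distrib_left)
    also have "\<dots> \<le> h * ((m + ennreal e) + (m + ennreal e))"
      using c1 c2 by (intro mult_left_mono add_mono) auto
    also have "\<dots> = m + ennreal e" by (rule hx)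
    finally have "m + h * (\<integral>\<^sup>+p. Dd p \<partial>(lborel \<Otimes>\<^sub>M M)) \<le> m + ennreal e"
      using mle by (meson add_right_mono order_trans)
    then have dle: "h * (\<integral>\<^sup>+p. Dd p \<partial>(lborel \<Otimes>\<^sub>M M)) \<le> ennreal e"
      using mfin by (simp add: ennreal_add_left_cancel_le)
    have "(\<integral>\<^sup>+p. Du p \<partial>(lborel \<Otimes>\<^sub>M M)) \<le> (\<integral>\<^sup>+p. Dd p \<partial>(lborel \<Otimes>\<^sub>M M))"
    proof (rule nn_integral_mono)
      fix p :: "real \<times> 'a"
      have "indicator {0..} (fst p) * exp (- lam * fst p) * ((u1 (fst p) (snd p) - u2 (fst p) (snd p))\<^sup>2 / (4 * \<gamma>))
          \<le> indicator {0..} (fst p) * exp (- lam * fst p) * ((X1 (fst p) (snd p) - X2 (fst p) (snd p))\<^sup>2 / 4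
             + (u1 (fst p) (snd p) - u2 (fst p) (snd p))\<^sup>2 / (4 * \<gamma>))"
        by (intro mult_left_mono) auto
      then show "Du p \<le> Dd p" unfolding Du_def Dd_def by (rule ennreal_leI)
    qed
    then have "h * (\<integral>\<^sup>+p. Du p \<partial>(lborel \<Otimes>\<^sub>M M)) \<le> h * (\<integral>\<^sup>+p. Dd p \<partial>(lborel \<Otimes>\<^sub>M M))"
      by (rule mult_left_mono) simp
    then show ?thesis using dle by (rule order_trans)
  qed
  have "h * (\<integral>\<^sup>+p. Du p \<partial>(lborel \<Otimes>\<^sub>M M)) \<le> 0"
    by (rule ennreal_le_epsilon) (use key in simp)
  then have "(\<integral>\<^sup>+p. Du p \<partial>(lborel \<Otimes>\<^sub>M M)) = 0" by (simp add: h_def)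
  then have "AE p in lborel \<Otimes>\<^sub>M M. Du p = 0" using nn_integral_0_iff_AE[OF Dum] by simp
  then show ?thesis
  proof eventually_elim
    case (elim p)
    show ?case
    proof
      assume p: "0 \<le> fst p"
      have "indicator {0..} (fst p) * exp (- lam * fst p) * ((u1 (fst p) (snd p) - u2 (fst p) (snd p))\<^sup>2 / (4 * \<gamma>)) \<le> 0"
        using elim unfolding Du_def ennreal_eq_0_iff .
      then have "exp (- lam * fst p) * ((u1 (fst p) (snd p) - u2 (fst p) (snd p))\<^sup>2 / (4 * \<gamma>)) \<le> 0"
        using p by simp
      then have "exp (- lam * fst p) * ((u1 (fst p) (snd p) - u2 (fst p) (snd p))\<^sup>2 / (4 * \<gamma>)) \<le> exp (- lam * fst p) * 0"
        by simp
      then have "(u1 (fst p) (snd p) - u2 (fst p) (snd p))\<^sup>2 / (4 * \<gamma>) \<le> 0"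
        by (rule mult_left_le_imp_le) simp
      then have "(u1 (fst p) (snd p) - u2 (fst p) (snd p))\<^sup>2 \<le> 0" using g by (simp add: divide_le_0_iff)
      then show "u1 (fst p) (snd p) = u2 (fst p) (snd p)" by simp
    qed
  qed
qed

theorem lemma5p2:
  fixes M :: "'a measure" and W :: "real \<Rightarrow> 'a \<Rightarrow> real"
    and x0 b c \<sigma> \<gamma> \<alpha> \<delta> lam \<mu> :: real
    and u1 u2 :: "real \<Rightarrow> 'a \<Rightarrow> real"
  assumes "prob_space M" and "complete_measure M"
    and "brownian_motion M W"
    and "c \<noteq> 0" and "\<gamma> > 0" and "1/2 < \<alpha>" and "\<alpha> \<le> 1" and "\<delta> \<ge> 0" and "lam > 0"
    and "\<mu> > rho_alpha b \<alpha> \<delta>" and "lam \<ge> 2 * \<mu>"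
    and "is_optimal_control M W x0 b c \<sigma> \<alpha> \<delta> \<mu> \<gamma> lam u1"
    and "is_optimal_control M W x0 b c \<sigma> \<alpha> \<delta> \<mu> \<gamma> lam u2"
  shows "AE p in lborel \<Otimes>\<^sub>M M. fst p \<ge> 0 \<longrightarrow> u1 (fst p) (snd p) = u2 (fst p) (snd p)"
proof -
  have a0: "0 < \<alpha>" using assms(6) by simp
  have "0 \<le> rho_alpha b \<alpha> \<delta>" by (rule rho_alpha_nonneg[OF a0 assms(8)])
  then have mu: "0 < \<mu>" using assms(10) by simp
  show ?thesis
    by (rule uniq_main[OF assms(3) assms(4) assms(5) assms(6) assms(7) assms(8) mu assms(11) assms(12) assms(13)])
qed

end
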